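(* Let $W^{(1)}$ be a pro-$p$ Coxeter group and $\mathcal H^{(1)}=\mathcal H^{(1)}_R(a,b)$ a generic pro-$p$ Hecke algebra over a commutative ring $R$ (notation as in the context), and assume that all $a_s$ ($s\in S$) are units of $R$ (so that every $T_w$ is invertible in $\mathcal H^{(1)}$). Let $\mathfrak A(W^{(1)})$ be the group with generators $\{T_w\}_{w\in W^{(1)}}$ and relations $T_{ww'}=T_wT_{w'}$ whenever $\ell(ww')=\ell(w)+\ell(w')$, and let $\mathfrak a$ be the two-sided ideal of the group algebra $R[\mathfrak A(W^{(1)})]$ generated by $T_{n_s}^2-a_sT_{n_s^2}-T_{n_s}b_s$, $s\in S$ (with $b_s=\sum_tc_tt$ read as $\sum_tc_tT_t$). Then the homomorphism \[ \varphi:R[\mathfrak A(W^{(1)})]/\mathfrak a\longrightarrow\mathcal H^{(1)} \] induced by $T_w\mapsto T_w$ is well defined and is an isomorphism of $R$-algebras.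
   Context: Coxeter group $(W_{\mathrm{aff}},S)$ with length $\ell$, $m(s,t)$ the order of $st$. Extended Coxeter group: $W=W_{\mathrm{aff}}\rtimes\Omega$, $(W_{\mathrm{aff}},S)$ Coxeter, $\Omega$ preserving $S$ under conjugation; $\ell(wu)=\ell(w)$ for $w\in W_{\mathrm{aff}},u\in\Omega$. Pro-$p$ Coxeter group: extension $1\to T\to W^{(1)}\xrightarrow{\pi}W\to1$ with $T$ abelian, $T\subseteq W^{(1)}$, lifts $n_s\in\pi^{-1}(s)$ satisfying braid relations ($m(s,t)$ alternating factors) when $m(s,t)<\infty$; length on $W^{(1)}$ is $\ell\circ\pi$; $W^{(1)}$ acts on $T$ and $R[T]$ by conjugation. Generic pro-$p$ Hecke algebra: given $a_s\in R$, $b_s\in R[T]$ such that $a_s=a_t$ and $(n_swn_t^{-1}w^{-1})w(b_t)=b_s$ whenever $s,t\in S$, $w\in W^{(1)}$, $s\pi(w)=\pi(w)t$, $\mathcal H^{(1)}_R(a,b)$ is the unique $R$-algebra free as $R$-module on $\{T_w\}_{w\in W^{(1)}}$ with $T_{ww'}=T_wT_{w'}$ when $\ell(ww')=\ell(w)+\ell(w')$ and $T_{n_s}^2=a_sT_{n_s^2}+T_{n_s}b_s$, $R[T]$ embedded via $t\mapsto T_t$. *)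

theory Defs
  imports "HOL-Algebra.Algebra"
begin

definition wprod :: "('a,'b) monoid_scheme \<Rightarrow> 'a list \<Rightarrow> 'a" where
  "wprod G ws = foldr (\<lambda>x y. x \<otimes>\<^bsub>G\<^esub> y) ws \<one>\<^bsub>G\<^esub>"

definition alt_word :: "'a \<Rightarrow> 'a \<Rightarrow> nat \<Rightarrow> 'a list" where
  "alt_word s t k = map (\<lambda>i. if even i then s else t) [0..<k]"

text \<open>m(s,t): the order of s t (0 encodes infinity).\<close>
definition cox_m :: "('a,'b) monoid_scheme \<Rightarrow> 'a \<Rightarrow> 'a \<Rightarrow> nat" where
  "cox_m G s t =
     (if \<exists>k::nat. k > 0 \<and> (s \<otimes>\<^bsub>G\<^esub> t) [^]\<^bsub>G\<^esub> k = \<one>\<^bsub>G\<^esub>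
      then LEAST k::nat. k > 0 \<and> (s \<otimes>\<^bsub>G\<^esub> t) [^]\<^bsub>G\<^esub> k = \<one>\<^bsub>G\<^esub>
      else 0)"

inductive cox_step :: "('a,'b) monoid_scheme \<Rightarrow> 'a set \<Rightarrow> 'a list \<Rightarrow> 'a list \<Rightarrow> bool"
  for G S where
  "\<lbrakk>s \<in> S; t \<in> S; cox_m G s t > 0\<rbrakk> \<Longrightarrow>
     cox_step G S (u @ v) (u @ alt_word s t (2 * cox_m G s t) @ v)"

definition coxeter_system :: "('a,'b) monoid_scheme \<Rightarrow> 'a set \<Rightarrow> bool" where
  "coxeter_system G S \<longleftrightarrow>
     group G \<and> S \<subseteq> carrier G \<and> \<one>\<^bsub>G\<^esub> \<notin> S \<and>
     (\<forall>s\<in>S. s \<otimes>\<^bsub>G\<^esub> s = \<one>\<^bsub>G\<^esub>) \<and>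
     carrier G = wprod G ` lists S \<and>
     (\<forall>ws \<in> lists S. wprod G ws = \<one>\<^bsub>G\<^esub> \<longrightarrow> equivclp (cox_step G S) ws [])"

definition ext_coxeter :: "('v,'b) monoid_scheme \<Rightarrow> 'v set \<Rightarrow> 'v set \<Rightarrow> 'v set \<Rightarrow> bool" where
  "ext_coxeter W Waff S Omega \<longleftrightarrow>
     group W \<and> Waff \<lhd> W \<and> subgroup Omega W \<and> Waff \<inter> Omega = {\<one>\<^bsub>W\<^esub>} \<and>
     Waff <#>\<^bsub>W\<^esub> Omega = carrier W \<and>
     coxeter_system (W\<lparr>carrier := Waff\<rparr>) S \<and>
     (\<forall>u\<in>Omega. \<forall>s\<in>S. u \<otimes>\<^bsub>W\<^esub> s \<otimes>\<^bsub>W\<^esub> inv\<^bsub>W\<^esub> u \<in> S)"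

definition ext_len :: "('v,'b) monoid_scheme \<Rightarrow> 'v set \<Rightarrow> 'v set \<Rightarrow> 'v \<Rightarrow> nat" where
  "ext_len W S Omega x =
     (LEAST k. \<exists>ws\<in>lists S. length ws = k \<and> (\<exists>u\<in>Omega. x = wprod W ws \<otimes>\<^bsub>W\<^esub> u))"

definition pro_p_coxeter ::
  "('w,'c) monoid_scheme \<Rightarrow> ('v,'b) monoid_scheme \<Rightarrow> ('w \<Rightarrow> 'v) \<Rightarrow> 'v set \<Rightarrow> 'v set \<Rightarrow> 'v set
   \<Rightarrow> ('v \<Rightarrow> 'w) \<Rightarrow> bool" where
  "pro_p_coxeter W1 W proj Waff S Omega n \<longleftrightarrow>
     group W1 \<and> ext_coxeter W Waff S Omega \<and>
     proj \<in> hom W1 W \<and> proj ` carrier W1 = carrier W \<and>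
     (\<forall>x\<in>kernel W1 W proj. \<forall>y\<in>kernel W1 W proj. x \<otimes>\<^bsub>W1\<^esub> y = y \<otimes>\<^bsub>W1\<^esub> x) \<and>
     (\<forall>s\<in>S. n s \<in> carrier W1 \<and> proj (n s) = s) \<and>
     (\<forall>s\<in>S. \<forall>t\<in>S. cox_m W s t > 0 \<longrightarrow>
        wprod W1 (alt_word (n s) (n t) (cox_m W s t)) = wprod W1 (alt_word (n t) (n s) (cox_m W s t)))"

definition len1 :: "('w \<Rightarrow> 'v) \<Rightarrow> ('v,'b) monoid_scheme \<Rightarrow> 'v set \<Rightarrow> 'v set \<Rightarrow> 'w \<Rightarrow> nat" where
  "len1 proj W S Omega x = ext_len W S Omega (proj x)"

definition fin_coeffs :: "('r,'d) ring_scheme \<Rightarrow> 'g set \<Rightarrow> ('g \<Rightarrow> 'r) set" where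
  "fin_coeffs R A = {f. (\<forall>x. f x \<in> carrier R) \<and> (\<forall>x. x \<notin> A \<longrightarrow> f x = \<zero>\<^bsub>R\<^esub>)
                        \<and> finite {x. f x \<noteq> \<zero>\<^bsub>R\<^esub>}}"

definition galg :: "('r,'d) ring_scheme \<Rightarrow> ('g,'e) monoid_scheme \<Rightarrow> ('r, 'g \<Rightarrow> 'r) module" where
  "galg R G =
    \<lparr>carrier = fin_coeffs R (carrier G),
     monoid.mult = (\<lambda>f g z. if z \<in> carrier G
                      then finsum R (\<lambda>x. f x \<otimes>\<^bsub>R\<^esub> g (inv\<^bsub>G\<^esub> x \<otimes>\<^bsub>G\<^esub> z)) {x. f x \<noteq> \<zero>\<^bsub>R\<^esub>}
                      else \<zero>\<^bsub>R\<^esub>),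
     monoid.one = (\<lambda>z. if z = \<one>\<^bsub>G\<^esub> then \<one>\<^bsub>R\<^esub> else \<zero>\<^bsub>R\<^esub>),
     ring.zero = (\<lambda>z. \<zero>\<^bsub>R\<^esub>),
     ring.add = (\<lambda>f g z. f z \<oplus>\<^bsub>R\<^esub> g z),
     module.smult = (\<lambda>r f z. r \<otimes>\<^bsub>R\<^esub> f z)\<rparr>"

definition delta :: "('r,'d) ring_scheme \<Rightarrow> 'g \<Rightarrow> 'g \<Rightarrow> 'r" where
  "delta R g = (\<lambda>z. if z = g then \<one>\<^bsub>R\<^esub> else \<zero>\<^bsub>R\<^esub>)"

text \<open>Parameters a_s in R and b_s in R[T]; b s is the coefficient function of b_s
  (finitely supported on T = ker proj).\<close>
definition hecke_params ::
  "('r,'d) ring_scheme \<Rightarrow> ('w,'c) monoid_scheme \<Rightarrow> ('v,'b) monoid_scheme \<Rightarrow> ('w \<Rightarrow> 'v) \<Rightarrow> 'v set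
   \<Rightarrow> ('v \<Rightarrow> 'w) \<Rightarrow> ('v \<Rightarrow> 'r) \<Rightarrow> ('v \<Rightarrow> 'w \<Rightarrow> 'r) \<Rightarrow> bool" where
  "hecke_params R W1 W proj S n a b \<longleftrightarrow>
     (\<forall>s\<in>S. a s \<in> carrier R \<and> b s \<in> fin_coeffs R (kernel W1 W proj)) \<and>
     (\<forall>s\<in>S. \<forall>t\<in>S. \<forall>w\<in>carrier W1. s \<otimes>\<^bsub>W\<^esub> proj w = proj w \<otimes>\<^bsub>W\<^esub> t \<longrightarrow>
        a s = a t \<and>
        (let u = n s \<otimes>\<^bsub>W1\<^esub> w \<otimes>\<^bsub>W1\<^esub> inv\<^bsub>W1\<^esub> (n t) \<otimes>\<^bsub>W1\<^esub> inv\<^bsub>W1\<^esub> w in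
         \<forall>y\<in>carrier W1.
           b s y = b t (inv\<^bsub>W1\<^esub> w \<otimes>\<^bsub>W1\<^esub> inv\<^bsub>W1\<^esub> u \<otimes>\<^bsub>W1\<^esub> y \<otimes>\<^bsub>W1\<^esub> w)))"

definition hecke_alg ::
  "('r,'d) ring_scheme \<Rightarrow> ('w,'c) monoid_scheme \<Rightarrow> ('v,'b) monoid_scheme \<Rightarrow> ('w \<Rightarrow> 'v) \<Rightarrow> 'v set
   \<Rightarrow> 'v set \<Rightarrow> ('v \<Rightarrow> 'w) \<Rightarrow> ('v \<Rightarrow> 'r) \<Rightarrow> ('v \<Rightarrow> 'w \<Rightarrow> 'r)
   \<Rightarrow> ('r,'h) module \<Rightarrow> ('w \<Rightarrow> 'h) \<Rightarrow> bool" where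
  "hecke_alg R W1 W proj S Omega n a b H Tw \<longleftrightarrow>
     ring H \<and> module R H \<and>
     (\<forall>r\<in>carrier R. \<forall>x\<in>carrier H. \<forall>y\<in>carrier H.
        (r \<odot>\<^bsub>H\<^esub> x) \<otimes>\<^bsub>H\<^esub> y = r \<odot>\<^bsub>H\<^esub> (x \<otimes>\<^bsub>H\<^esub> y) \<and>
        x \<otimes>\<^bsub>H\<^esub> (r \<odot>\<^bsub>H\<^esub> y) = r \<odot>\<^bsub>H\<^esub> (x \<otimes>\<^bsub>H\<^esub> y)) \<and>
     Tw \<in> carrier W1 \<rightarrow> carrier H \<and>
     (\<forall>h\<in>carrier H. \<exists>!f. f \<in> fin_coeffs R (carrier W1) \<and>
        h = finsum H (\<lambda>w. f w \<odot>\<^bsub>H\<^esub> Tw w) {w. f w \<noteq> \<zero>\<^bsub>R\<^esub>}) \<and>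
     (\<forall>w\<in>carrier W1. \<forall>w'\<in>carrier W1.
        len1 proj W S Omega (w \<otimes>\<^bsub>W1\<^esub> w') = len1 proj W S Omega w + len1 proj W S Omega w' \<longrightarrow>
        Tw (w \<otimes>\<^bsub>W1\<^esub> w') = Tw w \<otimes>\<^bsub>H\<^esub> Tw w') \<and>
     (\<forall>s\<in>S. Tw (n s) \<otimes>\<^bsub>H\<^esub> Tw (n s) =
        a s \<odot>\<^bsub>H\<^esub> Tw (n s \<otimes>\<^bsub>W1\<^esub> n s) \<oplus>\<^bsub>H\<^esub>
        Tw (n s) \<otimes>\<^bsub>H\<^esub> finsum H (\<lambda>t. b s t \<odot>\<^bsub>H\<^esub> Tw t) {t. b s t \<noteq> \<zero>\<^bsub>R\<^esub>})"

text \<open>Words in the letters T_w^{+1} (True) and T_w^{-1} (False); one step of the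
  congruence generated by free cancellation and T_{ww'} = T_w T_w' when lengths add.\<close>
inductive pres_step :: "('w,'c) monoid_scheme \<Rightarrow> ('w \<Rightarrow> nat) \<Rightarrow> ('w \<times> bool) list \<Rightarrow> ('w \<times> bool) list \<Rightarrow> bool"
  for W1 len where
  cancel: "x \<in> carrier W1 \<Longrightarrow> pres_step W1 len (u @ v) (u @ [(x, e), (x, \<not> e)] @ v)"
| lenrel: "\<lbrakk>w \<in> carrier W1; w' \<in> carrier W1; len (w \<otimes>\<^bsub>W1\<^esub> w') = len w + len w'\<rbrakk> \<Longrightarrow>
     pres_step W1 len (u @ [(w \<otimes>\<^bsub>W1\<^esub> w', True)] @ v) (u @ [(w, True), (w', True)] @ v)"

definition pres_rel :: "('w,'c) monoid_scheme \<Rightarrow> ('w \<Rightarrow> nat) \<Rightarrow> ('w \<times> bool) list \<Rightarrow> ('w \<times> bool) list \<Rightarrow> bool" where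
  "pres_rel W1 len = equivclp (pres_step W1 len)"

definition pres_group :: "('w,'c) monoid_scheme \<Rightarrow> ('w \<Rightarrow> nat) \<Rightarrow> (('w \<times> bool) list set) monoid" where
  "pres_group W1 len =
    \<lparr>carrier = {Collect (pres_rel W1 len ws) | ws. ws \<in> lists (carrier W1 \<times> UNIV)},
     monoid.mult = (\<lambda>A B. {z. \<exists>x\<in>A. \<exists>y\<in>B. pres_rel W1 len (x @ y) z}),
     monoid.one = Collect (pres_rel W1 len [])\<rparr>"

definition pres_gen :: "('w,'c) monoid_scheme \<Rightarrow> ('w \<Rightarrow> nat) \<Rightarrow> 'w \<Rightarrow> ('w \<times> bool) list set" where
  "pres_gen W1 len w = Collect (pres_rel W1 len [(w, True)])"

definition hecke_ideal_gens ::
  "('r,'d) ring_scheme \<Rightarrow> ('w,'c) monoid_scheme \<Rightarrow> ('w \<Rightarrow> nat) \<Rightarrow> 'v set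
   \<Rightarrow> ('v \<Rightarrow> 'w) \<Rightarrow> ('v \<Rightarrow> 'r) \<Rightarrow> ('v \<Rightarrow> 'w \<Rightarrow> 'r) \<Rightarrow> (('w \<times> bool) list set \<Rightarrow> 'r) set" where
  "hecke_ideal_gens R W1 len S n a b =
    (let RA = galg R (pres_group W1 len); T = (\<lambda>w. delta R (pres_gen W1 len w)) in
     (\<lambda>s. T (n s) \<otimes>\<^bsub>RA\<^esub> T (n s)
          \<ominus>\<^bsub>RA\<^esub> a s \<odot>\<^bsub>RA\<^esub> T (n s \<otimes>\<^bsub>W1\<^esub> n s)
          \<ominus>\<^bsub>RA\<^esub> T (n s) \<otimes>\<^bsub>RA\<^esub> finsum RA (\<lambda>t. b s t \<odot>\<^bsub>RA\<^esub> T t) {t. b s t \<noteq> \<zero>\<^bsub>R\<^esub>}) ` S)"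

end

theory Submission
  imports Defs
begin


lemma (in abelian_monoid) finsum_swap:
  assumes "finite A" "finite B" "\<And>x y. x \<in> A \<Longrightarrow> y \<in> B \<Longrightarrow> f x y \<in> carrier G"
  shows "(\<Oplus>x\<in>A. \<Oplus>y\<in>B. f x y) = (\<Oplus>y\<in>B. \<Oplus>x\<in>A. f x y)"
  using assms(1,3)
proof (induct A rule: finite_induct)
  case empty
  then show ?case by simp
next
  case (insert a A)
  have "(\<Oplus>x\<in>insert a A. \<Oplus>y\<in>B. f x y) = (\<Oplus>y\<in>B. f a y) \<oplus> (\<Oplus>x\<in>A. \<Oplus>y\<in>B. f x y)"
    using insert by (intro finsum_insert) (auto intro!: finsum_closed)
  also have "\<dots> = (\<Oplus>y\<in>B. f a y) \<oplus> (\<Oplus>y\<in>B. \<Oplus>x\<in>A. f x y)"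
    using insert by simp
  also have "\<dots> = (\<Oplus>y\<in>B. f a y \<oplus> (\<Oplus>x\<in>A. f x y))"
    using insert by (intro finsum_addf[symmetric]) (auto intro!: finsum_closed)
  also have "\<dots> = (\<Oplus>y\<in>B. \<Oplus>x\<in>insert a A. f x y)"
    using insert by (intro finsum_cong') (auto simp: finsum_insert)
  finally show ?case .
qed

lemma (in abelian_monoid) finsum_reindex_zero:
  assumes "finite C" "inj_on h B" "h ` B \<subseteq> C" "\<And>y. y \<in> C \<Longrightarrow> F y \<in> carrier G"
    "\<And>y. y \<in> C \<Longrightarrow> y \<notin> h ` B \<Longrightarrow> F y = \<zero>"
  shows "(\<Oplus>y\<in>C. F y) = (\<Oplus>y\<in>B. F (h y))"
proof -
  have "(\<Oplus>y\<in>C. F y) = (\<Oplus>y\<in>h ` B. F y)"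
    by (rule add.finprod_mono_neutral_cong_right) (use assms in auto)
  also have "\<dots> = (\<Oplus>y\<in>B. F (h y))"
    by (rule finsum_reindex) (use assms in auto)
  finally show ?thesis .
qed

lemma (in abelian_monoid) finsum_zero_eqI:
  "(\<And>x. x \<in> A \<Longrightarrow> f x = \<zero>) \<Longrightarrow> (\<Oplus>x\<in>A. f x) = \<zero>"
  by (rule add.finprod_one_eqI)

lemma (in abelian_monoid) finsum_sup:
  assumes "finite B" "A \<subseteq> B" "\<And>x. x \<in> B \<Longrightarrow> f x \<in> carrier G" "\<And>x. x \<in> B - A \<Longrightarrow> f x = \<zero>"
  shows "(\<Oplus>x\<in>A. f x) = (\<Oplus>x\<in>B. f x)"
  by (rule add.finprod_mono_neutral_cong_left) (use assms in auto)


lemma fin_coeffsD: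
  assumes "f \<in> fin_coeffs R A"
  shows "f x \<in> carrier R" "x \<notin> A \<Longrightarrow> f x = \<zero>\<^bsub>R\<^esub>" "finite {x. f x \<noteq> \<zero>\<^bsub>R\<^esub>}"
    "{x. f x \<noteq> \<zero>\<^bsub>R\<^esub>} \<subseteq> A"
  using assms unfolding fin_coeffs_def by auto

locale gctx = R: cring R + G: group G
  for R :: "('r,'d) ring_scheme" and G :: "('g,'e) monoid_scheme"
begin

abbreviation "FC \<equiv> fin_coeffs R (carrier G)"

lemma galg_simps:
  "carrier (galg R G) = FC"
  "f \<otimes>\<^bsub>galg R G\<^esub> g = (\<lambda>z. if z \<in> carrier G
                      then finsum R (\<lambda>x. f x \<otimes>\<^bsub>R\<^esub> g (inv\<^bsub>G\<^esub> x \<otimes>\<^bsub>G\<^esub> z)) {x. f x \<noteq> \<zero>\<^bsub>R\<^esub>}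
                      else \<zero>\<^bsub>R\<^esub>)"
  "\<one>\<^bsub>galg R G\<^esub> = (\<lambda>z. if z = \<one>\<^bsub>G\<^esub> then \<one>\<^bsub>R\<^esub> else \<zero>\<^bsub>R\<^esub>)"
  "\<zero>\<^bsub>galg R G\<^esub> = (\<lambda>z. \<zero>\<^bsub>R\<^esub>)"
  "f \<oplus>\<^bsub>galg R G\<^esub> g = (\<lambda>z. f z \<oplus>\<^bsub>R\<^esub> g z)"
  "r \<odot>\<^bsub>galg R G\<^esub> f = (\<lambda>z. r \<otimes>\<^bsub>R\<^esub> f z)"
  by (simp_all add: galg_def)

lemma FC_add: "f \<in> FC \<Longrightarrow> g \<in> FC \<Longrightarrow> (\<lambda>z. f z \<oplus>\<^bsub>R\<^esub> g z) \<in> FC"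
proof -
  assume f: "f \<in> FC" and g: "g \<in> FC"
  have "{x. f x \<oplus>\<^bsub>R\<^esub> g x \<noteq> \<zero>\<^bsub>R\<^esub>} \<subseteq> {x. f x \<noteq> \<zero>\<^bsub>R\<^esub>} \<union> {x. g x \<noteq> \<zero>\<^bsub>R\<^esub>}"
    by auto
  then show ?thesis using fin_coeffsD[OF f] fin_coeffsD[OF g]
    unfolding fin_coeffs_def by (auto intro: finite_subset)
qed

lemma FC_smult: "f \<in> FC \<Longrightarrow> r \<in> carrier R \<Longrightarrow> (\<lambda>z. r \<otimes>\<^bsub>R\<^esub> f z) \<in> FC"
proof -
  assume f: "f \<in> FC" and r: "r \<in> carrier R"
  have "{x. r \<otimes>\<^bsub>R\<^esub> f x \<noteq> \<zero>\<^bsub>R\<^esub>} \<subseteq> {x. f x \<noteq> \<zero>\<^bsub>R\<^esub>}"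
    using r by auto
  moreover have "r \<otimes>\<^bsub>R\<^esub> f x \<in> carrier R" for x using fin_coeffsD(1)[OF f] r by simp
  moreover have "x \<notin> carrier G \<Longrightarrow> r \<otimes>\<^bsub>R\<^esub> f x = \<zero>\<^bsub>R\<^esub>" for x using fin_coeffsD(2)[OF f] r by simp
  ultimately show ?thesis using fin_coeffsD(3)[OF f]
    unfolding fin_coeffs_def by (auto intro: finite_subset)
qed

lemma FC_neg: "f \<in> FC \<Longrightarrow> (\<lambda>z. \<ominus>\<^bsub>R\<^esub> f z) \<in> FC"
proof -
  assume f: "f \<in> FC"
  have "{x. \<ominus>\<^bsub>R\<^esub> f x \<noteq> \<zero>\<^bsub>R\<^esub>} \<subseteq> {x. f x \<noteq> \<zero>\<^bsub>R\<^esub>}"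
    by auto
  then show ?thesis using fin_coeffsD[OF f]
    unfolding fin_coeffs_def by (auto intro: finite_subset)
qed

lemma FC_zero: "(\<lambda>z. \<zero>\<^bsub>R\<^esub>) \<in> FC"
  unfolding fin_coeffs_def by auto

lemma delta_FC: "g \<in> carrier G \<Longrightarrow> delta R g \<in> FC"
  unfolding fin_coeffs_def delta_def by auto

lemma FC_carrier: "f \<in> FC \<Longrightarrow> f x \<in> carrier R"
  by (rule fin_coeffsD(1))

lemma galg_abelian_group: "abelian_group (galg R G)"
proof (rule abelian_groupI, goal_cases)
  case (1 x y) then show ?case by (simp add: galg_simps FC_add)
next
  case 2 then show ?case by (simp add: galg_simps FC_zero)
next
  case (3 x y z) then show ?case
    by (simp add: galg_simps) (rule ext, simp add: R.a_assoc FC_carrier)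
next
  case (4 x y) then show ?case
    by (simp add: galg_simps) (rule ext, simp add: R.a_comm FC_carrier)
next
  case (5 x) then show ?case
    by (simp add: galg_simps) (rule ext, simp add: FC_carrier)
next
  case (6 x)
  then show ?case
    apply (intro bexI[of _ "\<lambda>z. \<ominus>\<^bsub>R\<^esub> x z"])
    apply (simp add: galg_simps)
    apply (rule ext, simp add: FC_carrier R.l_neg)
    by (simp add: galg_simps FC_neg)
qed


abbreviation "spt f \<equiv> {x. f x \<noteq> \<zero>\<^bsub>R\<^esub>}"

lemma conv_sup:
  assumes f: "f \<in> FC" and g: "g \<in> FC" and A: "finite A" "spt f \<subseteq> A" "A \<subseteq> carrier G"
    and z: "z \<in> carrier G"
  shows "(f \<otimes>\<^bsub>galg R G\<^esub> g) z = (\<Oplus>\<^bsub>R\<^esub>x\<in>A. f x \<otimes>\<^bsub>R\<^esub> g (inv\<^bsub>G\<^esub> x \<otimes>\<^bsub>G\<^esub> z))"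
  unfolding galg_simps using z
  by (simp, intro R.finsum_sup) (use A f g in \<open>auto simp: FC_carrier\<close>)

lemma conv_out: "z \<notin> carrier G \<Longrightarrow> (f \<otimes>\<^bsub>galg R G\<^esub> g) z = \<zero>\<^bsub>R\<^esub>"
  unfolding galg_simps by simp

lemma spt_FC: "f \<in> FC \<Longrightarrow> finite (spt f) \<and> spt f \<subseteq> carrier G"
  using fin_coeffsD(3,4) by blast

lemma conv_spt:
  assumes f: "f \<in> FC" and g: "g \<in> FC"
  shows "spt (f \<otimes>\<^bsub>galg R G\<^esub> g) \<subseteq> (\<lambda>(x,y). x \<otimes>\<^bsub>G\<^esub> y) ` (spt f \<times> spt g)"
proof
  fix z assume zs: "z \<in> spt (f \<otimes>\<^bsub>galg R G\<^esub> g)"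
  then have z: "z \<in> carrier G" using conv_out by fastforce
  show "z \<in> (\<lambda>(x,y). x \<otimes>\<^bsub>G\<^esub> y) ` (spt f \<times> spt g)"
  proof (rule ccontr)
    assume nz: "z \<notin> (\<lambda>(x,y). x \<otimes>\<^bsub>G\<^esub> y) ` (spt f \<times> spt g)"
    have "(f \<otimes>\<^bsub>galg R G\<^esub> g) z = (\<Oplus>\<^bsub>R\<^esub>x\<in>spt f. f x \<otimes>\<^bsub>R\<^esub> g (inv\<^bsub>G\<^esub> x \<otimes>\<^bsub>G\<^esub> z))"
      using conv_sup[OF f g _ _ _ z] spt_FC[OF f] by blast
    also have "\<dots> = \<zero>\<^bsub>R\<^esub>"
    proof (rule R.finsum_zero_eqI)
      fix x assume x: "x \<in> spt f"
      then have xc: "x \<in> carrier G" using spt_FC[OF f] by blast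
      have "g (inv\<^bsub>G\<^esub> x \<otimes>\<^bsub>G\<^esub> z) = \<zero>\<^bsub>R\<^esub>"
      proof (rule ccontr)
        assume "g (inv\<^bsub>G\<^esub> x \<otimes>\<^bsub>G\<^esub> z) \<noteq> \<zero>\<^bsub>R\<^esub>"
        moreover have "z = x \<otimes>\<^bsub>G\<^esub> (inv\<^bsub>G\<^esub> x \<otimes>\<^bsub>G\<^esub> z)"
          using xc z by (simp add: G.m_assoc[symmetric])
        ultimately have "z \<in> (\<lambda>(x,y). x \<otimes>\<^bsub>G\<^esub> y) ` (spt f \<times> spt g)"
          using x by (intro image_eqI[of _ _ "(x, inv\<^bsub>G\<^esub> x \<otimes>\<^bsub>G\<^esub> z)"]) auto
        then show False using nz by blast
      qed
      then show "f x \<otimes>\<^bsub>R\<^esub> g (inv\<^bsub>G\<^esub> x \<otimes>\<^bsub>G\<^esub> z) = \<zero>\<^bsub>R\<^esub>"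
        using f by (simp add: FC_carrier)
    qed
    finally show False using zs by simp
  qed
qed

lemma conv_FC:
  assumes f: "f \<in> FC" and g: "g \<in> FC"
  shows "f \<otimes>\<^bsub>galg R G\<^esub> g \<in> FC"
proof -
  have "finite (spt (f \<otimes>\<^bsub>galg R G\<^esub> g))"
    by (rule finite_subset[OF conv_spt[OF f g]]) (use spt_FC[OF f] spt_FC[OF g] in auto)
  moreover have "(f \<otimes>\<^bsub>galg R G\<^esub> g) x \<in> carrier R" for x
    unfolding galg_simps using f g by (auto intro!: R.finsum_closed simp: FC_carrier)
  ultimately show ?thesis unfolding fin_coeffs_def using conv_out by auto
qed


abbreviation "prodset A B \<equiv> (\<lambda>(x,y). x \<otimes>\<^bsub>G\<^esub> y) ` (A \<times> B)"

lemma prodset_fin: "finite A \<Longrightarrow> finite B \<Longrightarrow> finite (prodset A B)"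
  by simp

lemma prodset_sub: "A \<subseteq> carrier G \<Longrightarrow> B \<subseteq> carrier G \<Longrightarrow> prodset A B \<subseteq> carrier G"
  by auto

lemma shift_zero:
  assumes x: "x \<in> carrier G" and y: "y \<in> carrier G" and ny: "y \<notin> (\<lambda>y'. x \<otimes>\<^bsub>G\<^esub> y') ` spt g"
  shows "g (inv\<^bsub>G\<^esub> x \<otimes>\<^bsub>G\<^esub> y) = \<zero>\<^bsub>R\<^esub>"
proof (rule ccontr)
  assume "g (inv\<^bsub>G\<^esub> x \<otimes>\<^bsub>G\<^esub> y) \<noteq> \<zero>\<^bsub>R\<^esub>"
  moreover have "y = x \<otimes>\<^bsub>G\<^esub> (inv\<^bsub>G\<^esub> x \<otimes>\<^bsub>G\<^esub> y)"
    using x y by (simp add: G.m_assoc[symmetric])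
  ultimately show False using ny by blast
qed

lemma conv_assoc:
  assumes f: "f \<in> FC" and g: "g \<in> FC" and h: "h \<in> FC"
  shows "(f \<otimes>\<^bsub>galg R G\<^esub> g) \<otimes>\<^bsub>galg R G\<^esub> h = f \<otimes>\<^bsub>galg R G\<^esub> (g \<otimes>\<^bsub>galg R G\<^esub> h)"
proof (rule ext)
  fix z
  show "((f \<otimes>\<^bsub>galg R G\<^esub> g) \<otimes>\<^bsub>galg R G\<^esub> h) z = (f \<otimes>\<^bsub>galg R G\<^esub> (g \<otimes>\<^bsub>galg R G\<^esub> h)) z"
  proof (cases "z \<in> carrier G")
    case False then show ?thesis by (simp add: conv_out)
  next
    case z: True
    define A where "A = spt f"
    define B where "B = spt g"
    define AB where "AB = prodset A B"
    have A: "finite A" "A \<subseteq> carrier G" using spt_FC[OF f] A_def by auto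
    have B: "finite B" "B \<subseteq> carrier G" using spt_FC[OF g] B_def by auto
    have AB: "finite AB" "AB \<subseteq> carrier G" using A B AB_def by auto
    have fg: "f \<otimes>\<^bsub>galg R G\<^esub> g \<in> FC" by (rule conv_FC[OF f g])
    have gh: "g \<otimes>\<^bsub>galg R G\<^esub> h \<in> FC" by (rule conv_FC[OF g h])
    have fc: "\<And>x. f x \<in> carrier R" "\<And>x. g x \<in> carrier R" "\<And>x. h x \<in> carrier R"
      using f g h by (auto simp: FC_carrier)
    have "((f \<otimes>\<^bsub>galg R G\<^esub> g) \<otimes>\<^bsub>galg R G\<^esub> h) z
        = (\<Oplus>\<^bsub>R\<^esub>y\<in>AB. (f \<otimes>\<^bsub>galg R G\<^esub> g) y \<otimes>\<^bsub>R\<^esub> h (inv\<^bsub>G\<^esub> y \<otimes>\<^bsub>G\<^esub> z))"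
      using conv_sup[OF fg h AB(1) _ AB(2) z] conv_spt[OF f g] AB_def A_def B_def by blast
    also have "\<dots> = (\<Oplus>\<^bsub>R\<^esub>y\<in>AB. (\<Oplus>\<^bsub>R\<^esub>x\<in>A. f x \<otimes>\<^bsub>R\<^esub> g (inv\<^bsub>G\<^esub> x \<otimes>\<^bsub>G\<^esub> y)) \<otimes>\<^bsub>R\<^esub> h (inv\<^bsub>G\<^esub> y \<otimes>\<^bsub>G\<^esub> z))"
      by (intro R.finsum_cong') (use conv_sup[OF f g A(1) _ A(2)] A_def AB fc in \<open>auto intro!: R.finsum_closed\<close>)
    also have "\<dots> = (\<Oplus>\<^bsub>R\<^esub>y\<in>AB. \<Oplus>\<^bsub>R\<^esub>x\<in>A. f x \<otimes>\<^bsub>R\<^esub> g (inv\<^bsub>G\<^esub> x \<otimes>\<^bsub>G\<^esub> y) \<otimes>\<^bsub>R\<^esub> h (inv\<^bsub>G\<^esub> y \<otimes>\<^bsub>G\<^esub> z))"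
      by (intro R.finsum_cong' R.finsum_ldistr) (use A fc in auto)
    also have "\<dots> = (\<Oplus>\<^bsub>R\<^esub>x\<in>A. \<Oplus>\<^bsub>R\<^esub>y\<in>AB. f x \<otimes>\<^bsub>R\<^esub> g (inv\<^bsub>G\<^esub> x \<otimes>\<^bsub>G\<^esub> y) \<otimes>\<^bsub>R\<^esub> h (inv\<^bsub>G\<^esub> y \<otimes>\<^bsub>G\<^esub> z))"
      by (rule R.finsum_swap) (use A AB fc in auto)
    also have "\<dots> = (\<Oplus>\<^bsub>R\<^esub>x\<in>A. f x \<otimes>\<^bsub>R\<^esub> (\<Oplus>\<^bsub>R\<^esub>y\<in>AB. g (inv\<^bsub>G\<^esub> x \<otimes>\<^bsub>G\<^esub> y) \<otimes>\<^bsub>R\<^esub> h (inv\<^bsub>G\<^esub> y \<otimes>\<^bsub>G\<^esub> z)))"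
      by (intro R.finsum_cong') (use A AB fc in \<open>auto simp: R.finsum_rdistr R.m_assoc intro!: R.finsum_closed\<close>)
    also have "\<dots> = (\<Oplus>\<^bsub>R\<^esub>x\<in>A. f x \<otimes>\<^bsub>R\<^esub> (\<Oplus>\<^bsub>R\<^esub>y\<in>B. g y \<otimes>\<^bsub>R\<^esub> h (inv\<^bsub>G\<^esub> y \<otimes>\<^bsub>G\<^esub> (inv\<^bsub>G\<^esub> x \<otimes>\<^bsub>G\<^esub> z))))"
    proof -
     have inner: "f x \<otimes>\<^bsub>R\<^esub> (\<Oplus>\<^bsub>R\<^esub>y\<in>AB. g (inv\<^bsub>G\<^esub> x \<otimes>\<^bsub>G\<^esub> y) \<otimes>\<^bsub>R\<^esub> h (inv\<^bsub>G\<^esub> y \<otimes>\<^bsub>G\<^esub> z))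
          = f x \<otimes>\<^bsub>R\<^esub> (\<Oplus>\<^bsub>R\<^esub>y\<in>B. g y \<otimes>\<^bsub>R\<^esub> h (inv\<^bsub>G\<^esub> y \<otimes>\<^bsub>G\<^esub> (inv\<^bsub>G\<^esub> x \<otimes>\<^bsub>G\<^esub> z)))" if x: "x \<in> A" for x
     proof -
      have xc: "x \<in> carrier G" using A x by auto
      have "(\<Oplus>\<^bsub>R\<^esub>y\<in>AB. g (inv\<^bsub>G\<^esub> x \<otimes>\<^bsub>G\<^esub> y) \<otimes>\<^bsub>R\<^esub> h (inv\<^bsub>G\<^esub> y \<otimes>\<^bsub>G\<^esub> z))
          = (\<Oplus>\<^bsub>R\<^esub>y\<in>B. g (inv\<^bsub>G\<^esub> x \<otimes>\<^bsub>G\<^esub> (x \<otimes>\<^bsub>G\<^esub> y)) \<otimes>\<^bsub>R\<^esub> h (inv\<^bsub>G\<^esub> (x \<otimes>\<^bsub>G\<^esub> y) \<otimes>\<^bsub>G\<^esub> z))"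
      proof (rule R.finsum_reindex_zero[OF AB(1)])
        show "inj_on (\<lambda>y. x \<otimes>\<^bsub>G\<^esub> y) B" using xc B(2) unfolding inj_on_def by (metis G.l_cancel subsetD)
        show "(\<lambda>y. x \<otimes>\<^bsub>G\<^esub> y) ` B \<subseteq> AB" using x AB_def by auto
        show "\<And>y. y \<in> AB \<Longrightarrow> g (inv\<^bsub>G\<^esub> x \<otimes>\<^bsub>G\<^esub> y) \<otimes>\<^bsub>R\<^esub> h (inv\<^bsub>G\<^esub> y \<otimes>\<^bsub>G\<^esub> z) \<in> carrier R"
          using fc by auto
        show "g (inv\<^bsub>G\<^esub> x \<otimes>\<^bsub>G\<^esub> y) \<otimes>\<^bsub>R\<^esub> h (inv\<^bsub>G\<^esub> y \<otimes>\<^bsub>G\<^esub> z) = \<zero>\<^bsub>R\<^esub>"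
          if "y \<in> AB" "y \<notin> (\<lambda>y. x \<otimes>\<^bsub>G\<^esub> y) ` B" for y
          using shift_zero[OF xc, of y g] that AB B_def fc by auto
      qed
      also have "\<dots> = (\<Oplus>\<^bsub>R\<^esub>y\<in>B. g y \<otimes>\<^bsub>R\<^esub> h (inv\<^bsub>G\<^esub> y \<otimes>\<^bsub>G\<^esub> (inv\<^bsub>G\<^esub> x \<otimes>\<^bsub>G\<^esub> z)))"
        by (intro R.finsum_cong') (use xc B z fc in \<open>auto simp: G.m_assoc[symmetric] G.inv_mult_group\<close>)
      finally show "f x \<otimes>\<^bsub>R\<^esub> (\<Oplus>\<^bsub>R\<^esub>y\<in>AB. g (inv\<^bsub>G\<^esub> x \<otimes>\<^bsub>G\<^esub> y) \<otimes>\<^bsub>R\<^esub> h (inv\<^bsub>G\<^esub> y \<otimes>\<^bsub>G\<^esub> z))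
          = f x \<otimes>\<^bsub>R\<^esub> (\<Oplus>\<^bsub>R\<^esub>y\<in>B. g y \<otimes>\<^bsub>R\<^esub> h (inv\<^bsub>G\<^esub> y \<otimes>\<^bsub>G\<^esub> (inv\<^bsub>G\<^esub> x \<otimes>\<^bsub>G\<^esub> z)))" by simp
     qed
     show ?thesis by (intro R.finsum_cong' refl inner) (use fc A AB z in \<open>auto intro!: R.finsum_closed\<close>)
    qed
    also have "\<dots> = (\<Oplus>\<^bsub>R\<^esub>x\<in>A. f x \<otimes>\<^bsub>R\<^esub> (g \<otimes>\<^bsub>galg R G\<^esub> h) (inv\<^bsub>G\<^esub> x \<otimes>\<^bsub>G\<^esub> z))"
      by (intro R.finsum_cong') (use conv_sup[OF g h B(1) _ B(2)] B_def A z fc gh in \<open>auto simp: FC_carrier\<close>)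
    also have "\<dots> = (f \<otimes>\<^bsub>galg R G\<^esub> (g \<otimes>\<^bsub>galg R G\<^esub> h)) z"
      using conv_sup[OF f gh A(1) _ A(2) z] A_def by simp
    finally show ?thesis .
  qed
qed


lemma one_FC: "\<one>\<^bsub>galg R G\<^esub> \<in> FC"
  unfolding galg_simps fin_coeffs_def by auto

lemma one_delta: "\<one>\<^bsub>galg R G\<^esub> = delta R \<one>\<^bsub>G\<^esub>"
  unfolding galg_simps delta_def by simp

lemma conv_l_one:
  assumes g: "g \<in> FC" shows "\<one>\<^bsub>galg R G\<^esub> \<otimes>\<^bsub>galg R G\<^esub> g = g"
proof (rule ext)
  fix z show "(\<one>\<^bsub>galg R G\<^esub> \<otimes>\<^bsub>galg R G\<^esub> g) z = g z"
  proof (cases "z \<in> carrier G")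
    case False then show ?thesis using fin_coeffsD(2)[OF g False] by (simp add: conv_out)
  next
    case True
    have "(\<one>\<^bsub>galg R G\<^esub> \<otimes>\<^bsub>galg R G\<^esub> g) z = (\<Oplus>\<^bsub>R\<^esub>x\<in>{\<one>\<^bsub>G\<^esub>}. \<one>\<^bsub>galg R G\<^esub> x \<otimes>\<^bsub>R\<^esub> g (inv\<^bsub>G\<^esub> x \<otimes>\<^bsub>G\<^esub> z))"
      proof (rule conv_sup[OF one_FC g _ _ _ True])
      show "spt \<one>\<^bsub>galg R G\<^esub> \<subseteq> {\<one>\<^bsub>G\<^esub>}" unfolding galg_simps(3) by auto
    qed auto
    also have "\<dots> = g z" using True g by (simp add: galg_simps FC_carrier)
    finally show ?thesis .
  qed
qed

lemma conv_r_one: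
  assumes f: "f \<in> FC" shows "f \<otimes>\<^bsub>galg R G\<^esub> \<one>\<^bsub>galg R G\<^esub> = f"
proof (rule ext)
  fix z show "(f \<otimes>\<^bsub>galg R G\<^esub> \<one>\<^bsub>galg R G\<^esub>) z = f z"
  proof (cases "z \<in> carrier G")
    case False then show ?thesis using fin_coeffsD(2)[OF f False] by (simp add: conv_out)
  next
    case True
    have A: "finite (insert z (spt f))" "insert z (spt f) \<subseteq> carrier G" using spt_FC[OF f] True by auto
    have "(f \<otimes>\<^bsub>galg R G\<^esub> \<one>\<^bsub>galg R G\<^esub>) z = (\<Oplus>\<^bsub>R\<^esub>x\<in>insert z (spt f). f x \<otimes>\<^bsub>R\<^esub> \<one>\<^bsub>galg R G\<^esub> (inv\<^bsub>G\<^esub> x \<otimes>\<^bsub>G\<^esub> z))"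
      by (rule conv_sup[OF f one_FC A(1) _ A(2) True]) auto
    also have "\<dots> = (\<Oplus>\<^bsub>R\<^esub>x\<in>insert z (spt f). if z = x then f x else \<zero>\<^bsub>R\<^esub>)"
    proof (intro R.finsum_cong' refl)
      fix x assume x: "x \<in> insert z (spt f)"
      then have xc: "x \<in> carrier G" using A by auto
      have "(inv\<^bsub>G\<^esub> x \<otimes>\<^bsub>G\<^esub> z = \<one>\<^bsub>G\<^esub>) = (z = x)"
      proof
        assume hh: "inv\<^bsub>G\<^esub> x \<otimes>\<^bsub>G\<^esub> z = \<one>\<^bsub>G\<^esub>"
        have "z = x \<otimes>\<^bsub>G\<^esub> (inv\<^bsub>G\<^esub> x \<otimes>\<^bsub>G\<^esub> z)" using xc True by (simp add: G.m_assoc[symmetric])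
        then show "z = x" using hh xc by simp
      next
        assume "z = x" then show "inv\<^bsub>G\<^esub> x \<otimes>\<^bsub>G\<^esub> z = \<one>\<^bsub>G\<^esub>" using xc by simp
      qed
      then show "f x \<otimes>\<^bsub>R\<^esub> \<one>\<^bsub>galg R G\<^esub> (inv\<^bsub>G\<^esub> x \<otimes>\<^bsub>G\<^esub> z) = (if z = x then f x else \<zero>\<^bsub>R\<^esub>)"
        using f by (simp add: galg_simps(3) FC_carrier)
    qed (use f in \<open>auto simp: FC_carrier\<close>)
    also have "\<dots> = f z" by (rule R.add.finprod_singleton) (use A f in \<open>auto simp: FC_carrier\<close>)
    finally show ?thesis .
  qed
qed

lemma conv_l_distr:
  assumes f: "f \<in> FC" and g: "g \<in> FC" and h: "h \<in> FC"
  shows "(f \<oplus>\<^bsub>galg R G\<^esub> g) \<otimes>\<^bsub>galg R G\<^esub> h = f \<otimes>\<^bsub>galg R G\<^esub> h \<oplus>\<^bsub>galg R G\<^esub> g \<otimes>\<^bsub>galg R G\<^esub> h"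
proof (rule ext)
  fix z
  have fg: "f \<oplus>\<^bsub>galg R G\<^esub> g \<in> FC" using f g by (simp add: galg_simps(5) FC_add)
  show "((f \<oplus>\<^bsub>galg R G\<^esub> g) \<otimes>\<^bsub>galg R G\<^esub> h) z = (f \<otimes>\<^bsub>galg R G\<^esub> h \<oplus>\<^bsub>galg R G\<^esub> g \<otimes>\<^bsub>galg R G\<^esub> h) z"
  proof (cases "z \<in> carrier G")
    case False then show ?thesis by (simp add: conv_out galg_simps(5))
  next
    case True
    define A where "A = spt f \<union> spt g"
    have A: "finite A" "A \<subseteq> carrier G" using spt_FC[OF f] spt_FC[OF g] A_def by auto
    have fc: "\<And>x. f x \<in> carrier R" "\<And>x. g x \<in> carrier R" "\<And>x. h x \<in> carrier R"
      using f g h by (auto simp: FC_carrier)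
    have "((f \<oplus>\<^bsub>galg R G\<^esub> g) \<otimes>\<^bsub>galg R G\<^esub> h) z = (\<Oplus>\<^bsub>R\<^esub>x\<in>A. (f \<oplus>\<^bsub>galg R G\<^esub> g) x \<otimes>\<^bsub>R\<^esub> h (inv\<^bsub>G\<^esub> x \<otimes>\<^bsub>G\<^esub> z))"
      by (rule conv_sup[OF fg h A(1) _ A(2) True]) (auto simp: A_def galg_simps(5))
    also have "\<dots> = (\<Oplus>\<^bsub>R\<^esub>x\<in>A. f x \<otimes>\<^bsub>R\<^esub> h (inv\<^bsub>G\<^esub> x \<otimes>\<^bsub>G\<^esub> z) \<oplus>\<^bsub>R\<^esub> g x \<otimes>\<^bsub>R\<^esub> h (inv\<^bsub>G\<^esub> x \<otimes>\<^bsub>G\<^esub> z))"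
      by (intro R.finsum_cong') (use fc in \<open>auto simp: galg_simps(5) R.l_distr\<close>)
    also have "\<dots> = (\<Oplus>\<^bsub>R\<^esub>x\<in>A. f x \<otimes>\<^bsub>R\<^esub> h (inv\<^bsub>G\<^esub> x \<otimes>\<^bsub>G\<^esub> z)) \<oplus>\<^bsub>R\<^esub> (\<Oplus>\<^bsub>R\<^esub>x\<in>A. g x \<otimes>\<^bsub>R\<^esub> h (inv\<^bsub>G\<^esub> x \<otimes>\<^bsub>G\<^esub> z))"
      by (rule R.finsum_addf) (use fc in auto)
    also have "\<dots> = (f \<otimes>\<^bsub>galg R G\<^esub> h \<oplus>\<^bsub>galg R G\<^esub> g \<otimes>\<^bsub>galg R G\<^esub> h) z"
      using conv_sup[OF f h A(1) _ A(2) True] conv_sup[OF g h A(1) _ A(2) True] A_def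
      by (simp add: galg_simps(5))
    finally show ?thesis .
  qed
qed

lemma conv_r_distr:
  assumes f: "f \<in> FC" and g: "g \<in> FC" and h: "h \<in> FC"
  shows "h \<otimes>\<^bsub>galg R G\<^esub> (f \<oplus>\<^bsub>galg R G\<^esub> g) = h \<otimes>\<^bsub>galg R G\<^esub> f \<oplus>\<^bsub>galg R G\<^esub> h \<otimes>\<^bsub>galg R G\<^esub> g"
proof (rule ext)
  fix z
  have fg: "f \<oplus>\<^bsub>galg R G\<^esub> g \<in> FC" using f g by (simp add: galg_simps(5) FC_add)
  show "(h \<otimes>\<^bsub>galg R G\<^esub> (f \<oplus>\<^bsub>galg R G\<^esub> g)) z = (h \<otimes>\<^bsub>galg R G\<^esub> f \<oplus>\<^bsub>galg R G\<^esub> h \<otimes>\<^bsub>galg R G\<^esub> g) z"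
  proof (cases "z \<in> carrier G")
    case False then show ?thesis by (simp add: conv_out galg_simps(5))
  next
    case True
    define A where "A = spt h"
    have A: "finite A" "A \<subseteq> carrier G" using spt_FC[OF h] A_def by auto
    have fc: "\<And>x. f x \<in> carrier R" "\<And>x. g x \<in> carrier R" "\<And>x. h x \<in> carrier R"
      using f g h by (auto simp: FC_carrier)
    have "(h \<otimes>\<^bsub>galg R G\<^esub> (f \<oplus>\<^bsub>galg R G\<^esub> g)) z = (\<Oplus>\<^bsub>R\<^esub>x\<in>A. h x \<otimes>\<^bsub>R\<^esub> (f \<oplus>\<^bsub>galg R G\<^esub> g) (inv\<^bsub>G\<^esub> x \<otimes>\<^bsub>G\<^esub> z))"
      by (rule conv_sup[OF h fg A(1) _ A(2) True]) (auto simp: A_def)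
    also have "\<dots> = (\<Oplus>\<^bsub>R\<^esub>x\<in>A. h x \<otimes>\<^bsub>R\<^esub> f (inv\<^bsub>G\<^esub> x \<otimes>\<^bsub>G\<^esub> z) \<oplus>\<^bsub>R\<^esub> h x \<otimes>\<^bsub>R\<^esub> g (inv\<^bsub>G\<^esub> x \<otimes>\<^bsub>G\<^esub> z))"
      by (intro R.finsum_cong') (use fc in \<open>auto simp: galg_simps(5) R.r_distr\<close>)
    also have "\<dots> = (\<Oplus>\<^bsub>R\<^esub>x\<in>A. h x \<otimes>\<^bsub>R\<^esub> f (inv\<^bsub>G\<^esub> x \<otimes>\<^bsub>G\<^esub> z)) \<oplus>\<^bsub>R\<^esub> (\<Oplus>\<^bsub>R\<^esub>x\<in>A. h x \<otimes>\<^bsub>R\<^esub> g (inv\<^bsub>G\<^esub> x \<otimes>\<^bsub>G\<^esub> z))"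
      by (rule R.finsum_addf) (use fc in auto)
    also have "\<dots> = (h \<otimes>\<^bsub>galg R G\<^esub> f \<oplus>\<^bsub>galg R G\<^esub> h \<otimes>\<^bsub>galg R G\<^esub> g) z"
      using conv_sup[OF h f A(1) _ A(2) True] conv_sup[OF h g A(1) _ A(2) True] A_def
      by (simp add: galg_simps(5))
    finally show ?thesis .
  qed
qed

lemma galg_ring: "ring (galg R G)"
proof (rule ringI)
  show "abelian_group (galg R G)" by (rule galg_abelian_group)
  show "monoid (galg R G)"
    by (rule monoidI) (auto simp: conv_FC conv_assoc conv_l_one conv_r_one one_FC galg_simps(1))
qed (auto simp: conv_l_distr conv_r_distr galg_simps(1))


lemma smult_FC: "r \<in> carrier R \<Longrightarrow> f \<in> FC \<Longrightarrow> r \<odot>\<^bsub>galg R G\<^esub> f \<in> FC"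
  by (simp add: galg_simps(6) FC_smult)

lemma conv_smult_l:
  assumes r: "r \<in> carrier R" and f: "f \<in> FC" and g: "g \<in> FC"
  shows "(r \<odot>\<^bsub>galg R G\<^esub> f) \<otimes>\<^bsub>galg R G\<^esub> g = r \<odot>\<^bsub>galg R G\<^esub> (f \<otimes>\<^bsub>galg R G\<^esub> g)"
proof (rule ext)
  fix z
  have rf: "r \<odot>\<^bsub>galg R G\<^esub> f \<in> FC" by (rule smult_FC[OF r f])
  show "((r \<odot>\<^bsub>galg R G\<^esub> f) \<otimes>\<^bsub>galg R G\<^esub> g) z = (r \<odot>\<^bsub>galg R G\<^esub> (f \<otimes>\<^bsub>galg R G\<^esub> g)) z"
  proof (cases "z \<in> carrier G")
    case False then show ?thesis using r by (simp add: conv_out galg_simps(6))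
  next
    case True
    define A where "A = spt f"
    have A: "finite A" "A \<subseteq> carrier G" using spt_FC[OF f] A_def by auto
    have fc: "\<And>x. f x \<in> carrier R" "\<And>x. g x \<in> carrier R"
      using f g by (auto simp: FC_carrier)
    have "((r \<odot>\<^bsub>galg R G\<^esub> f) \<otimes>\<^bsub>galg R G\<^esub> g) z = (\<Oplus>\<^bsub>R\<^esub>x\<in>A. (r \<odot>\<^bsub>galg R G\<^esub> f) x \<otimes>\<^bsub>R\<^esub> g (inv\<^bsub>G\<^esub> x \<otimes>\<^bsub>G\<^esub> z))"
      by (rule conv_sup[OF rf g A(1) _ A(2) True]) (use r in \<open>auto simp: A_def galg_simps(6)\<close>)
    also have "\<dots> = (\<Oplus>\<^bsub>R\<^esub>x\<in>A. r \<otimes>\<^bsub>R\<^esub> (f x \<otimes>\<^bsub>R\<^esub> g (inv\<^bsub>G\<^esub> x \<otimes>\<^bsub>G\<^esub> z)))"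
      by (intro R.finsum_cong') (use fc r in \<open>auto simp: galg_simps(6) R.m_assoc\<close>)
    also have "\<dots> = r \<otimes>\<^bsub>R\<^esub> (\<Oplus>\<^bsub>R\<^esub>x\<in>A. f x \<otimes>\<^bsub>R\<^esub> g (inv\<^bsub>G\<^esub> x \<otimes>\<^bsub>G\<^esub> z))"
      by (rule R.finsum_rdistr[symmetric]) (use fc r A in auto)
    also have "\<dots> = (r \<odot>\<^bsub>galg R G\<^esub> (f \<otimes>\<^bsub>galg R G\<^esub> g)) z"
      using conv_sup[OF f g A(1) _ A(2) True] A_def by (simp add: galg_simps(6))
    finally show ?thesis .
  qed
qed

lemma conv_smult_r:
  assumes r: "r \<in> carrier R" and f: "f \<in> FC" and g: "g \<in> FC"
  shows "f \<otimes>\<^bsub>galg R G\<^esub> (r \<odot>\<^bsub>galg R G\<^esub> g) = r \<odot>\<^bsub>galg R G\<^esub> (f \<otimes>\<^bsub>galg R G\<^esub> g)"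
proof (rule ext)
  fix z
  have rg: "r \<odot>\<^bsub>galg R G\<^esub> g \<in> FC" by (rule smult_FC[OF r g])
  show "(f \<otimes>\<^bsub>galg R G\<^esub> (r \<odot>\<^bsub>galg R G\<^esub> g)) z = (r \<odot>\<^bsub>galg R G\<^esub> (f \<otimes>\<^bsub>galg R G\<^esub> g)) z"
  proof (cases "z \<in> carrier G")
    case False then show ?thesis using r by (simp add: conv_out galg_simps(6))
  next
    case True
    define A where "A = spt f"
    have A: "finite A" "A \<subseteq> carrier G" using spt_FC[OF f] A_def by auto
    have fc: "\<And>x. f x \<in> carrier R" "\<And>x. g x \<in> carrier R"
      using f g by (auto simp: FC_carrier)
    have "(f \<otimes>\<^bsub>galg R G\<^esub> (r \<odot>\<^bsub>galg R G\<^esub> g)) z = (\<Oplus>\<^bsub>R\<^esub>x\<in>A. f x \<otimes>\<^bsub>R\<^esub> (r \<odot>\<^bsub>galg R G\<^esub> g) (inv\<^bsub>G\<^esub> x \<otimes>\<^bsub>G\<^esub> z))"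
      by (rule conv_sup[OF f rg A(1) _ A(2) True]) (auto simp: A_def)
    also have "\<dots> = (\<Oplus>\<^bsub>R\<^esub>x\<in>A. r \<otimes>\<^bsub>R\<^esub> (f x \<otimes>\<^bsub>R\<^esub> g (inv\<^bsub>G\<^esub> x \<otimes>\<^bsub>G\<^esub> z)))"
      by (intro R.finsum_cong') (use fc r in \<open>auto simp: galg_simps(6) R.m_lcomm\<close>)
    also have "\<dots> = r \<otimes>\<^bsub>R\<^esub> (\<Oplus>\<^bsub>R\<^esub>x\<in>A. f x \<otimes>\<^bsub>R\<^esub> g (inv\<^bsub>G\<^esub> x \<otimes>\<^bsub>G\<^esub> z))"
      by (rule R.finsum_rdistr[symmetric]) (use fc r A in auto)
    also have "\<dots> = (r \<odot>\<^bsub>galg R G\<^esub> (f \<otimes>\<^bsub>galg R G\<^esub> g)) z"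
      using conv_sup[OF f g A(1) _ A(2) True] A_def by (simp add: galg_simps(6))
    finally show ?thesis .
  qed
qed

lemma galg_module: "module R (galg R G)"
proof (rule moduleI)
  show "cring R" by (rule R.is_cring)
  show "abelian_group (galg R G)" by (rule galg_abelian_group)
qed (auto simp: galg_simps(1,5,6) FC_smult FC_carrier R.l_distr R.r_distr R.m_assoc)

lemma delta_mult:
  assumes a: "a \<in> carrier G" and b: "b \<in> carrier G"
  shows "delta R a \<otimes>\<^bsub>galg R G\<^esub> delta R b = delta R (a \<otimes>\<^bsub>G\<^esub> b)"
proof (rule ext)
  fix z
  show "(delta R a \<otimes>\<^bsub>galg R G\<^esub> delta R b) z = delta R (a \<otimes>\<^bsub>G\<^esub> b) z"
  proof (cases "z \<in> carrier G")
    case False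
    then have "z \<noteq> a \<otimes>\<^bsub>G\<^esub> b" using a b by auto
    then show ?thesis using False by (simp add: conv_out delta_def)
  next
    case True
    have "(delta R a \<otimes>\<^bsub>galg R G\<^esub> delta R b) z = (\<Oplus>\<^bsub>R\<^esub>x\<in>{a}. delta R a x \<otimes>\<^bsub>R\<^esub> delta R b (inv\<^bsub>G\<^esub> x \<otimes>\<^bsub>G\<^esub> z))"
    proof (rule conv_sup[OF delta_FC[OF a] delta_FC[OF b] _ _ _ True])
      show "spt (delta R a) \<subseteq> {a}" unfolding delta_def by auto
    qed (use a in auto)
    also have "\<dots> = delta R b (inv\<^bsub>G\<^esub> a \<otimes>\<^bsub>G\<^esub> z)"
      by (simp add: delta_def)
    also have "\<dots> = delta R (a \<otimes>\<^bsub>G\<^esub> b) z"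
    proof -
      have "(inv\<^bsub>G\<^esub> a \<otimes>\<^bsub>G\<^esub> z = b) = (z = a \<otimes>\<^bsub>G\<^esub> b)"
      proof
        assume hh: "inv\<^bsub>G\<^esub> a \<otimes>\<^bsub>G\<^esub> z = b"
        have "z = a \<otimes>\<^bsub>G\<^esub> (inv\<^bsub>G\<^esub> a \<otimes>\<^bsub>G\<^esub> z)" using a True by (simp add: G.m_assoc[symmetric])
        then show "z = a \<otimes>\<^bsub>G\<^esub> b" using hh by simp
      next
        assume "z = a \<otimes>\<^bsub>G\<^esub> b" then show "inv\<^bsub>G\<^esub> a \<otimes>\<^bsub>G\<^esub> z = b" using a b by (simp add: G.m_assoc[symmetric])
      qed
      then show ?thesis by (simp add: delta_def)
    qed
    finally show ?thesis .
  qed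
qed

end


locale ralg = R: cring R + M: module R H + H: ring H
  for R :: "('r,'d) ring_scheme" and H :: "('r,'h) module" +
  assumes smult_mult_l: "\<lbrakk>r \<in> carrier R; x \<in> carrier H; y \<in> carrier H\<rbrakk> \<Longrightarrow>
      (r \<odot>\<^bsub>H\<^esub> x) \<otimes>\<^bsub>H\<^esub> y = r \<odot>\<^bsub>H\<^esub> (x \<otimes>\<^bsub>H\<^esub> y)"
    and smult_mult_r: "\<lbrakk>r \<in> carrier R; x \<in> carrier H; y \<in> carrier H\<rbrakk> \<Longrightarrow>
      x \<otimes>\<^bsub>H\<^esub> (r \<odot>\<^bsub>H\<^esub> y) = r \<odot>\<^bsub>H\<^esub> (x \<otimes>\<^bsub>H\<^esub> y)"
begin

lemma finsum_smult_rdistr: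
  assumes "finite A" "\<And>i. i \<in> A \<Longrightarrow> f i \<in> carrier R" "x \<in> carrier H"
  shows "(\<Oplus>\<^bsub>R\<^esub>i\<in>A. f i) \<odot>\<^bsub>H\<^esub> x = (\<Oplus>\<^bsub>H\<^esub>i\<in>A. f i \<odot>\<^bsub>H\<^esub> x)"
  using assms
proof (induct A rule: finite_induct)
  case empty then show ?case by simp
next
  case (insert a A)
  then show ?case
    by (simp add: M.smult_l_distr R.finsum_closed Pi_def M.finsum_insert M.finsum_closed)
qed

end


context gctx begin

lemma galg_finsum_eval:
  assumes A: "finite A" and F: "\<And>x. x \<in> A \<Longrightarrow> F x \<in> FC"
  shows "finsum (galg R G) F A z = (\<Oplus>\<^bsub>R\<^esub>x\<in>A. F x z)"
  using A F
proof (induct A rule: finite_induct)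
  case empty
  have e: "finsum (galg R G) F {} = (\<lambda>z. \<zero>\<^bsub>R\<^esub>)"
    using abelian_monoid.finsum_empty[OF abelian_group.axioms(1)[OF galg_abelian_group]] by (simp add: galg_simps(4))
  then show ?case by simp
next
  case (insert a A)
  have "finsum (galg R G) F (insert a A) = F a \<oplus>\<^bsub>galg R G\<^esub> finsum (galg R G) F A"
    using insert by (intro abelian_monoid.finsum_insert[OF abelian_group.axioms(1)[OF galg_abelian_group]]) (auto simp: galg_simps(1))
  then show ?case using insert
    by (simp add: galg_simps(5) FC_carrier R.finsum_insert)
qed

lemma galg_finsum_closed:
  assumes A: "finite A" and F: "\<And>x. x \<in> A \<Longrightarrow> F x \<in> FC"
  shows "finsum (galg R G) F A \<in> FC"
  using abelian_monoid.finsum_closed[OF abelian_group.axioms(1)[OF galg_abelian_group], of F A] F by (auto simp: galg_simps(1))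

lemma galg_expand:
  assumes f: "f \<in> FC"
  shows "f = (\<Oplus>\<^bsub>galg R G\<^esub>x\<in>spt f. f x \<odot>\<^bsub>galg R G\<^esub> delta R x)"
proof (rule ext)
  fix z
  have sp: "finite (spt f)" "spt f \<subseteq> carrier G" using spt_FC[OF f] by auto
  have dd: "\<And>x. x \<in> spt f \<Longrightarrow> f x \<odot>\<^bsub>galg R G\<^esub> delta R x \<in> FC"
    using sp f by (auto intro!: smult_FC delta_FC simp: FC_carrier)
  have "(\<Oplus>\<^bsub>galg R G\<^esub>x\<in>spt f. f x \<odot>\<^bsub>galg R G\<^esub> delta R x) z
      = (\<Oplus>\<^bsub>R\<^esub>x\<in>spt f. (f x \<odot>\<^bsub>galg R G\<^esub> delta R x) z)"
    by (rule galg_finsum_eval[OF sp(1) dd])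
  also have "\<dots> = (\<Oplus>\<^bsub>R\<^esub>x\<in>spt f. if z = x then f x else \<zero>\<^bsub>R\<^esub>)"
    by (intro R.finsum_cong') (use f in \<open>auto simp: galg_simps(6) delta_def FC_carrier\<close>)
  also have "\<dots> = f z"
  proof (cases "z \<in> spt f")
    case True then show ?thesis
      by (intro R.add.finprod_singleton) (use sp f in \<open>auto simp: FC_carrier\<close>)
  next
    case False then show ?thesis
      by (intro trans[OF R.finsum_zero_eqI]) auto
  qed
  finally show "f z = (\<Oplus>\<^bsub>galg R G\<^esub>x\<in>spt f. f x \<odot>\<^bsub>galg R G\<^esub> delta R x) z" by simp
qed

end

lemma (in gctx) galg_ralg: "ralg R (galg R G)"
  unfolding ralg_def ralg_axioms_def
  using R.is_cring galg_module galg_ring conv_smult_l conv_smult_r by (auto simp: galg_simps(1))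

sublocale gctx \<subseteq> RA: ralg R "galg R G" by (rule galg_ralg)


locale hctx = gctx R G + ralg R H
  for R :: "('r,'d) ring_scheme" and G :: "('g,'e) monoid_scheme" and H :: "('r,'h) module" +
  fixes psi :: "'g \<Rightarrow> 'h"
  assumes psi_closed: "x \<in> carrier G \<Longrightarrow> psi x \<in> carrier H"
    and psi_mult: "x \<in> carrier G \<Longrightarrow> y \<in> carrier G \<Longrightarrow> psi (x \<otimes>\<^bsub>G\<^esub> y) = psi x \<otimes>\<^bsub>H\<^esub> psi y"
    and psi_one: "psi \<one>\<^bsub>G\<^esub> = \<one>\<^bsub>H\<^esub>"
begin

definition Fm where "Fm f = (\<Oplus>\<^bsub>H\<^esub>x\<in>spt f. f x \<odot>\<^bsub>H\<^esub> psi x)"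

lemma Fm_sup:
  assumes f: "f \<in> FC" and A: "finite A" "spt f \<subseteq> A" "A \<subseteq> carrier G"
  shows "Fm f = (\<Oplus>\<^bsub>H\<^esub>x\<in>A. f x \<odot>\<^bsub>H\<^esub> psi x)"
  unfolding Fm_def
  by (rule M.finsum_sup) (use A f in \<open>auto simp: FC_carrier psi_closed\<close>)

lemma Fm_closed: assumes f: "f \<in> FC" shows "Fm f \<in> carrier H"
proof -
  have "spt f \<subseteq> carrier G" using spt_FC[OF f] by blast
  then show ?thesis unfolding Fm_def using f by (intro M.finsum_closed) (auto simp: FC_carrier psi_closed)
qed

lemma Fm_add:
  assumes f: "f \<in> FC" and g: "g \<in> FC"
  shows "Fm (f \<oplus>\<^bsub>galg R G\<^esub> g) = Fm f \<oplus>\<^bsub>H\<^esub> Fm g"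
proof -
  define A where "A = spt f \<union> spt g"
  have A: "finite A" "A \<subseteq> carrier G" using spt_FC[OF f] spt_FC[OF g] A_def by auto
  have fg: "f \<oplus>\<^bsub>galg R G\<^esub> g \<in> FC" using f g by (simp add: galg_simps(5) FC_add)
  have "Fm (f \<oplus>\<^bsub>galg R G\<^esub> g) = (\<Oplus>\<^bsub>H\<^esub>x\<in>A. (f x \<oplus>\<^bsub>R\<^esub> g x) \<odot>\<^bsub>H\<^esub> psi x)"
    by (subst Fm_sup[OF fg A(1) _ A(2)]) (auto simp: A_def galg_simps(5))
  also have "\<dots> = (\<Oplus>\<^bsub>H\<^esub>x\<in>A. f x \<odot>\<^bsub>H\<^esub> psi x \<oplus>\<^bsub>H\<^esub> g x \<odot>\<^bsub>H\<^esub> psi x)"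
    by (intro M.finsum_cong') (use A f g in \<open>auto simp: M.smult_l_distr FC_carrier psi_closed\<close>)
  also have "\<dots> = Fm f \<oplus>\<^bsub>H\<^esub> Fm g"
    by (subst M.finsum_addf) (use A f g in \<open>auto simp: FC_carrier psi_closed Fm_sup[OF f A(1) _ A(2)] Fm_sup[OF g A(1) _ A(2)] A_def\<close>)
  finally show ?thesis .
qed

lemma Fm_smult:
  assumes r: "r \<in> carrier R" and f: "f \<in> FC"
  shows "Fm (r \<odot>\<^bsub>galg R G\<^esub> f) = r \<odot>\<^bsub>H\<^esub> Fm f"
proof -
  define A where "A = spt f"
  have A: "finite A" "A \<subseteq> carrier G" using spt_FC[OF f] A_def by auto
  have rf: "r \<odot>\<^bsub>galg R G\<^esub> f \<in> FC" by (rule smult_FC[OF r f])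
  have "Fm (r \<odot>\<^bsub>galg R G\<^esub> f) = (\<Oplus>\<^bsub>H\<^esub>x\<in>A. (r \<otimes>\<^bsub>R\<^esub> f x) \<odot>\<^bsub>H\<^esub> psi x)"
    by (subst Fm_sup[OF rf A(1) _ A(2)]) (use r in \<open>auto simp: A_def galg_simps(6)\<close>)
  also have "\<dots> = (\<Oplus>\<^bsub>H\<^esub>x\<in>A. r \<odot>\<^bsub>H\<^esub> (f x \<odot>\<^bsub>H\<^esub> psi x))"
    by (intro M.finsum_cong') (use A f r in \<open>auto simp: M.smult_assoc1 FC_carrier psi_closed\<close>)
  also have "\<dots> = r \<odot>\<^bsub>H\<^esub> (\<Oplus>\<^bsub>H\<^esub>x\<in>A. f x \<odot>\<^bsub>H\<^esub> psi x)"
    by (rule M.finsum_smult_ldistr[symmetric]) (use A f r in \<open>auto simp: FC_carrier psi_closed\<close>)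
  also have "\<dots> = r \<odot>\<^bsub>H\<^esub> Fm f"
    using Fm_sup[OF f A(1) _ A(2)] A_def by simp
  finally show ?thesis .
qed

lemma Fm_delta: "g \<in> carrier G \<Longrightarrow> Fm (delta R g) = psi g"
  by (subst Fm_sup[OF delta_FC, of g "{g}"]) (auto simp: delta_def psi_closed)

lemma Fm_one: "Fm \<one>\<^bsub>galg R G\<^esub> = \<one>\<^bsub>H\<^esub>"
  using Fm_delta[of "\<one>\<^bsub>G\<^esub>"] psi_one by (simp add: one_delta)

lemma Fm_mult:
  assumes f: "f \<in> FC" and g: "g \<in> FC"
  shows "Fm (f \<otimes>\<^bsub>galg R G\<^esub> g) = Fm f \<otimes>\<^bsub>H\<^esub> Fm g"
proof -
  define A where "A = spt f"
  define B where "B = spt g"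
  define AB where "AB = prodset A B"
  have A: "finite A" "A \<subseteq> carrier G" using spt_FC[OF f] A_def by auto
  have B: "finite B" "B \<subseteq> carrier G" using spt_FC[OF g] B_def by auto
  have AB: "finite AB" "AB \<subseteq> carrier G" using A B AB_def by auto
  have fg: "f \<otimes>\<^bsub>galg R G\<^esub> g \<in> FC" by (rule conv_FC[OF f g])
  have fc: "\<And>x. f x \<in> carrier R" "\<And>x. g x \<in> carrier R"
    using f g by (auto simp: FC_carrier)
  have pc: "\<And>x. x \<in> carrier G \<Longrightarrow> psi x \<in> carrier H" by (rule psi_closed)
  have "Fm (f \<otimes>\<^bsub>galg R G\<^esub> g) = (\<Oplus>\<^bsub>H\<^esub>z\<in>AB. (f \<otimes>\<^bsub>galg R G\<^esub> g) z \<odot>\<^bsub>H\<^esub> psi z)"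
    by (rule Fm_sup[OF fg AB(1) _ AB(2)]) (use conv_spt[OF f g] AB_def A_def B_def in blast)
  also have "\<dots> = (\<Oplus>\<^bsub>H\<^esub>z\<in>AB. (\<Oplus>\<^bsub>R\<^esub>x\<in>A. f x \<otimes>\<^bsub>R\<^esub> g (inv\<^bsub>G\<^esub> x \<otimes>\<^bsub>G\<^esub> z)) \<odot>\<^bsub>H\<^esub> psi z)"
    by (intro M.finsum_cong') (use conv_sup[OF f g A(1) _ A(2)] A_def AB fc pc in \<open>auto intro!: R.finsum_closed\<close>)
  also have "\<dots> = (\<Oplus>\<^bsub>H\<^esub>z\<in>AB. \<Oplus>\<^bsub>H\<^esub>x\<in>A. (f x \<otimes>\<^bsub>R\<^esub> g (inv\<^bsub>G\<^esub> x \<otimes>\<^bsub>G\<^esub> z)) \<odot>\<^bsub>H\<^esub> psi z)"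
    by (intro M.finsum_cong' finsum_smult_rdistr) (use A AB fc pc in auto)
  also have "\<dots> = (\<Oplus>\<^bsub>H\<^esub>x\<in>A. \<Oplus>\<^bsub>H\<^esub>z\<in>AB. (f x \<otimes>\<^bsub>R\<^esub> g (inv\<^bsub>G\<^esub> x \<otimes>\<^bsub>G\<^esub> z)) \<odot>\<^bsub>H\<^esub> psi z)"
    by (rule M.finsum_swap) (use A AB fc pc in auto)
  also have "\<dots> = (\<Oplus>\<^bsub>H\<^esub>x\<in>A. \<Oplus>\<^bsub>H\<^esub>y\<in>B. (f x \<odot>\<^bsub>H\<^esub> psi x) \<otimes>\<^bsub>H\<^esub> (g y \<odot>\<^bsub>H\<^esub> psi y))"
  proof -
    have inner: "(\<Oplus>\<^bsub>H\<^esub>z\<in>AB. (f x \<otimes>\<^bsub>R\<^esub> g (inv\<^bsub>G\<^esub> x \<otimes>\<^bsub>G\<^esub> z)) \<odot>\<^bsub>H\<^esub> psi z)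
       = (\<Oplus>\<^bsub>H\<^esub>y\<in>B. (f x \<odot>\<^bsub>H\<^esub> psi x) \<otimes>\<^bsub>H\<^esub> (g y \<odot>\<^bsub>H\<^esub> psi y))" if x: "x \<in> A" for x
    proof -
      have xc: "x \<in> carrier G" using A x by auto
      have "(\<Oplus>\<^bsub>H\<^esub>z\<in>AB. (f x \<otimes>\<^bsub>R\<^esub> g (inv\<^bsub>G\<^esub> x \<otimes>\<^bsub>G\<^esub> z)) \<odot>\<^bsub>H\<^esub> psi z)
          = (\<Oplus>\<^bsub>H\<^esub>y\<in>B. (f x \<otimes>\<^bsub>R\<^esub> g (inv\<^bsub>G\<^esub> x \<otimes>\<^bsub>G\<^esub> (x \<otimes>\<^bsub>G\<^esub> y))) \<odot>\<^bsub>H\<^esub> psi (x \<otimes>\<^bsub>G\<^esub> y))"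
      proof (rule M.finsum_reindex_zero[OF AB(1)])
        show "inj_on (\<lambda>y. x \<otimes>\<^bsub>G\<^esub> y) B" using xc B(2) unfolding inj_on_def by (metis G.l_cancel subsetD)
        show "(\<lambda>y. x \<otimes>\<^bsub>G\<^esub> y) ` B \<subseteq> AB" using x AB_def by auto
        show "\<And>y. y \<in> AB \<Longrightarrow> (f x \<otimes>\<^bsub>R\<^esub> g (inv\<^bsub>G\<^esub> x \<otimes>\<^bsub>G\<^esub> y)) \<odot>\<^bsub>H\<^esub> psi y \<in> carrier H"
          using fc AB pc by auto
        show "(f x \<otimes>\<^bsub>R\<^esub> g (inv\<^bsub>G\<^esub> x \<otimes>\<^bsub>G\<^esub> y)) \<odot>\<^bsub>H\<^esub> psi y = \<zero>\<^bsub>H\<^esub>"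
          if "y \<in> AB" "y \<notin> (\<lambda>y. x \<otimes>\<^bsub>G\<^esub> y) ` B" for y
          using shift_zero[OF xc, of y g] that AB B_def fc pc by auto
      qed
      also have "\<dots> = (\<Oplus>\<^bsub>H\<^esub>y\<in>B. (f x \<odot>\<^bsub>H\<^esub> psi x) \<otimes>\<^bsub>H\<^esub> (g y \<odot>\<^bsub>H\<^esub> psi y))"
      proof (intro M.finsum_cong' refl)
        fix y assume y: "y \<in> B"
        then have yc: "y \<in> carrier G" using B by auto
        have "(f x \<otimes>\<^bsub>R\<^esub> g (inv\<^bsub>G\<^esub> x \<otimes>\<^bsub>G\<^esub> (x \<otimes>\<^bsub>G\<^esub> y))) \<odot>\<^bsub>H\<^esub> psi (x \<otimes>\<^bsub>G\<^esub> y)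
            = f x \<odot>\<^bsub>H\<^esub> (g y \<odot>\<^bsub>H\<^esub> (psi x \<otimes>\<^bsub>H\<^esub> psi y))"
          using xc yc fc pc by (simp add: G.m_assoc[symmetric] psi_mult M.smult_assoc1)
        also have "\<dots> = (f x \<odot>\<^bsub>H\<^esub> psi x) \<otimes>\<^bsub>H\<^esub> (g y \<odot>\<^bsub>H\<^esub> psi y)"
          using xc yc fc pc by (simp add: smult_mult_l[of "f x" "psi x"] smult_mult_r[of "g y" "psi x" "psi y"])
        finally show "(f x \<otimes>\<^bsub>R\<^esub> g (inv\<^bsub>G\<^esub> x \<otimes>\<^bsub>G\<^esub> (x \<otimes>\<^bsub>G\<^esub> y))) \<odot>\<^bsub>H\<^esub> psi (x \<otimes>\<^bsub>G\<^esub> y)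
            = (f x \<odot>\<^bsub>H\<^esub> psi x) \<otimes>\<^bsub>H\<^esub> (g y \<odot>\<^bsub>H\<^esub> psi y)" .
      qed (use xc B fc pc in auto)
      finally show ?thesis .
    qed
    have pA: "\<And>x. x \<in> A \<Longrightarrow> psi x \<in> carrier H" "\<And>x. x \<in> B \<Longrightarrow> psi x \<in> carrier H"
      using A B pc by auto
    show ?thesis by (rule M.finsum_cong'[OF refl _ inner]) (use B fc pA in \<open>auto intro!: M.finsum_closed\<close>)
  qed
  also have "\<dots> = (\<Oplus>\<^bsub>H\<^esub>x\<in>A. (f x \<odot>\<^bsub>H\<^esub> psi x) \<otimes>\<^bsub>H\<^esub> Fm g)"
  proof -
    have pA: "\<And>x. x \<in> A \<Longrightarrow> psi x \<in> carrier H" "\<And>x. x \<in> B \<Longrightarrow> psi x \<in> carrier H"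
      using A B pc by auto
    have inner2: "(\<Oplus>\<^bsub>H\<^esub>y\<in>B. (f x \<odot>\<^bsub>H\<^esub> psi x) \<otimes>\<^bsub>H\<^esub> (g y \<odot>\<^bsub>H\<^esub> psi y)) = (f x \<odot>\<^bsub>H\<^esub> psi x) \<otimes>\<^bsub>H\<^esub> Fm g"
      if x: "x \<in> A" for x
      unfolding Fm_def B_def[symmetric]
      by (rule H.finsum_rdistr[symmetric]) (use B fc pA x in auto)
    show ?thesis
      by (rule M.finsum_cong'[OF refl _ inner2]) (use fc pA Fm_closed[OF g] in auto)
  qed
  also have "\<dots> = Fm f \<otimes>\<^bsub>H\<^esub> Fm g"
    unfolding Fm_def[of f] A_def
    by (rule H.finsum_ldistr[symmetric]) (use A_def A fc pc Fm_closed[OF g] in auto)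
  finally show ?thesis .
qed

lemma Fm_hom: "Fm \<in> ring_hom (galg R G) H"
  by (rule ring_hom_memI) (auto simp: galg_simps(1) Fm_closed Fm_mult Fm_add Fm_one)

end


lemma equivclp_invariant:
  assumes "equivclp r x y" "\<And>a b. r a b \<Longrightarrow> f a = f b"
  shows "f x = f y"
proof -
  have "(symclp r)\<^sup>*\<^sup>* x y" using assms(1) by (simp add: equivclp_def)
  then show ?thesis
  proof (induct rule: rtranclp_induct)
    case base then show ?case by simp
  next
    case (step y z)
    then show ?case using assms(2) by (auto simp: symclp_def)
  qed
qed

lemma wprod_Nil [simp]: "wprod G [] = \<one>\<^bsub>G\<^esub>"
  by (simp add: wprod_def)

lemma wprod_Cons [simp]: "wprod G (x # xs) = x \<otimes>\<^bsub>G\<^esub> wprod G xs"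
  by (simp add: wprod_def)

lemma wprod_upd [simp]: "wprod (M\<lparr>carrier := A\<rparr>) = wprod M"
  by (rule ext) (simp add: wprod_def)

lemma wprod_closed: "monoid G \<Longrightarrow> set ws \<subseteq> carrier G \<Longrightarrow> wprod G ws \<in> carrier G"
  by (induct ws) (auto simp: monoid.m_closed)

lemma wprod_append:
  "monoid G \<Longrightarrow> set xs \<subseteq> carrier G \<Longrightarrow> set ys \<subseteq> carrier G \<Longrightarrow> wprod G (xs @ ys) = wprod G xs \<otimes>\<^bsub>G\<^esub> wprod G ys"
  by (induct xs) (auto simp: monoid.m_assoc wprod_closed)

lemma alt_word_length [simp]: "length (alt_word s t k) = k"
  by (simp add: alt_word_def)

lemma cox_step_parity: "cox_step G S a b \<Longrightarrow> even (length a) = even (length b)"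
  by (induct rule: cox_step.induct) auto

locale excox =
  fixes W :: "('v,'b) monoid_scheme" and Waff S Omega :: "'v set"
  assumes ext: "ext_coxeter W Waff S Omega"
begin

lemma W_group: "group W" using ext by (simp add: ext_coxeter_def)

sublocale W: group W by (rule W_group)

lemma Waff_normal: "Waff \<lhd> W" using ext by (simp add: ext_coxeter_def)
lemma Waff_sub: "subgroup Waff W" using Waff_normal by (simp add: normal_def)
lemma Omega_sub: "subgroup Omega W" using ext by (simp add: ext_coxeter_def)
lemma cap: "Waff \<inter> Omega = {\<one>\<^bsub>W\<^esub>}" using ext by (simp add: ext_coxeter_def)
lemma prod_carrier: "Waff <#>\<^bsub>W\<^esub> Omega = carrier W" using ext by (simp add: ext_coxeter_def)
lemma cox: "coxeter_system (W\<lparr>carrier := Waff\<rparr>) S" using ext by (simp add: ext_coxeter_def)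
lemma conjS: "u \<in> Omega \<Longrightarrow> s \<in> S \<Longrightarrow> u \<otimes>\<^bsub>W\<^esub> s \<otimes>\<^bsub>W\<^esub> inv\<^bsub>W\<^esub> u \<in> S"
  using ext by (simp add: ext_coxeter_def)

lemma upd: "carrier (W\<lparr>carrier := Waff\<rparr>) = Waff" "monoid.mult (W\<lparr>carrier := Waff\<rparr>) = monoid.mult W"
  "monoid.one (W\<lparr>carrier := Waff\<rparr>) = monoid.one W"
  by simp_all

lemma cox_all: "group (W\<lparr>carrier := Waff\<rparr>) \<and> S \<subseteq> Waff \<and> \<one>\<^bsub>W\<^esub> \<notin> S \<and> (\<forall>s\<in>S. s \<otimes>\<^bsub>W\<^esub> s = \<one>\<^bsub>W\<^esub>)
   \<and> Waff = wprod W ` lists S \<and>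
   (\<forall>ws\<in>lists S. wprod W ws = \<one>\<^bsub>W\<^esub> \<longrightarrow> equivclp (cox_step (W\<lparr>carrier := Waff\<rparr>) S) ws [])"
  using cox unfolding coxeter_system_def upd wprod_upd by blast

lemma S_Waff: "S \<subseteq> Waff" using cox_all by blast
lemma Waff_carrier: "Waff \<subseteq> carrier W" using Waff_sub subgroup.subset by blast
lemma Omega_carrier: "Omega \<subseteq> carrier W" using Omega_sub subgroup.subset by blast
lemma S_carrier: "S \<subseteq> carrier W" using S_Waff Waff_carrier by blast
lemma S_inv: "s \<in> S \<Longrightarrow> s \<otimes>\<^bsub>W\<^esub> s = \<one>\<^bsub>W\<^esub>" using cox_all by blast
lemma one_notin_S: "\<one>\<^bsub>W\<^esub> \<notin> S" using cox_all by blast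
lemma Waff_gen: "Waff = wprod W ` lists S" using cox_all by blast
lemma Waff_rel: "ws \<in> lists S \<Longrightarrow> wprod W ws = \<one>\<^bsub>W\<^esub> \<Longrightarrow> equivclp (cox_step (W\<lparr>carrier := Waff\<rparr>) S) ws []"
  using cox_all by blast

lemma S_inv_eq: "s \<in> S \<Longrightarrow> inv\<^bsub>W\<^esub> s = s"
  using S_inv S_carrier by (metis W.inv_equality subsetD)

lemma lists_S_carrier: "ws \<in> lists S \<Longrightarrow> set ws \<subseteq> carrier W"
  using S_carrier by auto

lemma wprod_Waff: "ws \<in> lists S \<Longrightarrow> wprod W ws \<in> Waff"
  using Waff_gen by blast

lemma wprod_rev: "ws \<in> lists S \<Longrightarrow> wprod W (rev ws) = inv\<^bsub>W\<^esub> (wprod W ws)"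
proof (induct ws)
  case Nil then show ?case by simp
next
  case (Cons s ws)
  then have s: "s \<in> S" "s \<in> carrier W" and ws: "ws \<in> lists S" using S_carrier by auto
  have "wprod W (rev (s # ws)) = wprod W (rev ws) \<otimes>\<^bsub>W\<^esub> s"
    using wprod_append[OF W.monoid_axioms, of "rev ws" "[s]"] ws s lists_S_carrier[OF ws] by simp
  also have "\<dots> = inv\<^bsub>W\<^esub> (wprod W ws) \<otimes>\<^bsub>W\<^esub> inv\<^bsub>W\<^esub> s" using Cons ws s by (simp add: S_inv_eq)
  also have "\<dots> = inv\<^bsub>W\<^esub> (s \<otimes>\<^bsub>W\<^esub> wprod W ws)"
    using s wprod_closed[OF W.monoid_axioms lists_S_carrier[OF ws]] by (simp add: W.inv_mult_group)
  finally show ?case by simp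
qed

lemma even_of_one: "ws \<in> lists S \<Longrightarrow> wprod W ws = \<one>\<^bsub>W\<^esub> \<Longrightarrow> even (length ws)"
  using equivclp_invariant[OF Waff_rel, of ws "\<lambda>l. even (length l)"] cox_step_parity by fastforce

lemma rep_unique:
  assumes ws: "ws \<in> lists S" and ws': "ws' \<in> lists S" and u: "u \<in> Omega" and u': "u' \<in> Omega"
    and eq: "wprod W ws \<otimes>\<^bsub>W\<^esub> u = wprod W ws' \<otimes>\<^bsub>W\<^esub> u'"
  shows "u = u' \<and> even (length ws + length ws')"
proof -
  have a: "wprod W ws \<in> Waff" "wprod W ws' \<in> Waff" using wprod_Waff ws ws' by auto
  have ac: "wprod W ws \<in> carrier W" "wprod W ws' \<in> carrier W" using a Waff_carrier by auto
  have uc: "u \<in> carrier W" "u' \<in> carrier W" using u u' Omega_carrier by auto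
  have e: "inv\<^bsub>W\<^esub> (wprod W ws') \<otimes>\<^bsub>W\<^esub> wprod W ws = u' \<otimes>\<^bsub>W\<^esub> inv\<^bsub>W\<^esub> u"
  proof -
    have "inv\<^bsub>W\<^esub> (wprod W ws') \<otimes>\<^bsub>W\<^esub> wprod W ws = inv\<^bsub>W\<^esub> (wprod W ws') \<otimes>\<^bsub>W\<^esub> (wprod W ws \<otimes>\<^bsub>W\<^esub> u) \<otimes>\<^bsub>W\<^esub> inv\<^bsub>W\<^esub> u"
      using ac uc by (simp add: W.m_assoc)
    also have "\<dots> = inv\<^bsub>W\<^esub> (wprod W ws') \<otimes>\<^bsub>W\<^esub> (wprod W ws' \<otimes>\<^bsub>W\<^esub> u') \<otimes>\<^bsub>W\<^esub> inv\<^bsub>W\<^esub> u" using eq by simp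
    also have "\<dots> = u' \<otimes>\<^bsub>W\<^esub> inv\<^bsub>W\<^esub> u" using ac uc by (simp add: W.m_assoc[symmetric])
    finally show ?thesis .
  qed
  have l: "inv\<^bsub>W\<^esub> (wprod W ws') \<otimes>\<^bsub>W\<^esub> wprod W ws \<in> Waff"
    using a Waff_sub by (simp add: subgroup.m_closed subgroup.m_inv_closed)
  have r: "u' \<otimes>\<^bsub>W\<^esub> inv\<^bsub>W\<^esub> u \<in> Omega"
    using u u' Omega_sub by (simp add: subgroup.m_closed subgroup.m_inv_closed)
  have one: "u' \<otimes>\<^bsub>W\<^esub> inv\<^bsub>W\<^esub> u = \<one>\<^bsub>W\<^esub>" using l r e cap by auto
  then have uu: "u = u'" using uc by (metis W.inv_equality W.inv_inv W.inv_closed)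
  have "inv\<^bsub>W\<^esub> (wprod W ws') \<otimes>\<^bsub>W\<^esub> wprod W ws = \<one>\<^bsub>W\<^esub>" using e one by simp
  then have "wprod W (rev ws' @ ws) = \<one>\<^bsub>W\<^esub>"
    using wprod_append[OF W.monoid_axioms, of "rev ws'" ws] lists_S_carrier[OF ws] lists_S_carrier[OF ws'] wprod_rev[OF ws']
    by simp
  moreover have "rev ws' @ ws \<in> lists S" using ws ws' by (auto simp: in_lists_conv_set)
  ultimately have "even (length (rev ws' @ ws))" using even_of_one by blast
  then have "even (length ws + length ws')" by (simp add: add.commute)
  then show ?thesis using uu by blast
qed


abbreviation "len \<equiv> ext_len W S Omega"

lemma Omega_c: "u \<in> Omega \<Longrightarrow> u \<in> carrier W" using Omega_carrier by auto

lemma wprod_carrier: "ws \<in> lists S \<Longrightarrow> wprod W ws \<in> carrier W"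
  using wprod_Waff Waff_carrier by blast

lemma rep: "x \<in> carrier W \<Longrightarrow> \<exists>ws\<in>lists S. \<exists>u\<in>Omega. x = wprod W ws \<otimes>\<^bsub>W\<^esub> u"
proof -
  assume "x \<in> carrier W"
  then have "x \<in> Waff <#>\<^bsub>W\<^esub> Omega" using prod_carrier by simp
  then obtain h k where "h \<in> Waff" "k \<in> Omega" "x = h \<otimes>\<^bsub>W\<^esub> k" unfolding set_mult_def by auto
  then show ?thesis using Waff_gen by blast
qed

lemma len_wit: "x \<in> carrier W \<Longrightarrow> \<exists>ws\<in>lists S. length ws = len x \<and> (\<exists>u\<in>Omega. x = wprod W ws \<otimes>\<^bsub>W\<^esub> u)"
proof -
  assume x: "x \<in> carrier W"
  obtain ws u where "ws \<in> lists S" "u \<in> Omega" "x = wprod W ws \<otimes>\<^bsub>W\<^esub> u" using rep[OF x] by blast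
  then have ex: "\<exists>k. \<exists>ws\<in>lists S. length ws = k \<and> (\<exists>u\<in>Omega. x = wprod W ws \<otimes>\<^bsub>W\<^esub> u)" by blast
  show ?thesis unfolding ext_len_def by (rule LeastI_ex[OF ex])
qed

lemma len_le: "ws \<in> lists S \<Longrightarrow> u \<in> Omega \<Longrightarrow> x = wprod W ws \<otimes>\<^bsub>W\<^esub> u \<Longrightarrow> len x \<le> length ws"
  unfolding ext_len_def by (rule Least_le) blast

lemma len_parity: "ws \<in> lists S \<Longrightarrow> u \<in> Omega \<Longrightarrow> x = wprod W ws \<otimes>\<^bsub>W\<^esub> u \<Longrightarrow> even (len x + length ws)"
proof -
  assume ws: "ws \<in> lists S" and u: "u \<in> Omega" and x: "x = wprod W ws \<otimes>\<^bsub>W\<^esub> u"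
  have xc: "x \<in> carrier W" using x ws u wprod_carrier Omega_carrier by auto
  obtain ws' u' where "ws' \<in> lists S" "length ws' = len x" "u' \<in> Omega" "x = wprod W ws' \<otimes>\<^bsub>W\<^esub> u'"
    using len_wit[OF xc] by blast
  then show ?thesis using rep_unique[OF _ ws _ u, of ws' u'] x by auto
qed

lemma len_S_left:
  assumes s: "s \<in> S" and x: "x \<in> carrier W"
  shows "len (s \<otimes>\<^bsub>W\<^esub> x) = Suc (len x) \<or> len x = Suc (len (s \<otimes>\<^bsub>W\<^esub> x))"
proof -
  have sc: "s \<in> carrier W" using s S_carrier by auto
  obtain ws u where ws: "ws \<in> lists S" "length ws = len x" "u \<in> Omega" "x = wprod W ws \<otimes>\<^bsub>W\<^esub> u"
    using len_wit[OF x] by blast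
  have "s \<otimes>\<^bsub>W\<^esub> x = wprod W (s # ws) \<otimes>\<^bsub>W\<^esub> u"
    using ws(4) sc wprod_carrier[OF ws(1)] Omega_c[OF ws(3)] by (simp add: W.m_assoc)
  moreover have "s # ws \<in> lists S" using s ws by simp
  ultimately have a: "len (s \<otimes>\<^bsub>W\<^esub> x) \<le> Suc (len x)" "even (len (s \<otimes>\<^bsub>W\<^esub> x) + Suc (len x))"
    using len_le[of "s # ws" u] len_parity[of "s # ws" u] ws by auto
  have sxc: "s \<otimes>\<^bsub>W\<^esub> x \<in> carrier W" using sc x by simp
  obtain ws' u' where ws': "ws' \<in> lists S" "length ws' = len (s \<otimes>\<^bsub>W\<^esub> x)" "u' \<in> Omega" "s \<otimes>\<^bsub>W\<^esub> x = wprod W ws' \<otimes>\<^bsub>W\<^esub> u'"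
    using len_wit[OF sxc] by blast
  have "x = s \<otimes>\<^bsub>W\<^esub> (s \<otimes>\<^bsub>W\<^esub> x)" using sc x S_inv[OF s] by (simp add: W.m_assoc[symmetric])
  also have "\<dots> = wprod W (s # ws') \<otimes>\<^bsub>W\<^esub> u'"
    using ws'(4) sc wprod_carrier[OF ws'(1)] Omega_c[OF ws'(3)] by (simp add: W.m_assoc)
  finally have "len x \<le> Suc (len (s \<otimes>\<^bsub>W\<^esub> x))" using len_le[of "s # ws'" u' x] ws' s by auto
  then show ?thesis using a by presburger
qed

lemma len_Omega_right:
  assumes u: "u \<in> Omega" and x: "x \<in> carrier W"
  shows "len (x \<otimes>\<^bsub>W\<^esub> u) = len x"
proof -
  have uc: "u \<in> carrier W" using u Omega_carrier by auto
  have le: "len (y \<otimes>\<^bsub>W\<^esub> v) \<le> len y" if v: "v \<in> Omega" and y: "y \<in> carrier W" for v y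
  proof -
    obtain ws u0 where ws: "ws \<in> lists S" "length ws = len y" "u0 \<in> Omega" "y = wprod W ws \<otimes>\<^bsub>W\<^esub> u0"
      using len_wit[OF y] by blast
    have "y \<otimes>\<^bsub>W\<^esub> v = wprod W ws \<otimes>\<^bsub>W\<^esub> (u0 \<otimes>\<^bsub>W\<^esub> v)"
      using ws(4) wprod_carrier[OF ws(1)] Omega_c[OF ws(3)] Omega_c[OF v] by (simp add: W.m_assoc)
    moreover have "u0 \<otimes>\<^bsub>W\<^esub> v \<in> Omega" using ws v Omega_sub by (simp add: subgroup.m_closed)
    ultimately show ?thesis using len_le ws by metis
  qed
  have "len x = len ((x \<otimes>\<^bsub>W\<^esub> u) \<otimes>\<^bsub>W\<^esub> inv\<^bsub>W\<^esub> u)" using x uc by (simp add: W.m_assoc)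
  also have "\<dots> \<le> len (x \<otimes>\<^bsub>W\<^esub> u)"
    using le[of "inv\<^bsub>W\<^esub> u" "x \<otimes>\<^bsub>W\<^esub> u"] u Omega_sub x uc by (simp add: subgroup.m_inv_closed)
  finally show ?thesis using le[OF u x] by simp
qed

lemma conj_wprod:
  assumes u: "u \<in> Omega" and ws: "ws \<in> lists S"
  shows "u \<otimes>\<^bsub>W\<^esub> wprod W ws = wprod W (map (\<lambda>s. u \<otimes>\<^bsub>W\<^esub> s \<otimes>\<^bsub>W\<^esub> inv\<^bsub>W\<^esub> u) ws) \<otimes>\<^bsub>W\<^esub> u"
  using ws
proof (induct ws)
  case Nil then show ?case using u Omega_carrier by auto
next
  case (Cons s ws)
  have uc: "u \<in> carrier W" using u Omega_carrier by auto
  have sc: "s \<in> carrier W" using Cons S_carrier by auto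
  have wc: "wprod W ws \<in> carrier W" using Cons wprod_carrier by auto
  have mc: "wprod W (map (\<lambda>s. u \<otimes>\<^bsub>W\<^esub> s \<otimes>\<^bsub>W\<^esub> inv\<^bsub>W\<^esub> u) ws) \<in> carrier W"
    using Cons conjS[OF u] by (intro wprod_carrier) auto
  have "u \<otimes>\<^bsub>W\<^esub> wprod W (s # ws) = (u \<otimes>\<^bsub>W\<^esub> s \<otimes>\<^bsub>W\<^esub> inv\<^bsub>W\<^esub> u) \<otimes>\<^bsub>W\<^esub> (u \<otimes>\<^bsub>W\<^esub> wprod W ws)"
    using uc sc wc by (simp add: W.m_assoc W.inv_solve_left)
  also have "\<dots> = (u \<otimes>\<^bsub>W\<^esub> s \<otimes>\<^bsub>W\<^esub> inv\<^bsub>W\<^esub> u) \<otimes>\<^bsub>W\<^esub> (wprod W (map (\<lambda>s. u \<otimes>\<^bsub>W\<^esub> s \<otimes>\<^bsub>W\<^esub> inv\<^bsub>W\<^esub> u) ws) \<otimes>\<^bsub>W\<^esub> u)"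
    using Cons by simp
  also have "\<dots> = wprod W (map (\<lambda>s. u \<otimes>\<^bsub>W\<^esub> s \<otimes>\<^bsub>W\<^esub> inv\<^bsub>W\<^esub> u) (s # ws)) \<otimes>\<^bsub>W\<^esub> u"
    using uc sc mc by (simp add: W.m_assoc)
  finally show ?case .
qed

lemma len_Omega_left:
  assumes u: "u \<in> Omega" and x: "x \<in> carrier W"
  shows "len (u \<otimes>\<^bsub>W\<^esub> x) = len x"
proof -
  have uc: "u \<in> carrier W" using u Omega_carrier by auto
  have le: "len (v \<otimes>\<^bsub>W\<^esub> y) \<le> len y" if v: "v \<in> Omega" and y: "y \<in> carrier W" for v y
  proof -
    obtain ws u0 where ws: "ws \<in> lists S" "length ws = len y" "u0 \<in> Omega" "y = wprod W ws \<otimes>\<^bsub>W\<^esub> u0"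
      using len_wit[OF y] by blast
    have vc: "v \<in> carrier W" using v Omega_carrier by auto
    let ?ws = "map (\<lambda>s. v \<otimes>\<^bsub>W\<^esub> s \<otimes>\<^bsub>W\<^esub> inv\<^bsub>W\<^esub> v) ws"
    have mc: "?ws \<in> lists S" using ws conjS[OF v] by auto
    have "v \<otimes>\<^bsub>W\<^esub> y = (v \<otimes>\<^bsub>W\<^esub> wprod W ws) \<otimes>\<^bsub>W\<^esub> u0"
      using ws(4) vc wprod_carrier[OF ws(1)] Omega_c[OF ws(3)] by (simp add: W.m_assoc)
    also have "\<dots> = wprod W ?ws \<otimes>\<^bsub>W\<^esub> (v \<otimes>\<^bsub>W\<^esub> u0)"
      using conj_wprod[OF v ws(1)] wprod_carrier[OF mc] vc Omega_c[OF ws(3)] by (simp add: W.m_assoc)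
    finally have "v \<otimes>\<^bsub>W\<^esub> y = wprod W ?ws \<otimes>\<^bsub>W\<^esub> (v \<otimes>\<^bsub>W\<^esub> u0)" .
    moreover have "v \<otimes>\<^bsub>W\<^esub> u0 \<in> Omega" using ws v Omega_sub by (simp add: subgroup.m_closed)
    ultimately have "len (v \<otimes>\<^bsub>W\<^esub> y) \<le> length ?ws" using len_le mc by metis
    then show ?thesis using ws by simp
  qed
  have "len x = len (inv\<^bsub>W\<^esub> u \<otimes>\<^bsub>W\<^esub> (u \<otimes>\<^bsub>W\<^esub> x))" using x uc by (simp add: W.m_assoc[symmetric])
  also have "\<dots> \<le> len (u \<otimes>\<^bsub>W\<^esub> x)"
    using le[of "inv\<^bsub>W\<^esub> u" "u \<otimes>\<^bsub>W\<^esub> x"] u Omega_sub x uc by (simp add: subgroup.m_inv_closed)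
  finally show ?thesis using le[OF u x] by simp
qed

lemma len_zero_iff: "x \<in> carrier W \<Longrightarrow> (len x = 0) = (x \<in> Omega)"
proof
  assume x: "x \<in> carrier W" and "len x = 0"
  then obtain ws u where "ws \<in> lists S" "length ws = 0" "u \<in> Omega" "x = wprod W ws \<otimes>\<^bsub>W\<^esub> u"
    using len_wit by metis
  then show "x \<in> Omega" using Omega_carrier by auto
next
  assume x: "x \<in> carrier W" and "x \<in> Omega"
  then have "len x \<le> length ([] :: 'v list)"
    using Omega_carrier by (intro len_le[of "[]" x]) auto
  then show "len x = 0" by simp
qed

lemma len_one: "len \<one>\<^bsub>W\<^esub> = 0"
  using len_zero_iff[of "\<one>\<^bsub>W\<^esub>"] Omega_sub by (simp add: subgroup.one_closed)

lemma len_S: "s \<in> S \<Longrightarrow> len s = 1"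
  using len_S_left[of s "\<one>\<^bsub>W\<^esub>"] len_one S_carrier by auto

lemma len_dec:
  assumes x: "x \<in> carrier W" and k: "len x = Suc k"
  shows "\<exists>s\<in>S. len (s \<otimes>\<^bsub>W\<^esub> x) = k"
proof -
  obtain ws u where ws: "ws \<in> lists S" "length ws = Suc k" "u \<in> Omega" "x = wprod W ws \<otimes>\<^bsub>W\<^esub> u"
    using len_wit[OF x] k by metis
  then obtain s ws' where sw: "ws = s # ws'" by (cases ws) auto
  have s: "s \<in> S" "s \<in> carrier W" using sw ws S_carrier by auto
  have ws': "ws' \<in> lists S" using sw ws by auto
  have "s \<otimes>\<^bsub>W\<^esub> x = wprod W ws' \<otimes>\<^bsub>W\<^esub> u"
    using ws(4) sw s wprod_carrier[OF ws'] Omega_c[OF ws(3)] S_inv[OF s(1)]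
    by (simp add: W.m_assoc[symmetric])
  then have "len (s \<otimes>\<^bsub>W\<^esub> x) \<le> k" using len_le[OF ws' ws(3)] ws sw by auto
  then show ?thesis using len_S_left[OF s(1) x] k s by auto
qed

end


locale procox = excox W Waff S Omega
  for W1 :: "('w,'c) monoid_scheme" and W :: "('v,'b) monoid_scheme" and proj :: "'w \<Rightarrow> 'v"
    and Waff S Omega :: "'v set" and n :: "'v \<Rightarrow> 'w" +
  assumes pro: "pro_p_coxeter W1 W proj Waff S Omega n"
begin

lemma W1_group: "group W1" using pro by (simp add: pro_p_coxeter_def)
sublocale W1: group W1 by (rule W1_group)

lemma proj_hom: "proj \<in> hom W1 W" using pro by (simp add: pro_p_coxeter_def)
lemma proj_surj: "proj ` carrier W1 = carrier W" using pro by (simp add: pro_p_coxeter_def)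
lemma n_carrier: "s \<in> S \<Longrightarrow> n s \<in> carrier W1" using pro by (simp add: pro_p_coxeter_def)
lemma proj_n: "s \<in> S \<Longrightarrow> proj (n s) = s" using pro by (simp add: pro_p_coxeter_def)

sublocale PH: group_hom W1 W proj
  using proj_hom by (simp add: group_hom_def group_hom_axioms_def W1_group W_group)

lemma proj_c: "x \<in> carrier W1 \<Longrightarrow> proj x \<in> carrier W"
  using proj_hom by (auto simp: hom_def)

abbreviation "L1 \<equiv> len1 proj W S Omega"

lemma len1_eq: "L1 x = len (proj x)" by (simp add: len1_def)

lemma len1_Omega_left: "x \<in> carrier W1 \<Longrightarrow> y \<in> carrier W1 \<Longrightarrow> proj x \<in> Omega \<Longrightarrow> L1 (x \<otimes>\<^bsub>W1\<^esub> y) = L1 y"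
  by (simp add: len1_eq len_Omega_left proj_c)

lemma len1_Omega_right: "x \<in> carrier W1 \<Longrightarrow> y \<in> carrier W1 \<Longrightarrow> proj y \<in> Omega \<Longrightarrow> L1 (x \<otimes>\<^bsub>W1\<^esub> y) = L1 x"
  by (simp add: len1_eq len_Omega_right proj_c)

lemma len1_zero_iff: "x \<in> carrier W1 \<Longrightarrow> (L1 x = 0) = (proj x \<in> Omega)"
  by (simp add: len1_eq len_zero_iff proj_c)

lemma len1_n: "s \<in> S \<Longrightarrow> L1 (n s) = 1"
  by (simp add: len1_eq proj_n len_S)

lemma proj_inv: "x \<in> carrier W1 \<Longrightarrow> proj (inv\<^bsub>W1\<^esub> x) = inv\<^bsub>W\<^esub> proj x"
  by (rule PH.hom_inv)

lemma Omega_inv: "u \<in> Omega \<Longrightarrow> inv\<^bsub>W\<^esub> u \<in> Omega"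
  using Omega_sub by (simp add: subgroup.m_inv_closed)

lemma Omega_one: "\<one>\<^bsub>W\<^esub> \<in> Omega"
  using Omega_sub by (simp add: subgroup.one_closed)

lemma Omega_mult: "u \<in> Omega \<Longrightarrow> v \<in> Omega \<Longrightarrow> u \<otimes>\<^bsub>W\<^esub> v \<in> Omega"
  using Omega_sub by (simp add: subgroup.m_closed)

lemma len1_zero_inv: "x \<in> carrier W1 \<Longrightarrow> L1 x = 0 \<Longrightarrow> L1 (inv\<^bsub>W1\<^esub> x) = 0"
  by (simp add: len1_zero_iff proj_inv Omega_inv)

lemma len1_zero_add:
  "x \<in> carrier W1 \<Longrightarrow> y \<in> carrier W1 \<Longrightarrow> L1 x = 0 \<Longrightarrow> L1 (x \<otimes>\<^bsub>W1\<^esub> y) = L1 x + L1 y"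
  using len1_Omega_left len1_zero_iff by auto

lemma len1_zero_add':
  "x \<in> carrier W1 \<Longrightarrow> y \<in> carrier W1 \<Longrightarrow> L1 y = 0 \<Longrightarrow> L1 (x \<otimes>\<^bsub>W1\<^esub> y) = L1 x + L1 y"
  using len1_Omega_right len1_zero_iff by auto

lemma kernel_len: "t \<in> kernel W1 W proj \<Longrightarrow> t \<in> carrier W1 \<and> proj t = \<one>\<^bsub>W\<^esub> \<and> L1 t = 0"
  by (simp add: kernel_def len1_zero_iff Omega_one)

lemma len1_n_left:
  "s \<in> S \<Longrightarrow> w \<in> carrier W1 \<Longrightarrow> L1 (n s \<otimes>\<^bsub>W1\<^esub> w) = Suc (L1 w) \<or> L1 w = Suc (L1 (n s \<otimes>\<^bsub>W1\<^esub> w))"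
  using len_S_left[of s "proj w"] by (simp add: len1_eq proj_n n_carrier proj_c)

lemma proj_nn: "s \<in> S \<Longrightarrow> proj (n s \<otimes>\<^bsub>W1\<^esub> n s) = \<one>\<^bsub>W\<^esub>"
  by (simp add: n_carrier proj_n S_inv)

lemma len1_nn: "s \<in> S \<Longrightarrow> L1 (n s \<otimes>\<^bsub>W1\<^esub> n s) = 0"
  using proj_nn[of s] by (simp add: len1_zero_iff n_carrier Omega_one del: PH.hom_mult)

lemma len1_dec:
  assumes w: "w \<in> carrier W1" and k: "L1 w = Suc k"
  shows "\<exists>s\<in>S. L1 (inv\<^bsub>W1\<^esub> (n s) \<otimes>\<^bsub>W1\<^esub> w) = k"
proof -
  obtain s where s: "s \<in> S" "len (s \<otimes>\<^bsub>W\<^esub> proj w) = k"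
    using len_dec[of "proj w" k] k w by (auto simp: len1_eq proj_c)
  have "proj (inv\<^bsub>W1\<^esub> (n s) \<otimes>\<^bsub>W1\<^esub> w) = s \<otimes>\<^bsub>W\<^esub> proj w"
    using s w by (simp add: n_carrier proj_inv proj_n S_inv_eq)
  then show ?thesis using s by (metis len1_eq)
qed

end


locale hk = procox W1 W proj Waff S Omega n + ralg R H
  for W1 :: "('w,'c) monoid_scheme" and W :: "('v,'b) monoid_scheme" and proj :: "'w \<Rightarrow> 'v"
    and Waff S Omega :: "'v set" and n :: "'v \<Rightarrow> 'w"
    and R :: "('r,'d) ring_scheme" and H :: "('r,'h) module" +
  fixes a :: "'v \<Rightarrow> 'r" and b :: "'v \<Rightarrow> 'w \<Rightarrow> 'r" and Tw :: "'w \<Rightarrow> 'h"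
  assumes params: "hecke_params R W1 W proj S n a b"
    and halg: "hecke_alg R W1 W proj S Omega n a b H Tw"
    and aunit: "\<forall>s\<in>S. a s \<in> Units R"
begin

lemma Tw_c: "w \<in> carrier W1 \<Longrightarrow> Tw w \<in> carrier H"
  using halg by (auto simp: hecke_alg_def)

lemma T_mult: "w \<in> carrier W1 \<Longrightarrow> w' \<in> carrier W1 \<Longrightarrow> L1 (w \<otimes>\<^bsub>W1\<^esub> w') = L1 w + L1 w' \<Longrightarrow>
   Tw (w \<otimes>\<^bsub>W1\<^esub> w') = Tw w \<otimes>\<^bsub>H\<^esub> Tw w'"
  using halg by (auto simp: hecke_alg_def)

lemma basis: "h \<in> carrier H \<Longrightarrow> \<exists>!f. f \<in> fin_coeffs R (carrier W1) \<and>
        h = finsum H (\<lambda>w. f w \<odot>\<^bsub>H\<^esub> Tw w) {w. f w \<noteq> \<zero>\<^bsub>R\<^esub>}"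
  using halg by (auto simp: hecke_alg_def)

definition Bs where "Bs s = finsum H (\<lambda>t. b s t \<odot>\<^bsub>H\<^esub> Tw t) {t. b s t \<noteq> \<zero>\<^bsub>R\<^esub>}"

lemma quad: "s \<in> S \<Longrightarrow> Tw (n s) \<otimes>\<^bsub>H\<^esub> Tw (n s) =
        a s \<odot>\<^bsub>H\<^esub> Tw (n s \<otimes>\<^bsub>W1\<^esub> n s) \<oplus>\<^bsub>H\<^esub> Tw (n s) \<otimes>\<^bsub>H\<^esub> Bs s"
  using halg by (auto simp: hecke_alg_def Bs_def)

lemma a_c: "s \<in> S \<Longrightarrow> a s \<in> carrier R" using params by (auto simp: hecke_params_def)
lemma b_fc: "s \<in> S \<Longrightarrow> b s \<in> fin_coeffs R (kernel W1 W proj)" using params by (auto simp: hecke_params_def)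

lemma b_props: assumes s: "s \<in> S"
  shows "finite {t. b s t \<noteq> \<zero>\<^bsub>R\<^esub>}" "\<And>t. b s t \<in> carrier R"
    "\<And>t. b s t \<noteq> \<zero>\<^bsub>R\<^esub> \<Longrightarrow> t \<in> carrier W1 \<and> proj t = \<one>\<^bsub>W\<^esub> \<and> L1 t = 0"
  using fin_coeffsD[OF b_fc[OF s]] kernel_len by blast+

lemma Bs_c: "s \<in> S \<Longrightarrow> Bs s \<in> carrier H"
  unfolding Bs_def using b_props by (auto intro!: M.finsum_closed Tw_c)

lemma len1_one: "L1 \<one>\<^bsub>W1\<^esub> = 0"
  by (simp add: len1_zero_iff Omega_one)

lemma T_one: "Tw \<one>\<^bsub>W1\<^esub> = \<one>\<^bsub>H\<^esub>"
proof -
  have lt: "Tw \<one>\<^bsub>W1\<^esub> \<otimes>\<^bsub>H\<^esub> Tw w = Tw w" if w: "w \<in> carrier W1" for w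
    using T_mult[of "\<one>\<^bsub>W1\<^esub>" w] w len1_one by simp
  obtain f where f: "f \<in> fin_coeffs R (carrier W1)"
     "\<one>\<^bsub>H\<^esub> = finsum H (\<lambda>w. f w \<odot>\<^bsub>H\<^esub> Tw w) {w. f w \<noteq> \<zero>\<^bsub>R\<^esub>}"
    using basis[of "\<one>\<^bsub>H\<^esub>"] by auto
  have fp: "finite {w. f w \<noteq> \<zero>\<^bsub>R\<^esub>}" "{w. f w \<noteq> \<zero>\<^bsub>R\<^esub>} \<subseteq> carrier W1" "\<And>w. f w \<in> carrier R"
    using fin_coeffsD[OF f(1)] by auto
  have T1c: "Tw \<one>\<^bsub>W1\<^esub> \<in> carrier H" by (simp add: Tw_c)
  have "Tw \<one>\<^bsub>W1\<^esub> = Tw \<one>\<^bsub>W1\<^esub> \<otimes>\<^bsub>H\<^esub> \<one>\<^bsub>H\<^esub>" using T1c by simp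
  also have "\<dots> = finsum H (\<lambda>w. Tw \<one>\<^bsub>W1\<^esub> \<otimes>\<^bsub>H\<^esub> (f w \<odot>\<^bsub>H\<^esub> Tw w)) {w. f w \<noteq> \<zero>\<^bsub>R\<^esub>}"
    apply (subst f(2))
    by (rule H.finsum_rdistr) (use fp T1c Tw_c in auto)
  also have "\<dots> = finsum H (\<lambda>w. f w \<odot>\<^bsub>H\<^esub> Tw w) {w. f w \<noteq> \<zero>\<^bsub>R\<^esub>}"
    by (intro M.finsum_cong') (use fp T1c Tw_c lt in \<open>auto simp: smult_mult_r\<close>)
  also have "\<dots> = \<one>\<^bsub>H\<^esub>" using f(2) by simp
  finally show ?thesis .
qed

lemma T0_unit:
  assumes w: "w \<in> carrier W1" and l: "L1 w = 0"
  shows "Tw w \<in> Units H" "inv\<^bsub>H\<^esub> (Tw w) = Tw (inv\<^bsub>W1\<^esub> w)"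
proof -
  have wi: "inv\<^bsub>W1\<^esub> w \<in> carrier W1" "L1 (inv\<^bsub>W1\<^esub> w) = 0" using w l len1_zero_inv by auto
  have a1: "Tw w \<otimes>\<^bsub>H\<^esub> Tw (inv\<^bsub>W1\<^esub> w) = \<one>\<^bsub>H\<^esub>"
    using T_mult[of w "inv\<^bsub>W1\<^esub> w"] w wi l len1_one T_one by simp
  have a2: "Tw (inv\<^bsub>W1\<^esub> w) \<otimes>\<^bsub>H\<^esub> Tw w = \<one>\<^bsub>H\<^esub>"
    using T_mult[of "inv\<^bsub>W1\<^esub> w" w] w wi l len1_one T_one by simp
  show "Tw w \<in> Units H" unfolding Units_def using a1 a2 w wi Tw_c by blast
  then show "inv\<^bsub>H\<^esub> (Tw w) = Tw (inv\<^bsub>W1\<^esub> w)"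
    using a2 by (metis H.inv_unique' H.Units_closed Tw_c wi(1) H.inv_char a1)
qed


lemma quad_minus:
  assumes s: "s \<in> S"
  shows "Tw (n s) \<otimes>\<^bsub>H\<^esub> Tw (n s) \<ominus>\<^bsub>H\<^esub> Tw (n s) \<otimes>\<^bsub>H\<^esub> Bs s = a s \<odot>\<^bsub>H\<^esub> Tw (n s \<otimes>\<^bsub>W1\<^esub> n s)"
proof -
  have c: "Tw (n s) \<in> carrier H" "Bs s \<in> carrier H" "a s \<odot>\<^bsub>H\<^esub> Tw (n s \<otimes>\<^bsub>W1\<^esub> n s) \<in> carrier H"
    using s n_carrier Tw_c Bs_c a_c by auto
  have nb: "Tw (n s) \<otimes>\<^bsub>H\<^esub> Bs s \<in> carrier H" using c by simp
  have "Tw (n s) \<otimes>\<^bsub>H\<^esub> Tw (n s) \<ominus>\<^bsub>H\<^esub> Tw (n s) \<otimes>\<^bsub>H\<^esub> Bs s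
      = (a s \<odot>\<^bsub>H\<^esub> Tw (n s \<otimes>\<^bsub>W1\<^esub> n s) \<oplus>\<^bsub>H\<^esub> Tw (n s) \<otimes>\<^bsub>H\<^esub> Bs s) \<oplus>\<^bsub>H\<^esub> \<ominus>\<^bsub>H\<^esub> (Tw (n s) \<otimes>\<^bsub>H\<^esub> Bs s)"
    by (simp add: quad[OF s] a_minus_def)
  also have "\<dots> = a s \<odot>\<^bsub>H\<^esub> Tw (n s \<otimes>\<^bsub>W1\<^esub> n s) \<oplus>\<^bsub>H\<^esub> (Tw (n s) \<otimes>\<^bsub>H\<^esub> Bs s \<oplus>\<^bsub>H\<^esub> \<ominus>\<^bsub>H\<^esub> (Tw (n s) \<otimes>\<^bsub>H\<^esub> Bs s))"
    using c nb by (intro M.a_assoc) auto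
  also have "\<dots> = a s \<odot>\<^bsub>H\<^esub> Tw (n s \<otimes>\<^bsub>W1\<^esub> n s)" using c nb by (simp add: M.r_neg)
  finally show ?thesis .
qed

lemma n_comm_B:
  assumes s: "s \<in> S"
  shows "finsum H (\<lambda>t. b s t \<odot>\<^bsub>H\<^esub> Tw (n s \<otimes>\<^bsub>W1\<^esub> t \<otimes>\<^bsub>W1\<^esub> inv\<^bsub>W1\<^esub> (n s))) {t. b s t \<noteq> \<zero>\<^bsub>R\<^esub>} \<otimes>\<^bsub>H\<^esub> Tw (n s)
       = Tw (n s) \<otimes>\<^bsub>H\<^esub> Bs s"
proof -
  let ?A = "{t. b s t \<noteq> \<zero>\<^bsub>R\<^esub>}"
  have nc: "n s \<in> carrier W1" using n_carrier s by auto
  have tc: "\<And>t. t \<in> ?A \<Longrightarrow> t \<in> carrier W1 \<and> proj t = \<one>\<^bsub>W\<^esub> \<and> L1 t = 0" using b_props(3)[OF s] by blast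
  have ct: "\<And>t. t \<in> ?A \<Longrightarrow> n s \<otimes>\<^bsub>W1\<^esub> t \<otimes>\<^bsub>W1\<^esub> inv\<^bsub>W1\<^esub> (n s) \<in> carrier W1" using tc nc by auto
  have e1: "Tw (n s \<otimes>\<^bsub>W1\<^esub> t \<otimes>\<^bsub>W1\<^esub> inv\<^bsub>W1\<^esub> (n s)) \<otimes>\<^bsub>H\<^esub> Tw (n s) = Tw (n s) \<otimes>\<^bsub>H\<^esub> Tw t"
    if t: "t \<in> ?A" for t
  proof -
    let ?c = "n s \<otimes>\<^bsub>W1\<^esub> t \<otimes>\<^bsub>W1\<^esub> inv\<^bsub>W1\<^esub> (n s)"
    have tt: "t \<in> carrier W1" "proj t = \<one>\<^bsub>W\<^esub>" "L1 t = 0" using tc[OF t] by auto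
    have sc: "s \<in> carrier W" using s S_carrier by auto
    have pc: "proj ?c = \<one>\<^bsub>W\<^esub>" using tt nc s sc by (simp add: proj_inv proj_n S_inv S_inv_eq)
    have lc: "L1 ?c = 0" using pc ct[OF t] by (simp add: len1_zero_iff Omega_one)
    have "?c \<otimes>\<^bsub>W1\<^esub> n s = n s \<otimes>\<^bsub>W1\<^esub> t" using nc tt by (simp add: W1.m_assoc)
    then have "Tw (?c \<otimes>\<^bsub>W1\<^esub> n s) = Tw (n s \<otimes>\<^bsub>W1\<^esub> t)" by simp
    moreover have "Tw (?c \<otimes>\<^bsub>W1\<^esub> n s) = Tw ?c \<otimes>\<^bsub>H\<^esub> Tw (n s)"
      using T_mult[of ?c "n s"] len1_zero_add[of ?c "n s"] ct[OF t] nc lc by simp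
    moreover have "Tw (n s \<otimes>\<^bsub>W1\<^esub> t) = Tw (n s) \<otimes>\<^bsub>H\<^esub> Tw t"
      using T_mult[of "n s" t] len1_zero_add'[of "n s" t] tt nc by simp
    ultimately show ?thesis by simp
  qed
  have "finsum H (\<lambda>t. b s t \<odot>\<^bsub>H\<^esub> Tw (n s \<otimes>\<^bsub>W1\<^esub> t \<otimes>\<^bsub>W1\<^esub> inv\<^bsub>W1\<^esub> (n s))) ?A \<otimes>\<^bsub>H\<^esub> Tw (n s)
     = finsum H (\<lambda>t. (b s t \<odot>\<^bsub>H\<^esub> Tw (n s \<otimes>\<^bsub>W1\<^esub> t \<otimes>\<^bsub>W1\<^esub> inv\<^bsub>W1\<^esub> (n s))) \<otimes>\<^bsub>H\<^esub> Tw (n s)) ?A"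
    by (rule H.finsum_ldistr) (use b_props[OF s] ct Tw_c nc in auto)
  also have "\<dots> = finsum H (\<lambda>t. Tw (n s) \<otimes>\<^bsub>H\<^esub> (b s t \<odot>\<^bsub>H\<^esub> Tw t)) ?A"
    by (intro M.finsum_cong') (use b_props[OF s] ct Tw_c nc tc e1 in \<open>auto simp: smult_mult_l smult_mult_r\<close>)
  also have "\<dots> = Tw (n s) \<otimes>\<^bsub>H\<^esub> Bs s"
    unfolding Bs_def by (rule H.finsum_rdistr[symmetric]) (use b_props[OF s] Tw_c nc tc in auto)
  finally show ?thesis .
qed

lemma n_unit:
  assumes s: "s \<in> S"
  shows "Tw (n s) \<in> Units H"
proof -
  define N where "N = Tw (n s)"
  define N2 where "N2 = Tw (n s \<otimes>\<^bsub>W1\<^esub> n s)"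
  define N2i where "N2i = Tw (inv\<^bsub>W1\<^esub> (n s \<otimes>\<^bsub>W1\<^esub> n s))"
  define B where "B = Bs s"
  define B' where "B' = finsum H (\<lambda>t. b s t \<odot>\<^bsub>H\<^esub> Tw (n s \<otimes>\<^bsub>W1\<^esub> t \<otimes>\<^bsub>W1\<^esub> inv\<^bsub>W1\<^esub> (n s))) {t. b s t \<noteq> \<zero>\<^bsub>R\<^esub>}"
  define ai where "ai = inv\<^bsub>R\<^esub> (a s)"
  have nc: "n s \<in> carrier W1" using n_carrier s by auto
  have au: "a s \<in> Units R" using aunit s by auto
  have ac: "a s \<in> carrier R" "ai \<in> carrier R" "ai \<otimes>\<^bsub>R\<^esub> a s = \<one>\<^bsub>R\<^esub>" using au ai_def by auto
  have nnc: "n s \<otimes>\<^bsub>W1\<^esub> n s \<in> carrier W1" using nc by simp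
  have u2: "Tw (n s \<otimes>\<^bsub>W1\<^esub> n s) \<in> Units H" "inv\<^bsub>H\<^esub> (Tw (n s \<otimes>\<^bsub>W1\<^esub> n s)) = N2i"
    using T0_unit[OF nnc len1_nn[OF s]] N2i_def by auto
  have N2: "N2 \<otimes>\<^bsub>H\<^esub> N2i = \<one>\<^bsub>H\<^esub>" "N2i \<otimes>\<^bsub>H\<^esub> N2 = \<one>\<^bsub>H\<^esub>" using u2 N2_def by auto
  have cs: "N \<in> carrier H" "N2 \<in> carrier H" "N2i \<in> carrier H" "B \<in> carrier H"
    using N_def N2_def N2i_def B_def Tw_c nc nnc Bs_c s u2 by auto
  have B'c: "B' \<in> carrier H" unfolding B'_def using b_props[OF s] nc
    by (intro M.finsum_closed) (auto intro!: Tw_c)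
  have q: "N \<otimes>\<^bsub>H\<^esub> N \<ominus>\<^bsub>H\<^esub> N \<otimes>\<^bsub>H\<^esub> B = a s \<odot>\<^bsub>H\<^esub> N2"
    using quad_minus[OF s] N_def B_def N2_def by simp
  have cb: "B' \<otimes>\<^bsub>H\<^esub> N = N \<otimes>\<^bsub>H\<^esub> B" using n_comm_B[OF s] B'_def N_def B_def by simp
  define Xr where "Xr = ai \<odot>\<^bsub>H\<^esub> ((N \<ominus>\<^bsub>H\<^esub> B) \<otimes>\<^bsub>H\<^esub> N2i)"
  define Yl where "Yl = ai \<odot>\<^bsub>H\<^esub> (N2i \<otimes>\<^bsub>H\<^esub> (N \<ominus>\<^bsub>H\<^esub> B'))"
  have Xrc: "Xr \<in> carrier H" "Yl \<in> carrier H" using Xr_def Yl_def cs ac B'c by auto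
  have "N \<otimes>\<^bsub>H\<^esub> Xr = ai \<odot>\<^bsub>H\<^esub> ((N \<otimes>\<^bsub>H\<^esub> N \<ominus>\<^bsub>H\<^esub> N \<otimes>\<^bsub>H\<^esub> B) \<otimes>\<^bsub>H\<^esub> N2i)"
    using cs ac unfolding Xr_def by (simp add: smult_mult_r H.ring_simprules)
  also have "\<dots> = ai \<odot>\<^bsub>H\<^esub> ((a s \<odot>\<^bsub>H\<^esub> N2) \<otimes>\<^bsub>H\<^esub> N2i)" using q by simp
  also have "\<dots> = \<one>\<^bsub>H\<^esub>" using cs ac N2 by (simp add: smult_mult_l M.smult_assoc1[symmetric])
  finally have NXr: "N \<otimes>\<^bsub>H\<^esub> Xr = \<one>\<^bsub>H\<^esub>" .
  have "Yl \<otimes>\<^bsub>H\<^esub> N = ai \<odot>\<^bsub>H\<^esub> (N2i \<otimes>\<^bsub>H\<^esub> (N \<otimes>\<^bsub>H\<^esub> N \<ominus>\<^bsub>H\<^esub> B' \<otimes>\<^bsub>H\<^esub> N))"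
    using cs ac B'c unfolding Yl_def by (simp add: smult_mult_l H.ring_simprules)
  also have "\<dots> = ai \<odot>\<^bsub>H\<^esub> (N2i \<otimes>\<^bsub>H\<^esub> (a s \<odot>\<^bsub>H\<^esub> N2))" using q cb by simp
  also have "\<dots> = \<one>\<^bsub>H\<^esub>" using cs ac N2 by (simp add: smult_mult_r M.smult_assoc1[symmetric])
  finally have YlN: "Yl \<otimes>\<^bsub>H\<^esub> N = \<one>\<^bsub>H\<^esub>" .
  have "Yl = Yl \<otimes>\<^bsub>H\<^esub> (N \<otimes>\<^bsub>H\<^esub> Xr)" using NXr Xrc by simp
  also have "\<dots> = Xr" using YlN Xrc cs by (simp add: H.m_assoc[symmetric])
  finally have "Xr \<otimes>\<^bsub>H\<^esub> N = \<one>\<^bsub>H\<^esub>" using YlN by simp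
  then show ?thesis unfolding Units_def N_def[symmetric] using NXr Xrc cs by blast
qed

lemma T_unit: "w \<in> carrier W1 \<Longrightarrow> Tw w \<in> Units H"
proof (induct "L1 w" arbitrary: w)
  case 0 then show ?case using T0_unit by simp
next
  case (Suc k)
  obtain s where s: "s \<in> S" "L1 (inv\<^bsub>W1\<^esub> (n s) \<otimes>\<^bsub>W1\<^esub> w) = k"
    using len1_dec[OF Suc(3) Suc(2)[symmetric]] by blast
  let ?w = "inv\<^bsub>W1\<^esub> (n s) \<otimes>\<^bsub>W1\<^esub> w"
  have nc: "n s \<in> carrier W1" using n_carrier s by auto
  have wc: "?w \<in> carrier W1" using nc Suc by simp
  have eq: "w = n s \<otimes>\<^bsub>W1\<^esub> ?w" using nc Suc by (simp add: W1.m_assoc[symmetric])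
  have "Tw w = Tw (n s) \<otimes>\<^bsub>H\<^esub> Tw ?w"
    using T_mult[of "n s" ?w] eq nc wc s Suc(2) len1_n by simp
  then show ?case using Suc(1)[OF s(2)[symmetric] wc] n_unit[OF s(1)] by simp
qed

end


lemma equivclp_map:
  assumes "equivclp r x y" "\<And>a b. r a b \<Longrightarrow> r (f a) (f b)"
  shows "equivclp r (f x) (f y)"
proof -
  have "(symclp r)\<^sup>*\<^sup>* x y" using assms(1) by (simp add: equivclp_def)
  then show ?thesis
  proof (induct rule: rtranclp_induct)
    case base then show ?case by simp
  next
    case (step y z)
    then have "symclp r (f y) (f z)" using assms(2) by (auto simp: symclp_def)
    then have "equivclp r (f y) (f z)" by (simp add: equivclp_def)
    then show ?case using step(3) by (meson equivclp_trans)
  qed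
qed

locale pres = W1: group W1 for W1 :: "('w,'c) monoid_scheme" and len :: "'w \<Rightarrow> nat"
begin

abbreviation "PR \<equiv> pres_rel W1 len"
abbreviation "G \<equiv> pres_group W1 len"
abbreviation "CL \<equiv> lists (carrier W1 \<times> (UNIV :: bool set))"
definition "cls ws = Collect (PR ws)"

lemma PR_refl: "PR a a" by (simp add: pres_rel_def)
lemma PR_sym: "PR a b \<Longrightarrow> PR b a" by (simp add: pres_rel_def equivclp_sym)
lemma PR_trans: "PR a b \<Longrightarrow> PR b c \<Longrightarrow> PR a c" unfolding pres_rel_def by (rule equivclp_trans)
lemma PR_step: "pres_step W1 len a b \<Longrightarrow> PR a b" by (simp add: pres_rel_def r_into_equivclp)

lemma cls_eq: "(cls a = cls b) = PR a b"
proof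
  assume "cls a = cls b"
  then have "b \<in> cls a" using PR_refl unfolding cls_def by auto
  then show "PR a b" unfolding cls_def by simp
next
  assume ab: "PR a b"
  show "cls a = cls b" unfolding cls_def
    using ab PR_sym PR_trans by blast
qed

lemma step_ctx: "pres_step W1 len a b \<Longrightarrow> pres_step W1 len (p @ a @ q) (p @ b @ q)"
proof (induct rule: pres_step.induct)
  case (cancel x u v e)
  then show ?case using pres_step.cancel[of x W1 len "p @ u" "v @ q" e] by simp
next
  case (lenrel w w' u v)
  then show ?case using pres_step.lenrel[of w W1 w' len "p @ u" "v @ q"] by simp
qed

lemma PR_ctx: "PR a b \<Longrightarrow> PR (p @ a @ q) (p @ b @ q)"
  unfolding pres_rel_def by (rule equivclp_map[where f = "\<lambda>x. p @ x @ q"]) (auto intro: step_ctx)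

lemma PR_append: "PR a a' \<Longrightarrow> PR b b' \<Longrightarrow> PR (a @ b) (a' @ b')"
  using PR_ctx[of a a' "[]" b] PR_ctx[of b b' a' "[]"] by (auto intro: PR_trans)

lemma step_CL: "pres_step W1 len a b \<Longrightarrow> (a \<in> CL) = (b \<in> CL)"
  by (induct rule: pres_step.induct) auto

lemma PR_CL: "PR a b \<Longrightarrow> (a \<in> CL) = (b \<in> CL)"
proof -
  assume "PR a b"
  then show ?thesis
    using equivclp_invariant[of "pres_step W1 len" a b "\<lambda>a. a \<in> CL"] step_CL unfolding pres_rel_def by blast
qed

lemma G_carrier: "carrier G = cls ` CL"
  unfolding pres_group_def cls_def by auto

lemma G_one: "\<one>\<^bsub>G\<^esub> = cls []"
  unfolding pres_group_def cls_def by simp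

lemma G_mult: "cls a \<otimes>\<^bsub>G\<^esub> cls b = cls (a @ b)"
proof -
  have "{z. \<exists>x\<in>cls a. \<exists>y\<in>cls b. PR (x @ y) z} = cls (a @ b)"
  proof (rule equalityI; rule subsetI)
    fix z assume "z \<in> {z. \<exists>x\<in>cls a. \<exists>y\<in>cls b. PR (x @ y) z}"
    then obtain x y where "PR a x" "PR b y" "PR (x @ y) z" unfolding cls_def by auto
    then show "z \<in> cls (a @ b)" unfolding cls_def using PR_append PR_trans by blast
  next
    fix z assume "z \<in> cls (a @ b)"
    then show "z \<in> {z. \<exists>x\<in>cls a. \<exists>y\<in>cls b. PR (x @ y) z}"
      unfolding cls_def using PR_refl by auto
  qed
  then show ?thesis unfolding pres_group_def by (simp add: cls_def)
qed

definition "invw ws = rev (map (\<lambda>(x,e). (x, \<not> e)) ws)"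

lemma invw_CL: "ws \<in> CL \<Longrightarrow> invw ws \<in> CL" by (auto simp: invw_def)
lemma invw_invw: "invw (invw ws) = ws" by (induct ws) (auto simp: invw_def)

lemma PR_invw: "ws \<in> CL \<Longrightarrow> PR (ws @ invw ws) []"
proof (induct ws)
  case Nil then show ?case by (simp add: PR_refl invw_def)
next
  case (Cons p ws)
  obtain x e where p: "p = (x, e)" by (cases p)
  have x: "x \<in> carrier W1" using Cons p by auto
  have "PR ([p] @ (ws @ invw ws) @ [(x, \<not> e)]) ([p] @ [] @ [(x, \<not> e)])"
    using Cons by (intro PR_ctx) auto
  moreover have "PR ([p] @ [] @ [(x, \<not> e)]) []"
    using PR_step[OF pres_step.cancel[OF x, of len "[]" "[]" e]] p by (simp add: PR_sym)
  ultimately show ?case using p by (auto simp: invw_def intro: PR_trans)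
qed

lemma PR_invw': "ws \<in> CL \<Longrightarrow> PR (invw ws @ ws) []"
  using PR_invw[OF invw_CL] invw_invw by metis

lemma G_group: "group G"
proof (rule groupI)
  show "\<one>\<^bsub>G\<^esub> \<in> carrier G" by (simp add: G_carrier G_one)
  show "x \<otimes>\<^bsub>G\<^esub> y \<in> carrier G" if hx: "x \<in> carrier G" and hy: "y \<in> carrier G" for x y
  proof -
    obtain p where "p \<in> CL" "x = cls p" using hx G_carrier by auto
    moreover obtain q where "q \<in> CL" "y = cls q" using hy G_carrier by auto
    ultimately have "x \<otimes>\<^bsub>G\<^esub> y = cls (p @ q)" "p @ q \<in> CL" by (auto simp: G_mult)
    then show ?thesis unfolding G_carrier by blast
  qed
  show "x \<otimes>\<^bsub>G\<^esub> y \<otimes>\<^bsub>G\<^esub> z = x \<otimes>\<^bsub>G\<^esub> (y \<otimes>\<^bsub>G\<^esub> z)" if "x \<in> carrier G" "y \<in> carrier G" "z \<in> carrier G" for x y z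
    using that by (auto simp: G_carrier G_mult)
  show "\<one>\<^bsub>G\<^esub> \<otimes>\<^bsub>G\<^esub> x = x" if "x \<in> carrier G" for x
    using that by (auto simp: G_carrier G_mult G_one)
  show "\<exists>y\<in>carrier G. y \<otimes>\<^bsub>G\<^esub> x = \<one>\<^bsub>G\<^esub>" if hx: "x \<in> carrier G" for x
  proof -
    obtain ws where ws: "ws \<in> CL" "x = cls ws" using hx G_carrier by auto
    then have "cls (invw ws) \<otimes>\<^bsub>G\<^esub> x = \<one>\<^bsub>G\<^esub>"
      using PR_invw'[OF ws(1)] by (simp add: G_mult G_one cls_eq)
    moreover have "cls (invw ws) \<in> carrier G" using invw_CL[OF ws(1)] G_carrier by auto
    ultimately show ?thesis by blast
  qed
qed

sublocale G: group G by (rule G_group)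

lemma pres_gen_cls: "pres_gen W1 len w = cls [(w, True)]"
  by (simp add: pres_gen_def cls_def)

lemma gen_carrier: "w \<in> carrier W1 \<Longrightarrow> pres_gen W1 len w \<in> carrier G"
  by (auto simp: pres_gen_cls G_carrier)

lemma gen_mult: "w \<in> carrier W1 \<Longrightarrow> w' \<in> carrier W1 \<Longrightarrow> len (w \<otimes>\<^bsub>W1\<^esub> w') = len w + len w' \<Longrightarrow>
    pres_gen W1 len (w \<otimes>\<^bsub>W1\<^esub> w') = pres_gen W1 len w \<otimes>\<^bsub>G\<^esub> pres_gen W1 len w'"
  using PR_step[OF pres_step.lenrel[of w W1 w' len "[]" "[]"]]
  by (simp add: pres_gen_cls G_mult cls_eq)

lemma gen_inv: "w \<in> carrier W1 \<Longrightarrow> inv\<^bsub>G\<^esub> (pres_gen W1 len w) = cls [(w, False)]"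
proof -
  assume w: "w \<in> carrier W1"
  have "pres_gen W1 len w \<otimes>\<^bsub>G\<^esub> cls [(w, False)] = \<one>\<^bsub>G\<^esub>"
    using PR_step[OF pres_step.cancel[OF w, of len "[]" "[]" True]]
    by (simp add: pres_gen_cls G_mult G_one cls_eq PR_sym)
  moreover have "cls [(w, False)] \<otimes>\<^bsub>G\<^esub> pres_gen W1 len w = \<one>\<^bsub>G\<^esub>"
    using PR_step[OF pres_step.cancel[OF w, of len "[]" "[]" False]]
    by (simp add: pres_gen_cls G_mult G_one cls_eq PR_sym)
  moreover have "cls [(w, False)] \<in> carrier G" using w by (auto simp: G_carrier)
  ultimately show ?thesis using gen_carrier[OF w] G.inv_equality by blast
qed

lemma cls_Cons_True: "cls ((x, True) # ws) = pres_gen W1 len x \<otimes>\<^bsub>G\<^esub> cls ws"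
  by (simp add: pres_gen_cls G_mult)

lemma cls_Cons_False: "x \<in> carrier W1 \<Longrightarrow> cls ((x, False) # ws) = inv\<^bsub>G\<^esub> (pres_gen W1 len x) \<otimes>\<^bsub>G\<^esub> cls ws"
  by (simp add: gen_inv G_mult)

end


locale presT = pres W1 len + H: monoid H
  for W1 :: "('w,'c) monoid_scheme" and len and H :: "('h,'e) monoid_scheme" +
  fixes T :: "'w \<Rightarrow> 'h"
  assumes T_unit: "w \<in> carrier W1 \<Longrightarrow> T w \<in> Units H"
    and T_len: "w \<in> carrier W1 \<Longrightarrow> w' \<in> carrier W1 \<Longrightarrow> len (w \<otimes>\<^bsub>W1\<^esub> w') = len w + len w' \<Longrightarrow>
        T (w \<otimes>\<^bsub>W1\<^esub> w') = T w \<otimes>\<^bsub>H\<^esub> T w'"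
begin

definition "lt p = (if snd p then T (fst p) else inv\<^bsub>H\<^esub> (T (fst p)))"
definition "ev ws = foldr (\<lambda>p acc. lt p \<otimes>\<^bsub>H\<^esub> acc) ws \<one>\<^bsub>H\<^esub>"

lemma ev_Nil [simp]: "ev [] = \<one>\<^bsub>H\<^esub>" by (simp add: ev_def)
lemma ev_Cons [simp]: "ev (p # ws) = lt p \<otimes>\<^bsub>H\<^esub> ev ws" by (simp add: ev_def)

lemma lt_c: "fst p \<in> carrier W1 \<Longrightarrow> lt p \<in> carrier H"
  using T_unit by (auto simp: lt_def)

lemma ev_c: "ws \<in> CL \<Longrightarrow> ev ws \<in> carrier H"
  by (induct ws) (auto simp: lt_c)

lemma ev_c': "\<forall>x\<in>set ws. x \<in> carrier W1 \<times> UNIV \<Longrightarrow> ev ws \<in> carrier H"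
  using ev_c by (simp add: in_lists_conv_set)

lemma ev_append: "a \<in> CL \<Longrightarrow> b \<in> CL \<Longrightarrow> ev (a @ b) = ev a \<otimes>\<^bsub>H\<^esub> ev b"
  by (induct a) (auto simp: lt_c ev_c' H.m_assoc)

lemma ev_step: "pres_step W1 len a b \<Longrightarrow> a \<in> CL \<Longrightarrow> ev a = ev b"
proof (induct rule: pres_step.induct)
  case (cancel x u v e)
  have u: "u \<in> CL" and v: "v \<in> CL" using cancel by auto
  have "ev [(x, e), (x, \<not> e)] = \<one>\<^bsub>H\<^esub>" using T_unit[OF cancel(1)] H.Units_closed[OF T_unit[OF cancel(1)]] by (cases e) (auto simp: lt_def)
  moreover have "ev (u @ [(x, e), (x, \<not> e)] @ v) = ev u \<otimes>\<^bsub>H\<^esub> (ev [(x, e), (x, \<not> e)] \<otimes>\<^bsub>H\<^esub> ev v)"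
    using u v cancel(1) lt_c[of "(x,e)"] lt_c[of "(x, \<not> e)"] ev_c[OF v] by (simp add: ev_append H.m_assoc)
  ultimately show ?case using u v by (simp add: ev_append ev_c)
next
  case (lenrel w w' u v)
  have u: "u \<in> CL" and v: "v \<in> CL" using lenrel by auto
  have "ev [(w \<otimes>\<^bsub>W1\<^esub> w', True)] = ev [(w, True), (w', True)]"
    using T_len[OF lenrel(1-3)] H.Units_closed[OF T_unit[OF lenrel(1)]] H.Units_closed[OF T_unit[OF lenrel(2)]]
    by (simp add: lt_def H.m_assoc)
  moreover have "ev (u @ [(w \<otimes>\<^bsub>W1\<^esub> w', True)] @ v) = ev u \<otimes>\<^bsub>H\<^esub> (ev [(w \<otimes>\<^bsub>W1\<^esub> w', True)] \<otimes>\<^bsub>H\<^esub> ev v)"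
    using u v lenrel(1,2) lt_c[of "(w \<otimes>\<^bsub>W1\<^esub> w', True)"] ev_c[OF v] by (simp add: ev_append)
  moreover have "ev (u @ [(w, True), (w', True)] @ v) = ev u \<otimes>\<^bsub>H\<^esub> (ev [(w, True), (w', True)] \<otimes>\<^bsub>H\<^esub> ev v)"
    using u v lenrel(1,2) lt_c[of "(w, True)"] lt_c[of "(w', True)"] ev_c[OF v] by (simp add: ev_append H.m_assoc)
  ultimately show ?case by simp
qed

lemma ev_PR: assumes "PR a b" "a \<in> CL" shows "ev a = ev b"
proof -
  let ?f = "\<lambda>a. if a \<in> CL then Some (ev a) else None"
  have st: "?f x = ?f y" if "pres_step W1 len x y" for x y
  proof -
    have "(x \<in> CL) = (y \<in> CL)" using step_CL[OF that] .
    moreover have "x \<in> CL \<Longrightarrow> ev x = ev y" using ev_step[OF that] .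
    ultimately show ?thesis by simp
  qed
  have "?f a = ?f b"
    using equivclp_invariant[of "pres_step W1 len" a b ?f, OF _ st] assms(1) unfolding pres_rel_def by blast
  then show ?thesis using assms(2) PR_CL[OF assms(1)] by simp
qed

definition "psi P = ev (SOME ws. ws \<in> CL \<and> P = cls ws)"

lemma psi_cls: "ws \<in> CL \<Longrightarrow> psi (cls ws) = ev ws"
proof -
  assume ws: "ws \<in> CL"
  define v where "v = (SOME v. v \<in> CL \<and> cls ws = cls v)"
  have "\<exists>v. v \<in> CL \<and> cls ws = cls v" using ws by blast
  then have v: "v \<in> CL \<and> cls ws = cls v" unfolding v_def by (rule someI_ex)
  then have "PR ws v" using cls_eq by blast
  then have "ev ws = ev v" using ev_PR ws by blast
  then show ?thesis unfolding psi_def v_def[symmetric] by simp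
qed

lemma psi_closed: "P \<in> carrier G \<Longrightarrow> psi P \<in> carrier H"
proof -
  assume "P \<in> carrier G"
  then obtain p where "p \<in> CL" "P = cls p" by (auto simp: G_carrier)
  then show ?thesis by (simp add: psi_cls ev_c)
qed

lemma psi_mult: "P \<in> carrier G \<Longrightarrow> Q \<in> carrier G \<Longrightarrow> psi (P \<otimes>\<^bsub>G\<^esub> Q) = psi P \<otimes>\<^bsub>H\<^esub> psi Q"
proof -
  assume "P \<in> carrier G" "Q \<in> carrier G"
  then obtain p q where "p \<in> CL" "P = cls p" "q \<in> CL" "Q = cls q" by (auto simp: G_carrier)
  moreover then have "p @ q \<in> CL" by simp
  ultimately show ?thesis by (simp add: psi_cls ev_append G_mult del: append_in_lists_conv)
qed

lemma psi_one: "psi \<one>\<^bsub>G\<^esub> = \<one>\<^bsub>H\<^esub>"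
  by (simp add: G_one psi_cls)

lemma psi_gen: "w \<in> carrier W1 \<Longrightarrow> psi (pres_gen W1 len w) = T w"
  using T_unit H.Units_closed by (auto simp: pres_gen_cls psi_cls lt_def)

end


locale main = hk W1 W proj Waff S Omega n R H a b Tw
  for W1 :: "('w,'c) monoid_scheme" and W :: "('v,'b) monoid_scheme" and proj :: "'w \<Rightarrow> 'v"
    and Waff S Omega :: "'v set" and n :: "'v \<Rightarrow> 'w"
    and R :: "('r,'d) ring_scheme" and H :: "('r,'h) module"
    and a :: "'v \<Rightarrow> 'r" and b :: "'v \<Rightarrow> 'w \<Rightarrow> 'r" and Tw :: "'w \<Rightarrow> 'h"
begin

sublocale P: presT W1 L1 H Tw
proof (unfold_locales)
  show "w \<in> carrier W1 \<Longrightarrow> Tw w \<in> Units H" for w by (rule T_unit)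
  show "w \<in> carrier W1 \<Longrightarrow> w' \<in> carrier W1 \<Longrightarrow> L1 (w \<otimes>\<^bsub>W1\<^esub> w') = L1 w + L1 w' \<Longrightarrow>
        Tw (w \<otimes>\<^bsub>W1\<^esub> w') = Tw w \<otimes>\<^bsub>H\<^esub> Tw w'" for w w' by (rule T_mult)
qed

lemma ralg_H: "ralg R H" by (rule ralg_axioms)

sublocale C: hctx R "pres_group W1 L1" H P.psi
proof -
  have "gctx R (pres_group W1 L1)"
    unfolding gctx_def using R.is_cring P.G_group by simp
  moreover have "hctx_axioms (pres_group W1 L1) H P.psi"
    unfolding hctx_axioms_def using P.psi_closed P.psi_mult P.psi_one by auto
  ultimately show "hctx R (pres_group W1 L1) H P.psi"
    unfolding hctx_def using ralg_H by simp
qed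


abbreviation "GG \<equiv> pres_group W1 L1"
abbreviation "RA \<equiv> galg R (pres_group W1 L1)"

definition "TT w = delta R (pres_gen W1 L1 w)"
definition "TI w = delta R (inv\<^bsub>GG\<^esub> (pres_gen W1 L1 w))"
definition "Bsum s = finsum RA (\<lambda>t. b s t \<odot>\<^bsub>RA\<^esub> TT t) {t. b s t \<noteq> \<zero>\<^bsub>R\<^esub>}"
definition "gen s = TT (n s) \<otimes>\<^bsub>RA\<^esub> TT (n s) \<ominus>\<^bsub>RA\<^esub> a s \<odot>\<^bsub>RA\<^esub> TT (n s \<otimes>\<^bsub>W1\<^esub> n s)
          \<ominus>\<^bsub>RA\<^esub> TT (n s) \<otimes>\<^bsub>RA\<^esub> Bsum s"

lemma gens_eq: "hecke_ideal_gens R W1 L1 S n a b = gen ` S"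
  unfolding hecke_ideal_gens_def gen_def Bsum_def TT_def Let_def by simp

lemma RA_carrier: "carrier RA = C.FC" by (rule C.galg_simps(1))

lemma TT_c: "w \<in> carrier W1 \<Longrightarrow> TT w \<in> carrier RA"
  unfolding TT_def RA_carrier by (intro C.delta_FC P.gen_carrier)

lemma TI_c: "w \<in> carrier W1 \<Longrightarrow> TI w \<in> carrier RA"
  unfolding TI_def RA_carrier by (intro C.delta_FC P.G.inv_closed P.gen_carrier)

lemma Bsum_c: "s \<in> S \<Longrightarrow> Bsum s \<in> carrier RA"
  unfolding Bsum_def using b_props
  by (intro C.RA.M.finsum_closed) (auto intro!: C.RA.M.smult_closed TT_c)

lemma gen_c: "s \<in> S \<Longrightarrow> gen s \<in> carrier RA"
  unfolding gen_def using n_carrier a_c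
  by (auto intro!: C.RA.M.minus_closed C.RA.H.m_closed C.RA.M.smult_closed TT_c Bsum_c)

lemma Fm_TT: "w \<in> carrier W1 \<Longrightarrow> C.Fm (TT w) = Tw w"
  unfolding TT_def by (simp add: C.Fm_delta P.gen_carrier P.psi_gen)

lemma Fm_c: "x \<in> carrier RA \<Longrightarrow> C.Fm x \<in> carrier H"
  by (simp add: RA_carrier C.Fm_closed)

lemma Fm_add': "x \<in> carrier RA \<Longrightarrow> y \<in> carrier RA \<Longrightarrow> C.Fm (x \<oplus>\<^bsub>RA\<^esub> y) = C.Fm x \<oplus>\<^bsub>H\<^esub> C.Fm y"
  by (simp add: RA_carrier C.Fm_add)

lemma Fm_mult': "x \<in> carrier RA \<Longrightarrow> y \<in> carrier RA \<Longrightarrow> C.Fm (x \<otimes>\<^bsub>RA\<^esub> y) = C.Fm x \<otimes>\<^bsub>H\<^esub> C.Fm y"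
  by (simp add: RA_carrier C.Fm_mult)

lemma Fm_smult': "r \<in> carrier R \<Longrightarrow> x \<in> carrier RA \<Longrightarrow> C.Fm (r \<odot>\<^bsub>RA\<^esub> x) = r \<odot>\<^bsub>H\<^esub> C.Fm x"
  by (simp add: RA_carrier C.Fm_smult)

lemma Fm_neg: "x \<in> carrier RA \<Longrightarrow> C.Fm (\<ominus>\<^bsub>RA\<^esub> x) = \<ominus>\<^bsub>H\<^esub> C.Fm x"
proof -
  assume x: "x \<in> carrier RA"
  have "\<ominus>\<^bsub>RA\<^esub> x = (\<ominus>\<^bsub>R\<^esub> \<one>\<^bsub>R\<^esub>) \<odot>\<^bsub>RA\<^esub> x"
    using x by (simp add: C.RA.M.smult_l_minus)
  then have "C.Fm (\<ominus>\<^bsub>RA\<^esub> x) = (\<ominus>\<^bsub>R\<^esub> \<one>\<^bsub>R\<^esub>) \<odot>\<^bsub>H\<^esub> C.Fm x"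
    using x by (simp add: Fm_smult')
  also have "\<dots> = \<ominus>\<^bsub>H\<^esub> C.Fm x" using Fm_c[OF x] by (simp add: M.smult_l_minus)
  finally show ?thesis .
qed

lemma Fm_minus: "x \<in> carrier RA \<Longrightarrow> y \<in> carrier RA \<Longrightarrow> C.Fm (x \<ominus>\<^bsub>RA\<^esub> y) = C.Fm x \<ominus>\<^bsub>H\<^esub> C.Fm y"
  by (simp add: a_minus_def Fm_add' Fm_neg)

lemma Fm_zero: "C.Fm \<zero>\<^bsub>RA\<^esub> = \<zero>\<^bsub>H\<^esub>"
  using Fm_smult'[of "\<zero>\<^bsub>R\<^esub>" "\<zero>\<^bsub>RA\<^esub>"] Fm_c[of "\<zero>\<^bsub>RA\<^esub>"] by simp

lemma Fm_finsum:
  assumes "finite A" "\<And>i. i \<in> A \<Longrightarrow> f i \<in> carrier RA"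
  shows "C.Fm (finsum RA f A) = finsum H (\<lambda>i. C.Fm (f i)) A"
  using assms
proof (induct A rule: finite_induct)
  case empty then show ?case by (simp add: Fm_zero)
next
  case (insert x A)
  then show ?case
    by (simp add: C.RA.M.finsum_insert Fm_add' C.RA.M.finsum_closed Pi_def M.finsum_insert Fm_c)
qed

lemma Fm_Bsum: assumes s: "s \<in> S" shows "C.Fm (Bsum s) = Bs s"
  unfolding Bsum_def Bs_def
  using b_props[OF s]
  by (subst Fm_finsum) (auto intro!: M.finsum_cong' M.smult_closed Tw_c simp: TT_c Fm_smult' Fm_TT)

lemma Fm_gen: "s \<in> S \<Longrightarrow> C.Fm (gen s) = \<zero>\<^bsub>H\<^esub>"
proof -
  assume s: "s \<in> S"
  have nc: "n s \<in> carrier W1" "n s \<otimes>\<^bsub>W1\<^esub> n s \<in> carrier W1" using n_carrier s by auto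
  have cs: "TT (n s) \<in> carrier RA" "TT (n s \<otimes>\<^bsub>W1\<^esub> n s) \<in> carrier RA" "Bsum s \<in> carrier RA"
    using TT_c nc Bsum_c s by auto
  have hc: "Tw (n s) \<in> carrier H" "Tw (n s \<otimes>\<^bsub>W1\<^esub> n s) \<in> carrier H" "Bs s \<in> carrier H"
    using Tw_c nc Bs_c s by auto
  have "C.Fm (gen s) = Tw (n s) \<otimes>\<^bsub>H\<^esub> Tw (n s) \<ominus>\<^bsub>H\<^esub> a s \<odot>\<^bsub>H\<^esub> Tw (n s \<otimes>\<^bsub>W1\<^esub> n s)
          \<ominus>\<^bsub>H\<^esub> Tw (n s) \<otimes>\<^bsub>H\<^esub> Bs s"
    unfolding gen_def using cs a_c[OF s] nc
    by (simp add: Fm_minus Fm_mult' Fm_smult' Fm_TT Fm_Bsum s)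
  also have "\<dots> = \<zero>\<^bsub>H\<^esub>"
    using quad[OF s] hc a_c[OF s] by (simp add: H.ring_simprules)
  finally show ?thesis .
qed

lemma Fm_ring_hom: "ring_hom_ring RA H C.Fm"
  unfolding ring_hom_ring_def ring_hom_ring_axioms_def
  using C.galg_ring H.ring_axioms C.Fm_hom by simp

definition "I = genideal RA (gen ` S)"

lemma I_ideal: "ideal I RA"
  unfolding I_def using gen_c by (intro ring.genideal_ideal[OF C.galg_ring]) auto

lemma gen_in_I: "s \<in> S \<Longrightarrow> gen s \<in> I"
  unfolding I_def using gen_c ring.genideal_self[OF C.galg_ring, of "gen ` S"] by auto

lemma I_ker: "I \<subseteq> a_kernel RA H C.Fm"
  unfolding I_def
proof (rule ring.genideal_minimal[OF C.galg_ring])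
  show "ideal (a_kernel RA H C.Fm) RA" by (rule ring_hom_ring.kernel_is_ideal[OF Fm_ring_hom])
  show "gen ` S \<subseteq> a_kernel RA H C.Fm"
    unfolding a_kernel_def' using gen_c Fm_gen by auto
qed

end


lemma fc_add: "ring R \<Longrightarrow> f \<in> fin_coeffs R A \<Longrightarrow> g \<in> fin_coeffs R A \<Longrightarrow> (\<lambda>z. f z \<oplus>\<^bsub>R\<^esub> g z) \<in> fin_coeffs R A"
proof -
  assume R: "ring R" and f: "f \<in> fin_coeffs R A" and g: "g \<in> fin_coeffs R A"
  interpret ring R by (rule R)
  have "{x. f x \<oplus>\<^bsub>R\<^esub> g x \<noteq> \<zero>\<^bsub>R\<^esub>} \<subseteq> {x. f x \<noteq> \<zero>\<^bsub>R\<^esub>} \<union> {x. g x \<noteq> \<zero>\<^bsub>R\<^esub>}" by auto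
  then show ?thesis using fin_coeffsD[OF f] fin_coeffsD[OF g]
    unfolding fin_coeffs_def by (auto intro: finite_subset)
qed

lemma fc_smult: "ring R \<Longrightarrow> f \<in> fin_coeffs R A \<Longrightarrow> r \<in> carrier R \<Longrightarrow> (\<lambda>z. r \<otimes>\<^bsub>R\<^esub> f z) \<in> fin_coeffs R A"
proof -
  assume R: "ring R" and f: "f \<in> fin_coeffs R A" and r: "r \<in> carrier R"
  interpret ring R by (rule R)
  have "{x. r \<otimes>\<^bsub>R\<^esub> f x \<noteq> \<zero>\<^bsub>R\<^esub>} \<subseteq> {x. f x \<noteq> \<zero>\<^bsub>R\<^esub>}" using r by auto
  moreover have "r \<otimes>\<^bsub>R\<^esub> f x \<in> carrier R" for x using fin_coeffsD(1)[OF f] r by simp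
  moreover have "x \<notin> A \<Longrightarrow> r \<otimes>\<^bsub>R\<^esub> f x = \<zero>\<^bsub>R\<^esub>" for x using fin_coeffsD(2)[OF f] r by simp
  ultimately show ?thesis using fin_coeffsD(3)[OF f]
    unfolding fin_coeffs_def by (auto intro: finite_subset)
qed

lemma fc_zero: "ring R \<Longrightarrow> (\<lambda>z. \<zero>\<^bsub>R\<^esub>) \<in> fin_coeffs R A"
  unfolding fin_coeffs_def by (simp add: ring.ring_simprules(2))

lemma fc_delta: "ring R \<Longrightarrow> w \<in> A \<Longrightarrow> delta R w \<in> fin_coeffs R A"
  unfolding fin_coeffs_def delta_def by (auto simp: ring.ring_simprules(2,6))

lemma (in abelian_group) diff_add_swap:
  "x \<in> carrier G \<Longrightarrow> y \<in> carrier G \<Longrightarrow> u \<in> carrier G \<Longrightarrow> v \<in> carrier G \<Longrightarrow>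
   (x \<oplus> y) \<ominus> (u \<oplus> v) = (x \<ominus> u) \<oplus> (y \<ominus> v)"
  by (simp add: a_minus_def minus_add a_ac)

lemma (in abelian_group) diff_add_I:
  "x \<in> carrier G \<Longrightarrow> i \<in> carrier G \<Longrightarrow> u \<in> carrier G \<Longrightarrow>
   (x \<oplus> i) \<ominus> u = (x \<ominus> u) \<oplus> i"
  by (simp add: a_minus_def a_ac)

context main begin

abbreviation "CW \<equiv> fin_coeffs R (carrier W1)"

definition "Lin c = finsum RA (\<lambda>w. c w \<odot>\<^bsub>RA\<^esub> TT w) {w. c w \<noteq> \<zero>\<^bsub>R\<^esub>}"

lemma Rring: "ring R" by (rule R.ring_axioms)

lemma Lin_sup:
  assumes c: "c \<in> CW" and A: "finite A" "{w. c w \<noteq> \<zero>\<^bsub>R\<^esub>} \<subseteq> A" "A \<subseteq> carrier W1"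
  shows "Lin c = finsum RA (\<lambda>w. c w \<odot>\<^bsub>RA\<^esub> TT w) A"
  unfolding Lin_def
  by (rule C.RA.M.finsum_sup) (use A fin_coeffsD(1)[OF c] in \<open>auto simp: TT_c subset_iff\<close>)

lemma Lin_c: "c \<in> CW \<Longrightarrow> Lin c \<in> carrier RA"
  unfolding Lin_def using fin_coeffsD[of c R "carrier W1"]
  by (intro C.RA.M.finsum_closed) (auto intro!: TT_c)

lemma Lin_add:
  assumes c: "c \<in> CW" and d: "d \<in> CW"
  shows "Lin (\<lambda>w. c w \<oplus>\<^bsub>R\<^esub> d w) = Lin c \<oplus>\<^bsub>RA\<^esub> Lin d"
proof -
  define A where "A = {w. c w \<noteq> \<zero>\<^bsub>R\<^esub>} \<union> {w. d w \<noteq> \<zero>\<^bsub>R\<^esub>}"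
  have A: "finite A" "A \<subseteq> carrier W1" using fin_coeffsD[OF c] fin_coeffsD[OF d] A_def by auto
  have cd: "(\<lambda>w. c w \<oplus>\<^bsub>R\<^esub> d w) \<in> CW" by (rule fc_add[OF Rring c d])
  have cc: "\<And>w. c w \<in> carrier R" "\<And>w. d w \<in> carrier R" using fin_coeffsD(1)[OF c] fin_coeffsD(1)[OF d] by auto
  have "Lin (\<lambda>w. c w \<oplus>\<^bsub>R\<^esub> d w) = finsum RA (\<lambda>w. (c w \<oplus>\<^bsub>R\<^esub> d w) \<odot>\<^bsub>RA\<^esub> TT w) A"
    by (rule Lin_sup[OF cd A(1) _ A(2)]) (auto simp: A_def)
  also have "\<dots> = finsum RA (\<lambda>w. c w \<odot>\<^bsub>RA\<^esub> TT w \<oplus>\<^bsub>RA\<^esub> d w \<odot>\<^bsub>RA\<^esub> TT w) A"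
    by (intro C.RA.M.finsum_cong') (use A cc in \<open>auto simp: C.RA.M.smult_l_distr TT_c subset_iff\<close>)
  also have "\<dots> = Lin c \<oplus>\<^bsub>RA\<^esub> Lin d"
    using Lin_sup[OF c A(1) _ A(2)] Lin_sup[OF d A(1) _ A(2)] A cc
    by (subst C.RA.M.finsum_addf) (auto simp: A_def TT_c subset_iff)
  finally show ?thesis .
qed

lemma Lin_smult:
  assumes r: "r \<in> carrier R" and c: "c \<in> CW"
  shows "Lin (\<lambda>w. r \<otimes>\<^bsub>R\<^esub> c w) = r \<odot>\<^bsub>RA\<^esub> Lin c"
proof -
  define A where "A = {w. c w \<noteq> \<zero>\<^bsub>R\<^esub>}"
  have A: "finite A" "A \<subseteq> carrier W1" using fin_coeffsD[OF c] A_def by auto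
  have rc: "(\<lambda>w. r \<otimes>\<^bsub>R\<^esub> c w) \<in> CW" by (rule fc_smult[OF Rring c r])
  have cc: "\<And>w. c w \<in> carrier R" using fin_coeffsD(1)[OF c] by auto
  have "Lin (\<lambda>w. r \<otimes>\<^bsub>R\<^esub> c w) = finsum RA (\<lambda>w. (r \<otimes>\<^bsub>R\<^esub> c w) \<odot>\<^bsub>RA\<^esub> TT w) A"
    by (rule Lin_sup[OF rc A(1) _ A(2)]) (use r in \<open>auto simp: A_def\<close>)
  also have "\<dots> = finsum RA (\<lambda>w. r \<odot>\<^bsub>RA\<^esub> (c w \<odot>\<^bsub>RA\<^esub> TT w)) A"
    by (intro C.RA.M.finsum_cong') (use A cc r in \<open>auto simp: C.RA.M.smult_assoc1 TT_c subset_iff\<close>)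
  also have "\<dots> = r \<odot>\<^bsub>RA\<^esub> Lin c"
    unfolding Lin_def A_def[symmetric]
    by (rule C.RA.M.finsum_smult_ldistr[symmetric]) (use A cc r in \<open>auto simp: TT_c subset_iff\<close>)
  finally show ?thesis .
qed

lemma Lin_zero: "Lin (\<lambda>w. \<zero>\<^bsub>R\<^esub>) = \<zero>\<^bsub>RA\<^esub>"
  unfolding Lin_def by simp

lemma Lin_delta: "w \<in> carrier W1 \<Longrightarrow> Lin (delta R w) = TT w"
proof -
  assume w: "w \<in> carrier W1"
  have "Lin (delta R w) = finsum RA (\<lambda>v. delta R w v \<odot>\<^bsub>RA\<^esub> TT v) {w}"
    by (rule Lin_sup[OF fc_delta[OF Rring w]]) (use w in \<open>auto simp: delta_def\<close>)
  also have "\<dots> = TT w" using w TT_c by (simp add: delta_def)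
  finally show ?thesis .
qed

lemma Fm_Lin: "c \<in> CW \<Longrightarrow> C.Fm (Lin c) = finsum H (\<lambda>w. c w \<odot>\<^bsub>H\<^esub> Tw w) {w. c w \<noteq> \<zero>\<^bsub>R\<^esub>}"
proof -
  assume c: "c \<in> CW"
  have A: "finite {w. c w \<noteq> \<zero>\<^bsub>R\<^esub>}" "{w. c w \<noteq> \<zero>\<^bsub>R\<^esub>} \<subseteq> carrier W1" "\<And>w. c w \<in> carrier R"
    using fin_coeffsD[OF c] by auto
  show ?thesis unfolding Lin_def
    using A by (subst Fm_finsum) (auto intro!: M.finsum_cong' simp: TT_c Fm_smult' Fm_TT subset_iff Tw_c)
qed

lemma I_sub: "I \<subseteq> carrier RA" using I_ideal by (simp add: ideal_def additive_subgroup.a_subset)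

lemma I_zero: "\<zero>\<^bsub>RA\<^esub> \<in> I" using I_ideal by (simp add: ideal_def additive_subgroup.zero_closed)
lemma I_add: "i \<in> I \<Longrightarrow> j \<in> I \<Longrightarrow> i \<oplus>\<^bsub>RA\<^esub> j \<in> I"
  using I_ideal by (simp add: ideal_def additive_subgroup.a_closed)
lemma I_lmult: "i \<in> I \<Longrightarrow> x \<in> carrier RA \<Longrightarrow> x \<otimes>\<^bsub>RA\<^esub> i \<in> I"
  using I_ideal by (simp add: ideal.I_l_closed)
lemma I_rmult: "i \<in> I \<Longrightarrow> x \<in> carrier RA \<Longrightarrow> i \<otimes>\<^bsub>RA\<^esub> x \<in> I"
  using I_ideal by (simp add: ideal.I_r_closed)
lemma I_smult: "i \<in> I \<Longrightarrow> r \<in> carrier R \<Longrightarrow> r \<odot>\<^bsub>RA\<^esub> i \<in> I"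
proof -
  assume i: "i \<in> I" and r: "r \<in> carrier R"
  have ic: "i \<in> carrier RA" using i I_sub by auto
  have "r \<odot>\<^bsub>RA\<^esub> i = (r \<odot>\<^bsub>RA\<^esub> \<one>\<^bsub>RA\<^esub>) \<otimes>\<^bsub>RA\<^esub> i" using ic r by (simp add: C.RA.smult_mult_l)
  then show ?thesis using I_lmult[OF i] r by simp
qed
lemma I_neg: "i \<in> I \<Longrightarrow> \<ominus>\<^bsub>RA\<^esub> i \<in> I"
  using I_ideal by (simp add: ideal_def additive_subgroup.a_inv_closed)

definition "Q = {x \<in> carrier RA. \<exists>c\<in>CW. x \<ominus>\<^bsub>RA\<^esub> Lin c \<in> I}"

lemma Q_c: "x \<in> Q \<Longrightarrow> x \<in> carrier RA" by (simp add: Q_def)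

lemma Q_TT: "w \<in> carrier W1 \<Longrightarrow> TT w \<in> Q"
  unfolding Q_def using fc_delta[OF Rring, of w] Lin_delta TT_c I_zero
  by (auto intro!: bexI[of _ "delta R w"] simp: C.RA.M.r_neg a_minus_def)

lemma Q_add: "x \<in> Q \<Longrightarrow> y \<in> Q \<Longrightarrow> x \<oplus>\<^bsub>RA\<^esub> y \<in> Q"
proof -
  assume x: "x \<in> Q" and y: "y \<in> Q"
  obtain c where c: "c \<in> CW" "x \<ominus>\<^bsub>RA\<^esub> Lin c \<in> I" using x Q_def by auto
  obtain d where d: "d \<in> CW" "y \<ominus>\<^bsub>RA\<^esub> Lin d \<in> I" using y Q_def by auto
  have "(x \<oplus>\<^bsub>RA\<^esub> y) \<ominus>\<^bsub>RA\<^esub> Lin (\<lambda>w. c w \<oplus>\<^bsub>R\<^esub> d w) = (x \<ominus>\<^bsub>RA\<^esub> Lin c) \<oplus>\<^bsub>RA\<^esub> (y \<ominus>\<^bsub>RA\<^esub> Lin d)"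
    using Lin_add[OF c(1) d(1)] Lin_c[OF c(1)] Lin_c[OF d(1)] Q_c[OF x] Q_c[OF y]
    by (simp add: C.RA.M.diff_add_swap)
  moreover have "x \<oplus>\<^bsub>RA\<^esub> y \<in> carrier RA" using Q_c x y by simp
  ultimately show ?thesis unfolding Q_def using c d I_add fc_add[OF Rring c(1) d(1)]
    by (intro CollectI conjI bexI[of _ "\<lambda>w. c w \<oplus>\<^bsub>R\<^esub> d w"]) auto
qed

lemma Q_I: "x \<in> Q \<Longrightarrow> i \<in> I \<Longrightarrow> x \<oplus>\<^bsub>RA\<^esub> i \<in> Q"
proof -
  assume x: "x \<in> Q" and i: "i \<in> I"
  obtain c where c: "c \<in> CW" "x \<ominus>\<^bsub>RA\<^esub> Lin c \<in> I" using x Q_def by auto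
  have "(x \<oplus>\<^bsub>RA\<^esub> i) \<ominus>\<^bsub>RA\<^esub> Lin c = (x \<ominus>\<^bsub>RA\<^esub> Lin c) \<oplus>\<^bsub>RA\<^esub> i"
    using Lin_c[OF c(1)] Q_c[OF x] i I_sub by (simp add: C.RA.M.diff_add_I subsetD)
  moreover have "x \<oplus>\<^bsub>RA\<^esub> i \<in> carrier RA" using Q_c x i I_sub by auto
  ultimately show ?thesis unfolding Q_def using c I_add i
    by (intro CollectI conjI bexI[of _ c]) auto
qed

lemma Q_smult: "r \<in> carrier R \<Longrightarrow> x \<in> Q \<Longrightarrow> r \<odot>\<^bsub>RA\<^esub> x \<in> Q"
proof -
  assume r: "r \<in> carrier R" and x: "x \<in> Q"
  obtain c where c: "c \<in> CW" "x \<ominus>\<^bsub>RA\<^esub> Lin c \<in> I" using x Q_def by auto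
  have xc: "x \<in> carrier RA" using Q_c x by auto
  have "r \<odot>\<^bsub>RA\<^esub> x \<ominus>\<^bsub>RA\<^esub> Lin (\<lambda>w. r \<otimes>\<^bsub>R\<^esub> c w) = r \<odot>\<^bsub>RA\<^esub> (x \<ominus>\<^bsub>RA\<^esub> Lin c)"
    using Lin_smult[OF r c(1)] Lin_c[OF c(1)] xc r
    by (simp add: a_minus_def C.RA.M.smult_r_distr C.RA.M.smult_r_minus)
  then show ?thesis unfolding Q_def using c I_smult r fc_smult[OF Rring c(1) r] xc
    by (intro CollectI conjI bexI[of _ "\<lambda>w. r \<otimes>\<^bsub>R\<^esub> c w"]) auto
qed

lemma Q_zero: "\<zero>\<^bsub>RA\<^esub> \<in> Q"
  unfolding Q_def using fc_zero[OF Rring] Lin_zero I_zero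
  by (auto intro!: bexI[of _ "\<lambda>w. \<zero>\<^bsub>R\<^esub>"] simp: a_minus_def)

lemma Q_neg: "x \<in> Q \<Longrightarrow> \<ominus>\<^bsub>RA\<^esub> x \<in> Q"
proof -
  assume x: "x \<in> Q"
  have "\<ominus>\<^bsub>RA\<^esub> x = (\<ominus>\<^bsub>R\<^esub> \<one>\<^bsub>R\<^esub>) \<odot>\<^bsub>RA\<^esub> x" using Q_c[OF x] by (simp add: C.RA.M.smult_l_minus)
  then show ?thesis using Q_smult[OF _ x] by simp
qed

lemma Q_finsum: "finite A \<Longrightarrow> (\<And>i. i \<in> A \<Longrightarrow> f i \<in> Q) \<Longrightarrow> finsum RA f A \<in> Q"
proof (induct A rule: finite_induct)
  case empty then show ?case by (simp add: Q_zero)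
next
  case (insert x A)
  then have "finsum RA f (insert x A) = f x \<oplus>\<^bsub>RA\<^esub> finsum RA f A"
    using Q_c by (intro C.RA.M.finsum_insert) auto
  then show ?case using insert Q_add by simp
qed

end


context main begin

lemma gen_one: "pres_gen W1 L1 \<one>\<^bsub>W1\<^esub> = \<one>\<^bsub>GG\<^esub>"
proof -
  let ?g = "pres_gen W1 L1 \<one>\<^bsub>W1\<^esub>"
  have gc: "?g \<in> carrier GG" by (simp add: P.gen_carrier)
  have "?g = ?g \<otimes>\<^bsub>GG\<^esub> ?g" using P.gen_mult[of "\<one>\<^bsub>W1\<^esub>" "\<one>\<^bsub>W1\<^esub>"] len1_one by simp
  then have "inv\<^bsub>GG\<^esub> ?g \<otimes>\<^bsub>GG\<^esub> ?g = inv\<^bsub>GG\<^esub> ?g \<otimes>\<^bsub>GG\<^esub> (?g \<otimes>\<^bsub>GG\<^esub> ?g)" by simp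
  then show ?thesis using gc by (simp add: P.G.m_assoc[symmetric])
qed

lemma TT_one: "TT \<one>\<^bsub>W1\<^esub> = \<one>\<^bsub>RA\<^esub>"
  by (simp add: TT_def gen_one C.one_delta)

lemma TT_mult: "v \<in> carrier W1 \<Longrightarrow> w \<in> carrier W1 \<Longrightarrow> L1 (v \<otimes>\<^bsub>W1\<^esub> w) = L1 v + L1 w \<Longrightarrow>
   TT (v \<otimes>\<^bsub>W1\<^esub> w) = TT v \<otimes>\<^bsub>RA\<^esub> TT w"
  by (simp add: TT_def P.gen_mult C.delta_mult P.gen_carrier)

lemma TI_TT0: assumes v: "v \<in> carrier W1" and l: "L1 v = 0" shows "TI v = TT (inv\<^bsub>W1\<^esub> v)"
proof -
  have vi: "inv\<^bsub>W1\<^esub> v \<in> carrier W1" "L1 (inv\<^bsub>W1\<^esub> v) = 0" using v l len1_zero_inv by auto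
  have "pres_gen W1 L1 v \<otimes>\<^bsub>GG\<^esub> pres_gen W1 L1 (inv\<^bsub>W1\<^esub> v) = \<one>\<^bsub>GG\<^esub>"
    using P.gen_mult[of v "inv\<^bsub>W1\<^esub> v"] v vi l len1_one gen_one by simp
  moreover have "pres_gen W1 L1 (inv\<^bsub>W1\<^esub> v) \<otimes>\<^bsub>GG\<^esub> pres_gen W1 L1 v = \<one>\<^bsub>GG\<^esub>"
    using P.gen_mult[of "inv\<^bsub>W1\<^esub> v" v] v vi l len1_one gen_one by simp
  ultimately have "inv\<^bsub>GG\<^esub> (pres_gen W1 L1 v) = pres_gen W1 L1 (inv\<^bsub>W1\<^esub> v)"
    using P.gen_carrier v vi P.G.inv_equality by blast
  then show ?thesis by (simp add: TI_def TT_def)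
qed

lemma TI_mult: assumes v: "v \<in> carrier W1" and w: "w \<in> carrier W1" and l: "L1 (v \<otimes>\<^bsub>W1\<^esub> w) = L1 v + L1 w"
  shows "TI (v \<otimes>\<^bsub>W1\<^esub> w) = TI w \<otimes>\<^bsub>RA\<^esub> TI v"
  using v w l by (simp add: TI_def P.gen_mult P.gen_carrier P.G.inv_mult_group C.delta_mult)

lemma TI_TT: "w \<in> carrier W1 \<Longrightarrow> TI w \<otimes>\<^bsub>RA\<^esub> TT w = \<one>\<^bsub>RA\<^esub>"
  by (simp add: TI_def TT_def C.delta_mult P.gen_carrier C.one_delta)

definition "L = {z \<in> carrier RA. \<forall>x\<in>Q. z \<otimes>\<^bsub>RA\<^esub> x \<in> Q}"

lemma L_c: "z \<in> L \<Longrightarrow> z \<in> carrier RA" by (simp add: L_def)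

lemma L_crit:
  assumes z: "z \<in> carrier RA" and h: "\<And>w. w \<in> carrier W1 \<Longrightarrow> z \<otimes>\<^bsub>RA\<^esub> TT w \<in> Q"
  shows "z \<in> L"
  unfolding L_def
proof (intro CollectI conjI ballI z)
  fix x assume x: "x \<in> Q"
  obtain c where c: "c \<in> CW" "x \<ominus>\<^bsub>RA\<^esub> Lin c \<in> I" using x Q_def by auto
  have xc: "x \<in> carrier RA" using Q_c x by auto
  have lc: "Lin c \<in> carrier RA" using Lin_c c by auto
  have A: "finite {w. c w \<noteq> \<zero>\<^bsub>R\<^esub>}" "{w. c w \<noteq> \<zero>\<^bsub>R\<^esub>} \<subseteq> carrier W1" "\<And>w. c w \<in> carrier R"
    using fin_coeffsD[OF c(1)] by auto
  have "z \<otimes>\<^bsub>RA\<^esub> Lin c = finsum RA (\<lambda>w. z \<otimes>\<^bsub>RA\<^esub> (c w \<odot>\<^bsub>RA\<^esub> TT w)) {w. c w \<noteq> \<zero>\<^bsub>R\<^esub>}"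
    unfolding Lin_def by (rule C.RA.H.finsum_rdistr) (use A z in \<open>auto simp: TT_c subset_iff\<close>)
  also have "\<dots> = finsum RA (\<lambda>w. c w \<odot>\<^bsub>RA\<^esub> (z \<otimes>\<^bsub>RA\<^esub> TT w)) {w. c w \<noteq> \<zero>\<^bsub>R\<^esub>}"
    by (intro C.RA.M.finsum_cong') (use A z in \<open>auto simp: TT_c subset_iff C.RA.smult_mult_r\<close>)
  finally have zl: "z \<otimes>\<^bsub>RA\<^esub> Lin c \<in> Q"
    using A h by (auto intro!: Q_finsum Q_smult)
  have "z \<otimes>\<^bsub>RA\<^esub> x = z \<otimes>\<^bsub>RA\<^esub> Lin c \<oplus>\<^bsub>RA\<^esub> z \<otimes>\<^bsub>RA\<^esub> (x \<ominus>\<^bsub>RA\<^esub> Lin c)"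
    using z xc lc by (simp add: C.RA.H.ring_simprules)
  then show "z \<otimes>\<^bsub>RA\<^esub> x \<in> Q" using Q_I[OF zl I_lmult[OF c(2) z]] by simp
qed

lemma L_mult: "z \<in> L \<Longrightarrow> z' \<in> L \<Longrightarrow> z \<otimes>\<^bsub>RA\<^esub> z' \<in> L"
  unfolding L_def using Q_c by (auto simp: C.RA.H.m_assoc)

lemma L_add: "z \<in> L \<Longrightarrow> z' \<in> L \<Longrightarrow> z \<oplus>\<^bsub>RA\<^esub> z' \<in> L"
  unfolding L_def using Q_c by (auto simp: C.RA.H.l_distr intro!: Q_add)

lemma L_smult: "r \<in> carrier R \<Longrightarrow> z \<in> L \<Longrightarrow> r \<odot>\<^bsub>RA\<^esub> z \<in> L"
  unfolding L_def using Q_c by (auto simp: C.RA.smult_mult_l intro!: Q_smult)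

lemma L_I: "z \<in> L \<Longrightarrow> i \<in> I \<Longrightarrow> z \<oplus>\<^bsub>RA\<^esub> i \<in> L"
proof -
  assume z: "z \<in> L" and i: "i \<in> I"
  have ic: "i \<in> carrier RA" using i I_sub by auto
  show ?thesis unfolding L_def
  proof (intro CollectI conjI ballI)
    show "z \<oplus>\<^bsub>RA\<^esub> i \<in> carrier RA" using z ic L_c by auto
    fix x assume x: "x \<in> Q"
    have "(z \<oplus>\<^bsub>RA\<^esub> i) \<otimes>\<^bsub>RA\<^esub> x = z \<otimes>\<^bsub>RA\<^esub> x \<oplus>\<^bsub>RA\<^esub> i \<otimes>\<^bsub>RA\<^esub> x"
      using z ic Q_c[OF x] L_c by (simp add: C.RA.H.l_distr)
    then show "(z \<oplus>\<^bsub>RA\<^esub> i) \<otimes>\<^bsub>RA\<^esub> x \<in> Q"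
      using Q_I[of "z \<otimes>\<^bsub>RA\<^esub> x" "i \<otimes>\<^bsub>RA\<^esub> x"] z x I_rmult[OF i Q_c[OF x]] L_def by auto
  qed
qed

lemma L_neg: "z \<in> L \<Longrightarrow> \<ominus>\<^bsub>RA\<^esub> z \<in> L"
proof -
  assume z: "z \<in> L"
  have "\<ominus>\<^bsub>RA\<^esub> z = (\<ominus>\<^bsub>R\<^esub> \<one>\<^bsub>R\<^esub>) \<odot>\<^bsub>RA\<^esub> z" using L_c[OF z] by (simp add: C.RA.M.smult_l_minus)
  then show ?thesis using L_smult[OF _ z] by simp
qed

lemma L_minus: "z \<in> L \<Longrightarrow> z' \<in> L \<Longrightarrow> z \<ominus>\<^bsub>RA\<^esub> z' \<in> L"
  by (simp add: a_minus_def L_add L_neg)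

lemma L_one: "\<one>\<^bsub>RA\<^esub> \<in> L"
  unfolding L_def using Q_c by auto

lemma L_finsum: "finite A \<Longrightarrow> (\<And>i. i \<in> A \<Longrightarrow> f i \<in> L) \<Longrightarrow> finsum RA f A \<in> L"
proof (induct A rule: finite_induct)
  case empty then show ?case using L_smult[OF R.zero_closed L_one] L_one L_c by simp
next
  case (insert x A)
  then have "finsum RA f (insert x A) = f x \<oplus>\<^bsub>RA\<^esub> finsum RA f A"
    using L_c by (intro C.RA.M.finsum_insert) auto
  then show ?case using insert L_add by simp
qed

lemma L_TT0: "v \<in> carrier W1 \<Longrightarrow> L1 v = 0 \<Longrightarrow> TT v \<in> L"
  by (rule L_crit) (auto simp: TT_c TT_mult[symmetric] len1_zero_add intro!: Q_TT)

lemma L_Bsum: "s \<in> S \<Longrightarrow> Bsum s \<in> L"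
  unfolding Bsum_def using b_props by (auto intro!: L_finsum L_smult L_TT0)

end


lemma (in abelian_group) mma:
  "x \<in> carrier G \<Longrightarrow> y \<in> carrier G \<Longrightarrow> z \<in> carrier G \<Longrightarrow> (x \<ominus> y \<ominus> z) \<oplus> (y \<oplus> z) = x"
  by (simp add: a_minus_def a_assoc r_neg1 a_lcomm[of "\<ominus> z" y z] l_neg)

context main begin

lemma NN_eq: assumes s: "s \<in> S"
  shows "TT (n s) \<otimes>\<^bsub>RA\<^esub> TT (n s) = gen s \<oplus>\<^bsub>RA\<^esub> (a s \<odot>\<^bsub>RA\<^esub> TT (n s \<otimes>\<^bsub>W1\<^esub> n s) \<oplus>\<^bsub>RA\<^esub> TT (n s) \<otimes>\<^bsub>RA\<^esub> Bsum s)"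
proof -
  have nc: "n s \<in> carrier W1" "n s \<otimes>\<^bsub>W1\<^esub> n s \<in> carrier W1" using n_carrier s by auto
  have cs: "TT (n s) \<in> carrier RA" "TT (n s \<otimes>\<^bsub>W1\<^esub> n s) \<in> carrier RA" "Bsum s \<in> carrier RA"
    using TT_c nc Bsum_c s by auto
  show ?thesis unfolding gen_def using cs a_c[OF s] by (simp add: C.RA.M.mma)
qed

lemma L_TTn: assumes s: "s \<in> S" shows "TT (n s) \<in> L"
proof (rule L_crit)
  have nc: "n s \<in> carrier W1" "n s \<otimes>\<^bsub>W1\<^esub> n s \<in> carrier W1" using n_carrier s by auto
  show "TT (n s) \<in> carrier RA" using TT_c nc by auto
  fix w assume w: "w \<in> carrier W1"
  have sc: "s \<in> carrier W" using s S_carrier by auto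
  show "TT (n s) \<otimes>\<^bsub>RA\<^esub> TT w \<in> Q"
  proof (cases "L1 (n s \<otimes>\<^bsub>W1\<^esub> w) = Suc (L1 w)")
    case True
    then have "TT (n s \<otimes>\<^bsub>W1\<^esub> w) = TT (n s) \<otimes>\<^bsub>RA\<^esub> TT w"
      using TT_mult[of "n s" w] nc w len1_n[OF s] by simp
    then show ?thesis using Q_TT[of "n s \<otimes>\<^bsub>W1\<^esub> w"] nc w by simp
  next
    case False
    then have lw: "L1 w = Suc (L1 (n s \<otimes>\<^bsub>W1\<^esub> w))" using len1_n_left[OF s w] by auto
    define w' where "w' = inv\<^bsub>W1\<^esub> (n s) \<otimes>\<^bsub>W1\<^esub> w"
    have w'c: "w' \<in> carrier W1" using w'_def nc w by simp
    have pw': "proj w' = s \<otimes>\<^bsub>W\<^esub> proj w"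
      using w'_def nc w s by (simp add: proj_inv proj_n S_inv_eq)
    have pnw: "proj (n s \<otimes>\<^bsub>W1\<^esub> w) = s \<otimes>\<^bsub>W\<^esub> proj w" using nc w s by (simp add: proj_n)
    have lw': "L1 w' = L1 (n s \<otimes>\<^bsub>W1\<^esub> w)" using pw' pnw by (simp add: len1_eq)
    have weq: "w = n s \<otimes>\<^bsub>W1\<^esub> w'" using w'_def nc w by (simp add: W1.m_assoc[symmetric])
    have lsum: "L1 (n s \<otimes>\<^bsub>W1\<^esub> w') = L1 (n s) + L1 w'" using weq lw lw' len1_n[OF s] by simp
    have TTw: "TT w = TT (n s) \<otimes>\<^bsub>RA\<^esub> TT w'" using TT_mult[OF nc(1) w'c lsum] weq by simp
    define N where "N = TT (n s)"
    define V where "V = TT w'"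
    define P where "P = TT (n s \<otimes>\<^bsub>W1\<^esub> n s)"
    define B where "B = Bsum s"
    have cs: "N \<in> carrier RA" "V \<in> carrier RA" "P \<in> carrier RA" "B \<in> carrier RA" "gen s \<in> carrier RA"
      using N_def V_def P_def B_def TT_c nc w'c Bsum_c s gen_c by auto
    have ac: "a s \<in> carrier R" using a_c s by auto
    have "N \<otimes>\<^bsub>RA\<^esub> TT w = (N \<otimes>\<^bsub>RA\<^esub> N) \<otimes>\<^bsub>RA\<^esub> V" using TTw cs N_def V_def by (simp add: C.RA.H.m_assoc)
    also have "\<dots> = (gen s \<oplus>\<^bsub>RA\<^esub> (a s \<odot>\<^bsub>RA\<^esub> P \<oplus>\<^bsub>RA\<^esub> N \<otimes>\<^bsub>RA\<^esub> B)) \<otimes>\<^bsub>RA\<^esub> V"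
      using NN_eq[OF s] N_def P_def B_def by simp
    also have "\<dots> = (a s \<odot>\<^bsub>RA\<^esub> (P \<otimes>\<^bsub>RA\<^esub> V) \<oplus>\<^bsub>RA\<^esub> N \<otimes>\<^bsub>RA\<^esub> (B \<otimes>\<^bsub>RA\<^esub> V)) \<oplus>\<^bsub>RA\<^esub> gen s \<otimes>\<^bsub>RA\<^esub> V"
      using cs ac by (simp add: C.RA.H.l_distr C.RA.smult_mult_l C.RA.H.m_assoc C.RA.M.a_comm)
    finally have eq: "N \<otimes>\<^bsub>RA\<^esub> TT w = (a s \<odot>\<^bsub>RA\<^esub> (P \<otimes>\<^bsub>RA\<^esub> V) \<oplus>\<^bsub>RA\<^esub> N \<otimes>\<^bsub>RA\<^esub> (B \<otimes>\<^bsub>RA\<^esub> V)) \<oplus>\<^bsub>RA\<^esub> gen s \<otimes>\<^bsub>RA\<^esub> V" .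
    have q1: "P \<otimes>\<^bsub>RA\<^esub> V \<in> Q"
    proof -
      have "P \<otimes>\<^bsub>RA\<^esub> V = TT (n s \<otimes>\<^bsub>W1\<^esub> n s \<otimes>\<^bsub>W1\<^esub> w')"
        using TT_mult[OF nc(2) w'c] len1_zero_add[OF nc(2) w'c len1_nn[OF s]] P_def V_def by simp
      then show ?thesis using Q_TT nc w'c by simp
    qed
    have q2: "N \<otimes>\<^bsub>RA\<^esub> (B \<otimes>\<^bsub>RA\<^esub> V) \<in> Q"
    proof -
      let ?A = "{t. b s t \<noteq> \<zero>\<^bsub>R\<^esub>}"
      have bp: "finite ?A" "\<And>t. b s t \<in> carrier R" "\<And>t. t \<in> ?A \<Longrightarrow> t \<in> carrier W1 \<and> proj t = \<one>\<^bsub>W\<^esub> \<and> L1 t = 0"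
        using b_props[OF s] by auto
      have trm: "N \<otimes>\<^bsub>RA\<^esub> (TT t \<otimes>\<^bsub>RA\<^esub> V) = TT (n s \<otimes>\<^bsub>W1\<^esub> (t \<otimes>\<^bsub>W1\<^esub> w'))" if t: "t \<in> ?A" for t
      proof -
        have tc: "t \<in> carrier W1" "proj t = \<one>\<^bsub>W\<^esub>" "L1 t = 0" using bp(3)[OF t] by auto
        have l1: "L1 (t \<otimes>\<^bsub>W1\<^esub> w') = L1 t + L1 w'" using len1_zero_add[OF tc(1) w'c tc(3)] .
        have "proj (n s \<otimes>\<^bsub>W1\<^esub> (t \<otimes>\<^bsub>W1\<^esub> w')) = proj (n s \<otimes>\<^bsub>W1\<^esub> w')"
          using tc nc w'c by simp
        then have l2: "L1 (n s \<otimes>\<^bsub>W1\<^esub> (t \<otimes>\<^bsub>W1\<^esub> w')) = L1 (n s) + L1 (t \<otimes>\<^bsub>W1\<^esub> w')"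
          using lsum l1 tc by (simp add: len1_eq)
        show ?thesis using TT_mult[OF tc(1) w'c l1] TT_mult[OF nc(1) _ l2] tc w'c N_def V_def by simp
      qed
      have "B \<otimes>\<^bsub>RA\<^esub> V = finsum RA (\<lambda>t. (b s t \<odot>\<^bsub>RA\<^esub> TT t) \<otimes>\<^bsub>RA\<^esub> V) ?A"
        unfolding B_def Bsum_def by (rule C.RA.H.finsum_ldistr) (use bp cs in \<open>auto intro!: TT_c\<close>)
      then have "N \<otimes>\<^bsub>RA\<^esub> (B \<otimes>\<^bsub>RA\<^esub> V) = N \<otimes>\<^bsub>RA\<^esub> finsum RA (\<lambda>t. (b s t \<odot>\<^bsub>RA\<^esub> TT t) \<otimes>\<^bsub>RA\<^esub> V) ?A" by simp
      also have "\<dots> = finsum RA (\<lambda>t. N \<otimes>\<^bsub>RA\<^esub> ((b s t \<odot>\<^bsub>RA\<^esub> TT t) \<otimes>\<^bsub>RA\<^esub> V)) ?A"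
        by (rule C.RA.H.finsum_rdistr) (use bp cs in \<open>auto intro!: TT_c\<close>)
      also have "\<dots> = finsum RA (\<lambda>t. b s t \<odot>\<^bsub>RA\<^esub> TT (n s \<otimes>\<^bsub>W1\<^esub> (t \<otimes>\<^bsub>W1\<^esub> w'))) ?A"
      proof (rule C.RA.M.finsum_cong'[OF refl])
        show "(\<lambda>t. b s t \<odot>\<^bsub>RA\<^esub> TT (n s \<otimes>\<^bsub>W1\<^esub> (t \<otimes>\<^bsub>W1\<^esub> w'))) \<in> ?A \<rightarrow> carrier RA"
          using bp nc w'c by (auto intro!: TT_c)
        fix t assume t: "t \<in> ?A"
        have tc: "TT t \<in> carrier RA" using bp(3)[OF t] TT_c by auto
        show "N \<otimes>\<^bsub>RA\<^esub> ((b s t \<odot>\<^bsub>RA\<^esub> TT t) \<otimes>\<^bsub>RA\<^esub> V) = b s t \<odot>\<^bsub>RA\<^esub> TT (n s \<otimes>\<^bsub>W1\<^esub> (t \<otimes>\<^bsub>W1\<^esub> w'))"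
          using trm[OF t] tc cs bp(2) by (simp add: C.RA.smult_mult_l C.RA.smult_mult_r)
      qed
      finally show ?thesis using bp nc w'c by (auto intro!: Q_finsum Q_smult Q_TT)
    qed
    have "a s \<odot>\<^bsub>RA\<^esub> (P \<otimes>\<^bsub>RA\<^esub> V) \<oplus>\<^bsub>RA\<^esub> N \<otimes>\<^bsub>RA\<^esub> (B \<otimes>\<^bsub>RA\<^esub> V) \<in> Q"
      using q1 q2 ac by (intro Q_add Q_smult)
    moreover have "gen s \<otimes>\<^bsub>RA\<^esub> V \<in> I" using I_rmult[OF gen_in_I[OF s]] cs by auto
    ultimately show ?thesis using eq Q_I N_def by simp
  qed
qed

lemma L_TT: "v \<in> carrier W1 \<Longrightarrow> TT v \<in> L"
proof (induct "L1 v" arbitrary: v)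
  case 0 then show ?case using L_TT0 by simp
next
  case (Suc k)
  obtain s where s: "s \<in> S" "L1 (inv\<^bsub>W1\<^esub> (n s) \<otimes>\<^bsub>W1\<^esub> v) = k"
    using len1_dec[OF Suc(3) Suc(2)[symmetric]] by blast
  let ?w = "inv\<^bsub>W1\<^esub> (n s) \<otimes>\<^bsub>W1\<^esub> v"
  have nc: "n s \<in> carrier W1" using n_carrier s by auto
  have wc: "?w \<in> carrier W1" using nc Suc by simp
  have eq: "v = n s \<otimes>\<^bsub>W1\<^esub> ?w" using nc Suc by (simp add: W1.m_assoc[symmetric])
  have "TT v = TT (n s) \<otimes>\<^bsub>RA\<^esub> TT ?w"
    using TT_mult[of "n s" ?w] eq nc wc s Suc(2) len1_n by simp
  then show ?case using Suc(1)[OF s(2)[symmetric] wc] L_TTn[OF s(1)] L_mult by simp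
qed

end


lemma (in ring) tm: "x \<in> carrier R \<Longrightarrow> y \<in> carrier R \<Longrightarrow> z \<in> carrier R \<Longrightarrow> w \<in> carrier R \<Longrightarrow> v \<in> carrier R \<Longrightarrow>
   x \<otimes> (y \<ominus> z \<ominus> w) \<otimes> v = x \<otimes> y \<otimes> v \<ominus> x \<otimes> z \<otimes> v \<ominus> x \<otimes> w \<otimes> v"
  by algebra

lemma (in ring) xyz: "x \<in> carrier R \<Longrightarrow> y \<in> carrier R \<Longrightarrow> z \<in> carrier R \<Longrightarrow>
   x \<ominus> y \<ominus> (x \<ominus> z \<ominus> y) = z"
  by algebra

context main begin

lemma L_TIn: assumes s: "s \<in> S" shows "TI (n s) \<in> L"
proof -
  have nc: "n s \<in> carrier W1" "n s \<otimes>\<^bsub>W1\<^esub> n s \<in> carrier W1" "inv\<^bsub>W1\<^esub> (n s \<otimes>\<^bsub>W1\<^esub> n s) \<in> carrier W1"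
    using n_carrier s by auto
  define N where "N = TT (n s)"
  define Ti where "Ti = TI (n s)"
  define P where "P = TT (n s \<otimes>\<^bsub>W1\<^esub> n s)"
  define Pi where "Pi = TT (inv\<^bsub>W1\<^esub> (n s \<otimes>\<^bsub>W1\<^esub> n s))"
  define B where "B = Bsum s"
  have cs: "N \<in> carrier RA" "Ti \<in> carrier RA" "P \<in> carrier RA" "Pi \<in> carrier RA" "B \<in> carrier RA"
    using N_def Ti_def P_def Pi_def B_def TT_c TI_c nc Bsum_c s by auto
  have ac: "a s \<in> carrier R" "inv\<^bsub>R\<^esub> (a s) \<in> carrier R" "inv\<^bsub>R\<^esub> (a s) \<otimes>\<^bsub>R\<^esub> a s = \<one>\<^bsub>R\<^esub>"
    using aunit s by auto
  have TiN: "Ti \<otimes>\<^bsub>RA\<^esub> N = \<one>\<^bsub>RA\<^esub>" using TI_TT nc Ti_def N_def by simp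
  have PPi: "P \<otimes>\<^bsub>RA\<^esub> Pi = \<one>\<^bsub>RA\<^esub>"
  proof -
    have l0: "L1 (n s \<otimes>\<^bsub>W1\<^esub> n s) = 0" by (rule len1_nn[OF s])
    have "L1 ((n s \<otimes>\<^bsub>W1\<^esub> n s) \<otimes>\<^bsub>W1\<^esub> inv\<^bsub>W1\<^esub> (n s \<otimes>\<^bsub>W1\<^esub> n s)) = L1 (n s \<otimes>\<^bsub>W1\<^esub> n s) + L1 (inv\<^bsub>W1\<^esub> (n s \<otimes>\<^bsub>W1\<^esub> n s))"
      using len1_zero_add[OF nc(2) nc(3) l0] .
    then show ?thesis using TT_mult[OF nc(2) nc(3)] nc TT_one P_def Pi_def by simp
  qed
  have gen_eq: "gen s = N \<otimes>\<^bsub>RA\<^esub> N \<ominus>\<^bsub>RA\<^esub> a s \<odot>\<^bsub>RA\<^esub> P \<ominus>\<^bsub>RA\<^esub> N \<otimes>\<^bsub>RA\<^esub> B"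
    unfolding gen_def N_def P_def B_def ..
  define J where "J = Ti \<otimes>\<^bsub>RA\<^esub> gen s \<otimes>\<^bsub>RA\<^esub> Pi"
  have JI: "J \<in> I" unfolding J_def using gen_in_I[OF s] cs I_lmult I_rmult by auto
  have "J = Ti \<otimes>\<^bsub>RA\<^esub> (N \<otimes>\<^bsub>RA\<^esub> N) \<otimes>\<^bsub>RA\<^esub> Pi \<ominus>\<^bsub>RA\<^esub> Ti \<otimes>\<^bsub>RA\<^esub> (a s \<odot>\<^bsub>RA\<^esub> P) \<otimes>\<^bsub>RA\<^esub> Pi
      \<ominus>\<^bsub>RA\<^esub> Ti \<otimes>\<^bsub>RA\<^esub> (N \<otimes>\<^bsub>RA\<^esub> B) \<otimes>\<^bsub>RA\<^esub> Pi"
    unfolding J_def gen_eq using cs ac by (intro C.RA.H.tm) auto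
  also have "\<dots> = N \<otimes>\<^bsub>RA\<^esub> Pi \<ominus>\<^bsub>RA\<^esub> a s \<odot>\<^bsub>RA\<^esub> Ti \<ominus>\<^bsub>RA\<^esub> B \<otimes>\<^bsub>RA\<^esub> Pi"
  proof -
    have e1: "Ti \<otimes>\<^bsub>RA\<^esub> (N \<otimes>\<^bsub>RA\<^esub> N) \<otimes>\<^bsub>RA\<^esub> Pi = N \<otimes>\<^bsub>RA\<^esub> Pi"
      using cs TiN by (simp add: C.RA.H.m_assoc[symmetric])
    have e2: "Ti \<otimes>\<^bsub>RA\<^esub> (a s \<odot>\<^bsub>RA\<^esub> P) \<otimes>\<^bsub>RA\<^esub> Pi = a s \<odot>\<^bsub>RA\<^esub> Ti"
      using cs ac PPi by (simp add: C.RA.smult_mult_r C.RA.smult_mult_l C.RA.H.m_assoc)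
    have e3: "Ti \<otimes>\<^bsub>RA\<^esub> (N \<otimes>\<^bsub>RA\<^esub> B) \<otimes>\<^bsub>RA\<^esub> Pi = B \<otimes>\<^bsub>RA\<^esub> Pi"
      using cs TiN by (simp add: C.RA.H.m_assoc[symmetric])
    show ?thesis using e1 e2 e3 by simp
  qed
  finally have Jeq: "J = N \<otimes>\<^bsub>RA\<^esub> Pi \<ominus>\<^bsub>RA\<^esub> a s \<odot>\<^bsub>RA\<^esub> Ti \<ominus>\<^bsub>RA\<^esub> B \<otimes>\<^bsub>RA\<^esub> Pi" .
  define E where "E = N \<otimes>\<^bsub>RA\<^esub> Pi \<ominus>\<^bsub>RA\<^esub> B \<otimes>\<^bsub>RA\<^esub> Pi \<ominus>\<^bsub>RA\<^esub> J"
  have "E = a s \<odot>\<^bsub>RA\<^esub> Ti" unfolding E_def Jeq using cs ac by (intro C.RA.H.xyz) auto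
  moreover have "E \<in> L"
  proof -
    have "N \<otimes>\<^bsub>RA\<^esub> Pi \<ominus>\<^bsub>RA\<^esub> B \<otimes>\<^bsub>RA\<^esub> Pi \<in> L"
      using L_TT nc L_Bsum s N_def Pi_def B_def by (auto intro!: L_minus L_mult)
    then show ?thesis unfolding E_def a_minus_def[of RA _ J] using L_I I_neg[OF JI] by simp
  qed
  ultimately have "a s \<odot>\<^bsub>RA\<^esub> Ti \<in> L" by simp
  then have "inv\<^bsub>R\<^esub> (a s) \<odot>\<^bsub>RA\<^esub> (a s \<odot>\<^bsub>RA\<^esub> Ti) \<in> L" using L_smult ac by simp
  then show ?thesis using ac cs Ti_def by (simp add: C.RA.M.smult_assoc1[symmetric])
qed

lemma L_TI: "v \<in> carrier W1 \<Longrightarrow> TI v \<in> L"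
proof (induct "L1 v" arbitrary: v)
  case 0 then show ?case using TI_TT0 L_TT len1_zero_inv by simp
next
  case (Suc k)
  obtain s where s: "s \<in> S" "L1 (inv\<^bsub>W1\<^esub> (n s) \<otimes>\<^bsub>W1\<^esub> v) = k"
    using len1_dec[OF Suc(3) Suc(2)[symmetric]] by blast
  let ?w = "inv\<^bsub>W1\<^esub> (n s) \<otimes>\<^bsub>W1\<^esub> v"
  have nc: "n s \<in> carrier W1" using n_carrier s by auto
  have wc: "?w \<in> carrier W1" using nc Suc by simp
  have eq: "v = n s \<otimes>\<^bsub>W1\<^esub> ?w" using nc Suc by (simp add: W1.m_assoc[symmetric])
  have "TI v = TI ?w \<otimes>\<^bsub>RA\<^esub> TI (n s)"
    using TI_mult[of "n s" ?w] eq nc wc s Suc(2) len1_n by simp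
  then show ?case using Suc(1)[OF s(2)[symmetric] wc] L_TIn[OF s(1)] L_mult by simp
qed

lemma L_delta: "g \<in> carrier GG \<Longrightarrow> delta R g \<in> L"
proof -
  assume "g \<in> carrier GG"
  then obtain ws where ws: "ws \<in> P.CL" "g = P.cls ws" by (auto simp: P.G_carrier)
  have "delta R (P.cls ws) \<in> L" using ws(1)
  proof (induct ws)
    case Nil then show ?case using P.G_one C.one_delta L_one by simp
  next
    case (Cons p ws)
    obtain x e where p: "p = (x, e)" by (cases p)
    have x: "x \<in> carrier W1" and wsc: "ws \<in> P.CL" using Cons p by auto
    have cc: "P.cls ws \<in> carrier GG" using wsc P.G_carrier by auto
    show ?case
    proof (cases e)
      case True
      then have "delta R (P.cls (p # ws)) = TT x \<otimes>\<^bsub>RA\<^esub> delta R (P.cls ws)"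
        using p x cc by (simp add: P.cls_Cons_True TT_def C.delta_mult P.gen_carrier)
      then show ?thesis using L_mult L_TT[OF x] Cons(3) by simp
    next
      case False
      then have "delta R (P.cls (p # ws)) = TI x \<otimes>\<^bsub>RA\<^esub> delta R (P.cls ws)"
        using p x cc by (simp add: P.cls_Cons_False TI_def C.delta_mult P.gen_carrier)
      then show ?thesis using L_mult L_TI[OF x] Cons(3) by simp
    qed
  qed
  then show ?thesis using ws by simp
qed

lemma L_all: "x \<in> carrier RA \<Longrightarrow> x \<in> L"
proof -
  assume x: "x \<in> carrier RA"
  then have xf: "x \<in> C.FC" by (simp add: RA_carrier)
  have sp: "finite (C.spt x)" "C.spt x \<subseteq> carrier GG" using C.spt_FC[OF xf] by auto
  have "finsum RA (\<lambda>g. x g \<odot>\<^bsub>RA\<^esub> delta R g) (C.spt x) \<in> L"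
    using sp xf by (intro L_finsum L_smult L_delta) (auto simp: C.FC_carrier)
  then show ?thesis using C.galg_expand[OF xf] by simp
qed

lemma Q_all: "x \<in> carrier RA \<Longrightarrow> x \<in> Q"
proof -
  assume x: "x \<in> carrier RA"
  have "x \<otimes>\<^bsub>RA\<^esub> TT \<one>\<^bsub>W1\<^esub> \<in> Q" using L_all[OF x] Q_TT[of "\<one>\<^bsub>W1\<^esub>"] unfolding L_def by auto
  then show ?thesis using x TT_one by simp
qed

end


lemma (in ring) zm: "y \<in> carrier R \<Longrightarrow> \<zero> \<ominus> y = \<zero> \<Longrightarrow> y = \<zero>"
  by (metis a_minus_def l_zero a_inv_closed minus_minus minus_zero)

context main begin

lemma ker_eq: "a_kernel RA H C.Fm = I"
proof
  show "I \<subseteq> a_kernel RA H C.Fm" by (rule I_ker)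
  show "a_kernel RA H C.Fm \<subseteq> I"
  proof
    fix x assume "x \<in> a_kernel RA H C.Fm"
    then have x: "x \<in> carrier RA" "C.Fm x = \<zero>\<^bsub>H\<^esub>" by (auto simp: a_kernel_def')
    obtain c where c: "c \<in> CW" "x \<ominus>\<^bsub>RA\<^esub> Lin c \<in> I" using Q_all[OF x(1)] Q_def by auto
    have lc: "Lin c \<in> carrier RA" using Lin_c c by auto
    have "C.Fm (x \<ominus>\<^bsub>RA\<^esub> Lin c) = \<zero>\<^bsub>H\<^esub>" using I_ker c(2) by (auto simp: a_kernel_def')
    then have "\<zero>\<^bsub>H\<^esub> \<ominus>\<^bsub>H\<^esub> C.Fm (Lin c) = \<zero>\<^bsub>H\<^esub>" using x lc by (simp add: Fm_minus)
    then have z: "C.Fm (Lin c) = \<zero>\<^bsub>H\<^esub>" using Fm_c[OF lc]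
      by (simp add: H.zm)
    have A: "finite {w. c w \<noteq> \<zero>\<^bsub>R\<^esub>}" "{w. c w \<noteq> \<zero>\<^bsub>R\<^esub>} \<subseteq> carrier W1" "\<And>w. c w \<in> carrier R"
      using fin_coeffsD[OF c(1)] by auto
    have r1: "c \<in> CW \<and> \<zero>\<^bsub>H\<^esub> = finsum H (\<lambda>w. c w \<odot>\<^bsub>H\<^esub> Tw w) {w. c w \<noteq> \<zero>\<^bsub>R\<^esub>}"
      using c(1) z Fm_Lin[OF c(1)] by simp
    have r2: "(\<lambda>w. \<zero>\<^bsub>R\<^esub>) \<in> CW \<and> \<zero>\<^bsub>H\<^esub> = finsum H (\<lambda>w. (\<lambda>w. \<zero>\<^bsub>R\<^esub>) w \<odot>\<^bsub>H\<^esub> Tw w) {w. (\<lambda>w. \<zero>\<^bsub>R\<^esub>) w \<noteq> \<zero>\<^bsub>R\<^esub>}"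
      using fc_zero[OF Rring] by simp
    have u: "\<exists>!f. f \<in> CW \<and> \<zero>\<^bsub>H\<^esub> = finsum H (\<lambda>w. f w \<odot>\<^bsub>H\<^esub> Tw w) {w. f w \<noteq> \<zero>\<^bsub>R\<^esub>}"
      by (rule basis) simp
    have "c = (\<lambda>w. \<zero>\<^bsub>R\<^esub>)"
    proof (rule ex1E[OF u])
      fix f0 assume "\<forall>y. y \<in> CW \<and> \<zero>\<^bsub>H\<^esub> = finsum H (\<lambda>w. y w \<odot>\<^bsub>H\<^esub> Tw w) {w. y w \<noteq> \<zero>\<^bsub>R\<^esub>} \<longrightarrow> y = f0"
      then have "c = f0" "(\<lambda>w. \<zero>\<^bsub>R\<^esub>) = f0" using r1 r2 by blast+
      then show ?thesis by simp
    qed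
    then have "Lin c = \<zero>\<^bsub>RA\<^esub>" using Lin_zero by simp
    then show "x \<in> I" using c(2) x(1) by (simp add: a_minus_def)
  qed
qed

lemma Fm_surj: "C.Fm ` carrier RA = carrier H"
proof
  show "C.Fm ` carrier RA \<subseteq> carrier H" using Fm_c by auto
  show "carrier H \<subseteq> C.Fm ` carrier RA"
  proof
    fix h assume h: "h \<in> carrier H"
    obtain f where f: "f \<in> CW" "h = finsum H (\<lambda>w. f w \<odot>\<^bsub>H\<^esub> Tw w) {w. f w \<noteq> \<zero>\<^bsub>R\<^esub>}"
      using basis[OF h] by auto
    then have "h = C.Fm (Lin f)" using Fm_Lin by simp
    then show "h \<in> C.Fm ` carrier RA" using Lin_c[OF f(1)] by blast
  qed
qed

lemma phi_iso: "(\<lambda>P. the_elem (C.Fm ` P)) \<in> ring_iso (RA Quot I) H"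
  using ring_hom_ring.FactRing_iso_set[OF Fm_ring_hom Fm_surj] ker_eq by simp

lemma phi_coset: "x \<in> carrier RA \<Longrightarrow> the_elem (C.Fm ` (I +>\<^bsub>RA\<^esub> x)) = C.Fm x"
proof -
  assume x: "x \<in> carrier RA"
  have "C.Fm ` (I +>\<^bsub>RA\<^esub> x) = {C.Fm x}"
  proof
    show "C.Fm ` (I +>\<^bsub>RA\<^esub> x) \<subseteq> {C.Fm x}"
    proof
      fix y assume "y \<in> C.Fm ` (I +>\<^bsub>RA\<^esub> x)"
      then obtain i where i: "i \<in> I" "y = C.Fm (i \<oplus>\<^bsub>RA\<^esub> x)" unfolding a_r_coset_def' by auto
      have ic: "i \<in> carrier RA" using i I_sub by auto
      have "C.Fm i = \<zero>\<^bsub>H\<^esub>" using i I_ker by (auto simp: a_kernel_def')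
      then show "y \<in> {C.Fm x}" using i ic x Fm_c[OF x] by (simp add: Fm_add')
    qed
    show "{C.Fm x} \<subseteq> C.Fm ` (I +>\<^bsub>RA\<^esub> x)"
      using I_zero x unfolding a_r_coset_def' by force
  qed
  then show ?thesis by simp
qed

lemma main_result:
  "\<exists>\<phi>. \<phi> \<in> ring_iso (RA Quot I) H \<and>
      (\<forall>r\<in>carrier R. \<forall>x\<in>carrier RA. \<phi> (I +>\<^bsub>RA\<^esub> (r \<odot>\<^bsub>RA\<^esub> x)) = r \<odot>\<^bsub>H\<^esub> \<phi> (I +>\<^bsub>RA\<^esub> x)) \<and>
      (\<forall>w\<in>carrier W1. \<phi> (I +>\<^bsub>RA\<^esub> delta R (pres_gen W1 L1 w)) = Tw w)"
proof (intro exI conjI ballI)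
  show "(\<lambda>P. the_elem (C.Fm ` P)) \<in> ring_iso (RA Quot I) H" by (rule phi_iso)
  fix r x assume r: "r \<in> carrier R" and x: "x \<in> carrier RA"
  show "the_elem (C.Fm ` (I +>\<^bsub>RA\<^esub> (r \<odot>\<^bsub>RA\<^esub> x))) = r \<odot>\<^bsub>H\<^esub> the_elem (C.Fm ` (I +>\<^bsub>RA\<^esub> x))"
    using r x by (simp add: phi_coset Fm_smult')
next
  fix w assume w: "w \<in> carrier W1"
  show "the_elem (C.Fm ` (I +>\<^bsub>RA\<^esub> delta R (pres_gen W1 L1 w))) = Tw w"
    using phi_coset[OF TT_c[OF w]] Fm_TT[OF w] by (simp add: TT_def)
qed

end

theorem proposition2p4p3:
  fixes R :: "'r ring"
    and W1 :: "'w monoid" and W :: "'v monoid" and proj :: "'w \<Rightarrow> 'v"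
    and Waff S Omega :: "'v set" and n :: "'v \<Rightarrow> 'w"
    and a :: "'v \<Rightarrow> 'r" and b :: "'v \<Rightarrow> 'w \<Rightarrow> 'r"
    and H :: "('r,'h) module" and Tw :: "'w \<Rightarrow> 'h"
  assumes "cring R"
    and "pro_p_coxeter W1 W proj Waff S Omega n"
    and "hecke_params R W1 W proj S n a b"
    and "hecke_alg R W1 W proj S Omega n a b H Tw"
    and "\<forall>s\<in>S. a s \<in> Units R"
  shows "let len = len1 proj W S Omega;
             RA = galg R (pres_group W1 len);
             I = genideal RA (hecke_ideal_gens R W1 len S n a b)
         in \<exists>\<phi>. \<phi> \<in> ring_iso (RA Quot I) H \<and>
                (\<forall>r\<in>carrier R. \<forall>x\<in>carrier RA.
                    \<phi> (I +>\<^bsub>RA\<^esub> (r \<odot>\<^bsub>RA\<^esub> x)) = r \<odot>\<^bsub>H\<^esub> \<phi> (I +>\<^bsub>RA\<^esub> x)) \<and>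
                (\<forall>w\<in>carrier W1. \<phi> (I +>\<^bsub>RA\<^esub> delta R (pres_gen W1 len w)) = Tw w)"
proof -
  have ext: "ext_coxeter W Waff S Omega" using assms(2) by (simp add: pro_p_coxeter_def)
  have ex: "excox W Waff S Omega" by (rule excox.intro[OF ext])
  have pc: "procox W1 W proj Waff S Omega n"
    by (rule procox.intro[OF ex]) (simp add: procox_axioms_def assms(2))
  have ha: "ring H" "module R H"
    "\<And>r x y. r \<in> carrier R \<Longrightarrow> x \<in> carrier H \<Longrightarrow> y \<in> carrier H \<Longrightarrow> (r \<odot>\<^bsub>H\<^esub> x) \<otimes>\<^bsub>H\<^esub> y = r \<odot>\<^bsub>H\<^esub> (x \<otimes>\<^bsub>H\<^esub> y)"
    "\<And>r x y. r \<in> carrier R \<Longrightarrow> x \<in> carrier H \<Longrightarrow> y \<in> carrier H \<Longrightarrow> x \<otimes>\<^bsub>H\<^esub> (r \<odot>\<^bsub>H\<^esub> y) = r \<odot>\<^bsub>H\<^esub> (x \<otimes>\<^bsub>H\<^esub> y)"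
    using assms(4) unfolding hecke_alg_def by blast+
  have ra: "ralg R H"
    unfolding ralg_def ralg_axioms_def using assms(1) ha by blast
  have hk: "hk W1 W proj Waff S Omega n R H a b Tw"
    unfolding hk_def hk_axioms_def using pc ra assms(3-5) by blast
  interpret main W1 W proj Waff S Omega n R H a b Tw
    unfolding main_def by (rule hk)
  show ?thesis
    unfolding Let_def gens_eq I_def[symmetric] using main_result by simp
qed


end
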